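(* Let $1\le p\le2$, let $a_1\ge a_2\ge\dots>0$ with $a_t\to0$, and $\Gamma=\{\boldsymbol\theta\in\mathbb{R}^\infty:\sum_{t\ge1}|\theta_t|^p/a_t^p\le1\}$. For $\epsilon>0$ and a positive integer $n$ let $d_l(\Gamma,n,\epsilon)=\max\{d: a_d^p\,n^{\frac{p-2}{2}}\ge192\,\epsilon^2\}$. If there is a test $\psi$ satisfying $\max_{i\in\{0,1\}}\sup_{H_i}\mathbb P(\psi\ne i)\le1/4$ in the LFHT problem for $\Gamma$ at scale $\epsilon$ with sample sizes $(m,n)$, then $$m\ge\frac1{\epsilon^2},\qquad n\ge\frac{\sqrt{d_l(\Gamma,n,\epsilon)}}{2\epsilon^2},\qquad mn\ge\frac{d_l(\Gamma,n,\epsilon)}{96\,\epsilon^4}.$$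
   Context: LFHT: unknown $\boldsymbol\theta^1,\boldsymbol\theta^2,\boldsymbol\theta\in\Gamma$ with $\|\boldsymbol\theta^1-\boldsymbol\theta^2\|_2\ge\epsilon$; independent data $\mathbf X$: $n$ i.i.d. samples of $\mathcal N(\boldsymbol\theta^1,I_\infty)$, $\mathbf Y$: $n$ i.i.d. samples of $\mathcal N(\boldsymbol\theta^2,I_\infty)$, $\mathbf Z$: $m$ i.i.d. samples of $\mathcal N(\boldsymbol\theta,I_\infty)$; $H_0:\boldsymbol\theta=\boldsymbol\theta^1$ vs $H_1:\boldsymbol\theta=\boldsymbol\theta^2$; $\psi=1$ rejects $H_0$; $\sup_{H_i}$ over admissible parameters with $\boldsymbol\theta=\boldsymbol\theta^{i+1}$. *)

theory Defs
  imports "HOL-Probability.Probability"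
begin

text \<open>Indexing convention: sequences are 0-based, i.e. the paper's a_t and theta_t
  (t >= 1) are represented by a (t - 1) and theta (t - 1).\<close>

definition Gamma_set :: "real \<Rightarrow> (nat \<Rightarrow> real) \<Rightarrow> (nat \<Rightarrow> real) set" where
  "Gamma_set p a = {\<theta>. summable (\<lambda>t. \<bar>\<theta> t\<bar> powr p / a t powr p)
                       \<and> (\<Sum>t. \<bar>\<theta> t\<bar> powr p / a t powr p) \<le> 1}"

definition l2_dist :: "(nat \<Rightarrow> real) \<Rightarrow> (nat \<Rightarrow> real) \<Rightarrow> real" where
  "l2_dist x y = sqrt (\<Sum>t. (x t - y t)\<^sup>2)"

definition gauss_seq :: "(nat \<Rightarrow> real) \<Rightarrow> (nat \<Rightarrow> real) measure" where
  "gauss_seq \<theta> = (\<Pi>\<^sub>M t\<in>UNIV. density lborel (normal_density (\<theta> t) 1))"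

definition lfht_law :: "nat \<Rightarrow> nat \<Rightarrow> (nat \<Rightarrow> real) \<Rightarrow> (nat \<Rightarrow> real) \<Rightarrow> (nat \<Rightarrow> real)
    \<Rightarrow> (((nat \<Rightarrow> nat \<Rightarrow> real) \<times> (nat \<Rightarrow> nat \<Rightarrow> real)) \<times> (nat \<Rightarrow> nat \<Rightarrow> real)) measure" where
  "lfht_law n m \<theta>1 \<theta>2 \<theta> =
     ((\<Pi>\<^sub>M i\<in>{..<n}. gauss_seq \<theta>1) \<Otimes>\<^sub>M (\<Pi>\<^sub>M i\<in>{..<n}. gauss_seq \<theta>2))
       \<Otimes>\<^sub>M (\<Pi>\<^sub>M i\<in>{..<m}. gauss_seq \<theta>)"

definition lfht_space :: "nat \<Rightarrow> nat
    \<Rightarrow> (((nat \<Rightarrow> nat \<Rightarrow> real) \<times> (nat \<Rightarrow> nat \<Rightarrow> real)) \<times> (nat \<Rightarrow> nat \<Rightarrow> real)) measure" where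
  "lfht_space n m =
     ((\<Pi>\<^sub>M i\<in>{..<n}. \<Pi>\<^sub>M t\<in>UNIV. borel) \<Otimes>\<^sub>M (\<Pi>\<^sub>M i\<in>{..<n}. \<Pi>\<^sub>M t\<in>UNIV. borel))
       \<Otimes>\<^sub>M (\<Pi>\<^sub>M i\<in>{..<m}. \<Pi>\<^sub>M t\<in>UNIV. borel)"

text \<open>psi is a test for the LFHT problem for Gamma at scale eps with sample sizes (m,n)
  achieving max_i sup_{H_i} P(psi ~= i) <= 1/4.  psi = 1 means rejecting H_0.\<close>
definition good_lfht_test ::
  "real \<Rightarrow> (nat \<Rightarrow> real) \<Rightarrow> real \<Rightarrow> nat \<Rightarrow> nat
     \<Rightarrow> ((((nat \<Rightarrow> nat \<Rightarrow> real) \<times> (nat \<Rightarrow> nat \<Rightarrow> real)) \<times> (nat \<Rightarrow> nat \<Rightarrow> real)) \<Rightarrow> nat) \<Rightarrow> bool" where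
  "good_lfht_test p a \<epsilon> m n \<psi> \<longleftrightarrow>
     \<psi> \<in> lfht_space n m \<rightarrow>\<^sub>M count_space {0, 1} \<and>
     (\<forall>\<theta>1\<in>Gamma_set p a. \<forall>\<theta>2\<in>Gamma_set p a. l2_dist \<theta>1 \<theta>2 \<ge> \<epsilon> \<longrightarrow>
        measure (lfht_law n m \<theta>1 \<theta>2 \<theta>1) {\<omega> \<in> space (lfht_law n m \<theta>1 \<theta>2 \<theta>1). \<psi> \<omega> \<noteq> 0} \<le> 1/4 \<and>
        measure (lfht_law n m \<theta>1 \<theta>2 \<theta>2) {\<omega> \<in> space (lfht_law n m \<theta>1 \<theta>2 \<theta>2). \<psi> \<omega> \<noteq> 1} \<le> 1/4)"

text \<open>d_l(Gamma, n, eps) = max {d >= 1 : a_d^p n^((p-2)/2) >= 192 eps^2}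
  (with a_d = a (d - 1)); taken to be 0 if the set is empty.\<close>
definition d_l :: "real \<Rightarrow> (nat \<Rightarrow> real) \<Rightarrow> nat \<Rightarrow> real \<Rightarrow> nat" where
  "d_l p a n \<epsilon> =
     (let D = {d::nat. 1 \<le> d \<and> a (d - 1) powr p * real n powr ((p - 2) / 2) \<ge> 192 * \<epsilon>\<^sup>2}
      in if D = {} then 0 else Max D)"

end

theory Submission
  imports Defs
begin

definition NM :: "real \<Rightarrow> real measure" where
  "NM a = density lborel (normal_density a 1)"

lemma prob_NM: "prob_space (NM a)"
  unfolding NM_def by (rule prob_space_normal_density) simp

lemma sets_NM[simp, measurable_cong]: "sets (NM a) = sets borel"
  by (simp add: NM_def)

lemma space_NM[simp]: "space (NM a) = UNIV"
  by (simp add: NM_def)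

type_synonym idx = "nat \<times> nat \<times> nat"

definition BM :: "(idx \<Rightarrow> real) \<Rightarrow> (idx \<Rightarrow> real) measure" where
  "BM \<mu> = PiM UNIV (\<lambda>k. NM (\<mu> k))"

lemma prob_BM: "prob_space (BM \<mu>)"
  unfolding BM_def by (rule prob_space_PiM) (rule prob_NM)

lemma sets_BM[measurable_cong]: "sets (BM \<mu>) = sets (PiM UNIV (\<lambda>_. borel) :: (idx \<Rightarrow> real) measure)"
  unfolding BM_def by (rule sets_PiM_cong) auto

lemma space_BM[simp]: "space (BM \<mu>) = UNIV"
  unfolding BM_def by (simp add: space_PiM)

lemma nn_NM: "(\<integral>\<^sup>+x. g x \<partial>NM a) = (\<integral>\<^sup>+x. ennreal (normal_density a 1 x) * g x \<partial>lborel)"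
  if "g \<in> borel_measurable borel" for g :: "real \<Rightarrow> ennreal"
  unfolding NM_def using that by (subst nn_integral_density) auto

lemma nd_exp: "normal_density a 1 x * exp (c * x) = exp (c * a + c\<^sup>2 / 2) * normal_density (a + c) 1 x"
proof -
  have "exp (-(x - a)\<^sup>2 / 2) * exp (c * x) = exp (c * a + c\<^sup>2 / 2) * exp (-(x - (a + c))\<^sup>2 / 2)"
    unfolding exp_add[symmetric] by (simp add: power2_eq_square field_simps)
  then show ?thesis unfolding normal_density_def by (simp add: field_simps)
qed

lemma nn_nd_1: "(\<integral>\<^sup>+x. ennreal (normal_density a 1 x) \<partial>lborel) = 1"
proof -
  have "emeasure (density lborel (normal_density a 1)) UNIV = 1"
    using prob_space.emeasure_space_1[OF prob_space_normal_density[of 1 a]] by simp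
  then show ?thesis by (simp add: emeasure_density)
qed

lemma mgf_NM: "(\<integral>\<^sup>+x. ennreal (exp (c * x)) \<partial>NM a) = ennreal (exp (c * a + c\<^sup>2 / 2))"
proof -
  have "(\<integral>\<^sup>+x. ennreal (exp (c * x)) \<partial>NM a) = (\<integral>\<^sup>+x. ennreal (normal_density a 1 x) * ennreal (exp (c * x)) \<partial>lborel)"
    by (rule nn_NM) auto
  also have "\<dots> = (\<integral>\<^sup>+x. ennreal (exp (c * a + c\<^sup>2 / 2)) * ennreal (normal_density (a + c) 1 x) \<partial>lborel)"
    by (intro nn_integral_cong) (simp add: ennreal_mult'[symmetric] nd_exp)
  also have "\<dots> = ennreal (exp (c * a + c\<^sup>2 / 2))"
    by (subst nn_integral_cmult) (auto simp: nn_nd_1)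
  finally show ?thesis .
qed

lemma emeasure_NM_shift: "A \<in> sets borel \<Longrightarrow>
  (\<integral>\<^sup>+x. ennreal (indicator A x * exp (c * x - c\<^sup>2 / 2)) \<partial>NM 0) = emeasure (NM c) A"
proof -
  assume A: "A \<in> sets borel"
  have "(\<integral>\<^sup>+x. ennreal (indicator A x * exp (c * x - c\<^sup>2 / 2)) \<partial>NM 0)
     = (\<integral>\<^sup>+x. ennreal (normal_density 0 1 x) * ennreal (indicator A x * exp (c * x - c\<^sup>2 / 2)) \<partial>lborel)"
    using A by (intro nn_NM) auto
  also have "\<dots> = (\<integral>\<^sup>+x. ennreal (normal_density c 1 x) * indicator A x \<partial>lborel)"
  proof (intro nn_integral_cong)
    fix x
    have "normal_density 0 1 x * exp (c * x - c\<^sup>2 / 2) = normal_density c 1 x"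
      using nd_exp[of 0 x c] by (simp add: exp_diff)
    then show "ennreal (normal_density 0 1 x) * ennreal (indicator A x * exp (c * x - c\<^sup>2 / 2)) =
        ennreal (normal_density c 1 x) * indicator A x"
      by (auto simp: ennreal_mult'[symmetric] indicator_def)
  qed
  also have "\<dots> = emeasure (NM c) A"
    unfolding NM_def using A by (simp add: emeasure_density nn_integral_set_ennreal)
  finally show ?thesis .
qed

lemma meas_NM: "g \<in> borel_measurable borel \<Longrightarrow> g \<in> borel_measurable (NM a)"
  by (simp add: measurable_cong_sets[OF sets_NM refl])

lemma meas_NM_enn: "g \<in> borel_measurable borel \<Longrightarrow> (\<lambda>x. ennreal (g x)) \<in> borel_measurable (NM a)"
  by (intro meas_NM) measurable

lemma BM_indep: "prob_space.indep_vars (BM \<mu>) (\<lambda>k. NM (\<mu> k)) (\<lambda>k \<omega>. \<omega> k) UNIV"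
proof -
  interpret P: prob_space "BM \<mu>" by (rule prob_BM)
  interpret PP: product_prob_space "\<lambda>k. NM (\<mu> k)" UNIV
    by (simp add: product_prob_space_def product_sigma_finite_def prob_NM prob_space_imp_sigma_finite product_prob_space_axioms_def)
  show ?thesis
  proof (subst P.indep_vars_iff_distr_eq_PiM')
    show "distr (BM \<mu>) (Pi\<^sub>M UNIV (\<lambda>k. NM (\<mu> k))) (\<lambda>x. \<lambda>i\<in>UNIV. x i) =
      Pi\<^sub>M UNIV (\<lambda>i. distr (BM \<mu>) (NM (\<mu> i)) (\<lambda>\<omega>. \<omega> i))"
      unfolding BM_def restrict_UNIV
      by (simp add: PP.PiM_component)
  qed (auto simp: BM_def)
qed

lemma BM_prod_nn:
  assumes F: "finite F" and g: "\<And>k. g k \<in> borel_measurable borel" and nn: "\<And>k x. 0 \<le> g k x"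
  shows "(\<integral>\<^sup>+\<omega>. ennreal (\<Prod>k\<in>F. g k (\<omega> k)) \<partial>BM \<mu>) = (\<Prod>k\<in>F. \<integral>\<^sup>+x. ennreal (g k x) \<partial>NM (\<mu> k))"
proof -
  interpret P: prob_space "BM \<mu>" by (rule prob_BM)
  have ind: "P.indep_vars (\<lambda>_. borel) (\<lambda>k \<omega>. ennreal (g k (\<omega> k))) F"
    by (rule P.indep_vars_subset[OF P.indep_vars_compose2[OF BM_indep]]) (auto intro!: meas_NM_enn simp: g)
  have "(\<integral>\<^sup>+\<omega>. ennreal (\<Prod>k\<in>F. g k (\<omega> k)) \<partial>BM \<mu>) = (\<integral>\<^sup>+\<omega>. (\<Prod>k\<in>F. ennreal (g k (\<omega> k))) \<partial>BM \<mu>)"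
    by (simp add: prod_ennreal nn)
  also have "\<dots> = (\<Prod>k\<in>F. \<integral>\<^sup>+\<omega>. ennreal (g k (\<omega> k)) \<partial>BM \<mu>)"
    by (rule P.indep_vars_nn_integral[OF F ind]) simp
  also have "\<dots> = (\<Prod>k\<in>F. \<integral>\<^sup>+x. ennreal (g k x) \<partial>NM (\<mu> k))"
  proof (intro prod.cong refl)
    fix k
    interpret PP: product_prob_space "\<lambda>k. NM (\<mu> k)" UNIV
      by (simp add: product_prob_space_def product_sigma_finite_def prob_NM prob_space_imp_sigma_finite product_prob_space_axioms_def)
    have "(\<integral>\<^sup>+\<omega>. ennreal (g k (\<omega> k)) \<partial>BM \<mu>) = (\<integral>\<^sup>+x. ennreal (g k x) \<partial>distr (BM \<mu>) (NM (\<mu> k)) (\<lambda>\<omega>. \<omega> k))"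
      by (subst nn_integral_distr) (auto simp: BM_def g meas_NM_enn)
    also have "\<dots> = (\<integral>\<^sup>+x. ennreal (g k x) \<partial>NM (\<mu> k))"
      unfolding BM_def by (simp add: PP.PiM_component)
    finally show "(\<integral>\<^sup>+\<omega>. ennreal (g k (\<omega> k)) \<partial>BM \<mu>) = (\<integral>\<^sup>+x. ennreal (g k x) \<partial>NM (\<mu> k))" .
  qed
  finally show ?thesis .
qed


definition mu :: "nat \<Rightarrow> nat \<Rightarrow> (nat \<Rightarrow> real) \<Rightarrow> (nat \<Rightarrow> real) \<Rightarrow> (nat \<Rightarrow> real) \<Rightarrow> idx \<Rightarrow> real" where
  "mu n m \<theta>1 \<theta>2 \<theta> = (\<lambda>(c, i, t). if c = 0 \<and> i < n then \<theta>1 t else if c = 1 \<and> i < n then \<theta>2 t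
      else if c = 2 \<and> i < m then \<theta> t else 0)"

definition rowv :: "nat \<Rightarrow> nat \<Rightarrow> (idx \<Rightarrow> real) \<Rightarrow> nat \<Rightarrow> nat \<Rightarrow> real" where
  "rowv c N \<omega> = (\<lambda>i\<in>{..<N}. \<lambda>t\<in>UNIV. \<omega> (c, i, t))"

definition rs :: "nat \<Rightarrow> nat \<Rightarrow> (idx \<Rightarrow> real) \<Rightarrow> ((nat \<Rightarrow> nat \<Rightarrow> real) \<times> (nat \<Rightarrow> nat \<Rightarrow> real)) \<times> (nat \<Rightarrow> nat \<Rightarrow> real)" where
  "rs n m \<omega> = ((rowv 0 n \<omega>, rowv 1 n \<omega>), rowv 2 m \<omega>)"

abbreviation SS :: "(nat \<Rightarrow> real) measure" where "SS \<equiv> PiM UNIV (\<lambda>_. borel)"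
abbreviation SR :: "nat \<Rightarrow> (nat \<Rightarrow> nat \<Rightarrow> real) measure" where "SR N \<equiv> PiM {..<N} (\<lambda>_. SS)"

lemma rowv_meas[measurable]: "rowv c N \<in> BM \<mu> \<rightarrow>\<^sub>M SR N"
  unfolding rowv_def by (simp add: measurable_cong_sets[OF sets_BM refl])

lemma rs_meas[measurable]: "rs n m \<in> BM \<mu> \<rightarrow>\<^sub>M lfht_space n m"
  unfolding rs_def lfht_space_def by measurable

lemma row_law:
  assumes N: "0 < N" and eq: "\<And>i t. i < N \<Longrightarrow> \<mu> (c, i, t) = \<theta>c t"
  shows "distr (BM \<mu>) (SR N) (rowv c N) = PiM {..<N} (\<lambda>_. gauss_seq \<theta>c)"
proof -
  interpret P: prob_space "BM \<mu>" by (rule prob_BM)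
  define K :: "nat \<Rightarrow> idx set" where "K i = {(c, i, t) | t. True}" for i
  have ind0: "P.indep_vars (\<lambda>i. PiM (K i) (\<lambda>k. NM (\<mu> k))) (\<lambda>i \<omega>. restrict (\<lambda>k. \<omega> k) (K i)) {..<N}"
    by (rule P.indep_vars_restrict[OF BM_indep]) (auto simp: K_def disjoint_family_on_def)
  have Y: "(\<lambda>r t. r (c, i, t)) \<in> PiM (K i) (\<lambda>k. NM (\<mu> k)) \<rightarrow>\<^sub>M SS" for i
  proof (rule measurable_PiM_single')
    fix t
    have "(\<lambda>r. r (c, i, t)) \<in> PiM (K i) (\<lambda>k. NM (\<mu> k)) \<rightarrow>\<^sub>M NM (\<mu> (c, i, t))"
      by (rule measurable_component_singleton) (simp add: K_def)
    then show "(\<lambda>r. r (c, i, t)) \<in> PiM (K i) (\<lambda>k. NM (\<mu> k)) \<rightarrow>\<^sub>M borel"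
      by (simp add: measurable_cong_sets[OF refl sets_NM])
  qed simp
  have ind1: "P.indep_vars (\<lambda>_. SS) (\<lambda>i \<omega>. (\<lambda>r t. r (c, i, t)) (restrict (\<lambda>k. \<omega> k) (K i))) {..<N}"
    by (rule P.indep_vars_compose2[OF ind0 Y])
  have ind: "P.indep_vars (\<lambda>_. SS) (\<lambda>i \<omega> t. \<omega> (c, i, t)) {..<N}"
    using ind1 by (subst (asm) P.indep_vars_cong[OF refl _ refl, where Y="\<lambda>i \<omega> t. \<omega> (c, i, t)"])
       (auto simp: K_def fun_eq_iff)
  have rvi: "(\<lambda>\<omega> t. \<omega> (c, i, t)) \<in> BM \<mu> \<rightarrow>\<^sub>M SS" for i
  proof -
    have "(\<lambda>\<omega>. \<lambda>t\<in>UNIV. \<omega> (c, i, t)) \<in> BM \<mu> \<rightarrow>\<^sub>M SS"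
      by (simp add: measurable_cong_sets[OF sets_BM refl])
    then show ?thesis by (simp add: restrict_UNIV)
  qed
  have "distr (BM \<mu>) (SR N) (\<lambda>x. \<lambda>i\<in>{..<N}. (\<lambda>\<omega> t. \<omega> (c, i, t)) x) =
        PiM {..<N} (\<lambda>i. distr (BM \<mu>) SS (\<lambda>\<omega> t. \<omega> (c, i, t)))"
    using P.indep_vars_iff_distr_eq_PiM'[where I="{..<N}" and M'="\<lambda>_. SS" and X="\<lambda>i \<omega> t. \<omega> (c, i, t)"] ind N rvi
    by auto
  also have "\<dots> = PiM {..<N} (\<lambda>_. gauss_seq \<theta>c)"
  proof (rule PiM_cong[OF refl])
    fix i assume i: "i \<in> {..<N}"
    have "distr (BM \<mu>) SS (\<lambda>\<omega> t. \<omega> (c, i, t)) =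
          distr (PiM UNIV (\<lambda>k. NM (\<mu> k))) (PiM UNIV (\<lambda>t. NM (\<mu> (c, i, t)))) (\<lambda>\<omega>. \<lambda>t\<in>UNIV. \<omega> (c, i, t))"
      unfolding BM_def restrict_UNIV by (rule distr_cong) (auto intro!: sets_PiM_cong)
    also have "\<dots> = PiM UNIV (\<lambda>t. NM (\<mu> (c, i, t)))"
      by (rule distr_PiM_reindex[where f="\<lambda>t. (c, i, t)"]) (auto intro: prob_NM inj_onI)
    also have "\<dots> = gauss_seq \<theta>c"
      unfolding gauss_seq_def using i eq by (intro PiM_cong) (auto simp: NM_def)
    finally show "distr (BM \<mu>) SS (\<lambda>\<omega> t. \<omega> (c, i, t)) = gauss_seq \<theta>c" .
  qed
  finally show ?thesis unfolding rowv_def restrict_UNIV by simp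
qed

lemma indep_groups_distr:
  assumes AB: "A \<inter> B = {}"
    and f[measurable]: "f \<in> PiM A (\<lambda>_. borel) \<rightarrow>\<^sub>M S" and g[measurable]: "g \<in> PiM B (\<lambda>_. borel) \<rightarrow>\<^sub>M T"
    and fF: "\<And>\<omega>. f (restrict \<omega> A) = F \<omega>" and gG: "\<And>\<omega>. g (restrict \<omega> B) = G \<omega>"
  shows "distr (BM \<mu>) (S \<Otimes>\<^sub>M T) (\<lambda>\<omega>. (F \<omega>, G \<omega>)) = distr (BM \<mu>) S F \<Otimes>\<^sub>M distr (BM \<mu>) T G"
proof -
  interpret P: prob_space "BM \<mu>" by (rule prob_BM)
  let ?M = "\<lambda>k. NM (\<mu> k)"
  have i0: "P.indep_var (PiM A ?M) (\<lambda>\<omega>. restrict (\<lambda>k. \<omega> k) A) (PiM B ?M) (\<lambda>\<omega>. restrict (\<lambda>k. \<omega> k) B)"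
    by (rule P.indep_var_restrict[OF BM_indep AB]) auto
  have f': "f \<in> PiM A ?M \<rightarrow>\<^sub>M S"
    using f by (simp add: measurable_cong_sets[OF sets_PiM_cong[OF refl sets_NM] refl])
  have g': "g \<in> PiM B ?M \<rightarrow>\<^sub>M T"
    using g by (simp add: measurable_cong_sets[OF sets_PiM_cong[OF refl sets_NM] refl])
  have rA: "(\<lambda>\<omega>. restrict \<omega> A) \<in> BM \<mu> \<rightarrow>\<^sub>M PiM A (\<lambda>_. borel)"
    by (simp add: measurable_cong_sets[OF sets_BM refl])
  have rB: "(\<lambda>\<omega>. restrict \<omega> B) \<in> BM \<mu> \<rightarrow>\<^sub>M PiM B (\<lambda>_. borel)"
    by (simp add: measurable_cong_sets[OF sets_BM refl])
  have Fm[measurable]: "F \<in> BM \<mu> \<rightarrow>\<^sub>M S"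
  proof -
    have "(\<lambda>\<omega>. f (restrict \<omega> A)) \<in> BM \<mu> \<rightarrow>\<^sub>M S" using rA by measurable
    then show ?thesis using fF by simp
  qed
  have Gm[measurable]: "G \<in> BM \<mu> \<rightarrow>\<^sub>M T"
  proof -
    have "(\<lambda>\<omega>. g (restrict \<omega> B)) \<in> BM \<mu> \<rightarrow>\<^sub>M T" using rB by measurable
    then show ?thesis using gG by simp
  qed
  show ?thesis
  proof (rule pair_measure_eqI[symmetric])
    show "sigma_finite_measure (distr (BM \<mu>) S F)"
      by (rule prob_space_imp_sigma_finite, rule P.prob_space_distr) simp
    show "sigma_finite_measure (distr (BM \<mu>) T G)"
      by (rule prob_space_imp_sigma_finite, rule P.prob_space_distr) simp
    show "sets (distr (BM \<mu>) S F \<Otimes>\<^sub>M distr (BM \<mu>) T G) = sets (distr (BM \<mu>) (S \<Otimes>\<^sub>M T) (\<lambda>\<omega>. (F \<omega>, G \<omega>)))"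
      by (simp cong: sets_pair_measure_cong)
    fix a b assume a: "a \<in> sets (distr (BM \<mu>) S F)" and b: "b \<in> sets (distr (BM \<mu>) T G)"
    then have a': "a \<in> sets S" and b': "b \<in> sets T" by auto
    let ?Xa = "f -` a \<inter> space (PiM A ?M)" and ?Xb = "g -` b \<inter> space (PiM B ?M)"
    have Xa: "?Xa \<in> sets (PiM A ?M)" using f' a' by (rule measurable_sets)
    have Xb: "?Xb \<in> sets (PiM B ?M)" using g' b' by (rule measurable_sets)
    have sp: "\<And>\<omega>. restrict \<omega> A \<in> space (PiM A ?M)" "\<And>\<omega>. restrict \<omega> B \<in> space (PiM B ?M)"
      by (auto simp: space_PiM)
    have e1: "(\<lambda>x. (restrict (\<lambda>k. x k) A, restrict (\<lambda>k. x k) B)) -` (?Xa \<times> ?Xb) \<inter> space (BM \<mu>)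
        = (\<lambda>\<omega>. (F \<omega>, G \<omega>)) -` (a \<times> b) \<inter> space (BM \<mu>)"
      using sp fF gG by auto
    have e2: "(\<lambda>\<omega>. restrict (\<lambda>k. \<omega> k) A) -` ?Xa \<inter> space (BM \<mu>) = F -` a \<inter> space (BM \<mu>)"
      using sp fF by auto
    have e3: "(\<lambda>\<omega>. restrict (\<lambda>k. \<omega> k) B) -` ?Xb \<inter> space (BM \<mu>) = G -` b \<inter> space (BM \<mu>)"
      using sp gG by auto
    have "P.prob ((\<lambda>\<omega>. (F \<omega>, G \<omega>)) -` (a \<times> b) \<inter> space (BM \<mu>)) =
        P.prob (F -` a \<inter> space (BM \<mu>)) * P.prob (G -` b \<inter> space (BM \<mu>))"
      using P.indep_varD[OF i0 Xa Xb] unfolding e1 e2 e3 .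
    then show "emeasure (distr (BM \<mu>) S F) a * emeasure (distr (BM \<mu>) T G) b =
        emeasure (distr (BM \<mu>) (S \<Otimes>\<^sub>M T) (\<lambda>\<omega>. (F \<omega>, G \<omega>))) (a \<times> b)"
      using a' b' by (simp add: emeasure_distr P.emeasure_eq_measure ennreal_mult'[symmetric])
  qed
qed

lemma rowv_meas_restr[measurable]:
  assumes "\<And>i t. (c, i, t) \<in> A"
  shows "rowv c N \<in> PiM A (\<lambda>_. borel) \<rightarrow>\<^sub>M SR N"
  unfolding rowv_def using assms by measurable

lemma reshape:
  assumes n: "0 < n" and m: "0 < m"
  shows "lfht_law n m \<theta>1 \<theta>2 \<theta> = distr (BM (mu n m \<theta>1 \<theta>2 \<theta>)) (lfht_space n m) (rs n m)"
proof -
  let ?\<mu> = "mu n m \<theta>1 \<theta>2 \<theta>"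
  interpret P: prob_space "BM ?\<mu>" by (rule prob_BM)
  have i1: "distr (BM ?\<mu>) ((SR n \<Otimes>\<^sub>M SR n) \<Otimes>\<^sub>M SR m) (\<lambda>\<omega>. ((rowv 0 n \<omega>, rowv 1 n \<omega>), rowv 2 m \<omega>))
     = distr (BM ?\<mu>) (SR n \<Otimes>\<^sub>M SR n) (\<lambda>\<omega>. (rowv 0 n \<omega>, rowv 1 n \<omega>)) \<Otimes>\<^sub>M distr (BM ?\<mu>) (SR m) (rowv 2 m)"
    by (rule indep_groups_distr[where A="{k. fst k \<in> {0,1}}" and B="{k. fst k = 2}"
          and f="\<lambda>\<omega>. (rowv 0 n \<omega>, rowv 1 n \<omega>)" and g="rowv 2 m"]) (auto simp: rowv_def fun_eq_iff)
  have i2: "distr (BM ?\<mu>) (SR n \<Otimes>\<^sub>M SR n) (\<lambda>\<omega>. (rowv 0 n \<omega>, rowv 1 n \<omega>)) =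
      distr (BM ?\<mu>) (SR n) (rowv 0 n) \<Otimes>\<^sub>M distr (BM ?\<mu>) (SR n) (rowv 1 n)"
    by (rule indep_groups_distr[where A="{k. fst k = 0}" and B="{k. fst k = 1}"
          and f="rowv 0 n" and g="rowv 1 n"]) (auto simp: rowv_def fun_eq_iff)
  have "distr (BM ?\<mu>) (lfht_space n m) (rs n m) =
      distr (BM ?\<mu>) ((SR n \<Otimes>\<^sub>M SR n) \<Otimes>\<^sub>M SR m) (\<lambda>\<omega>. ((rowv 0 n \<omega>, rowv 1 n \<omega>), rowv 2 m \<omega>))"
    unfolding lfht_space_def rs_def by simp
  also have "\<dots> = distr (BM ?\<mu>) (SR n \<Otimes>\<^sub>M SR n) (\<lambda>\<omega>. (rowv 0 n \<omega>, rowv 1 n \<omega>)) \<Otimes>\<^sub>M distr (BM ?\<mu>) (SR m) (rowv 2 m)"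
    using i1 by simp
  also have "distr (BM ?\<mu>) (SR n \<Otimes>\<^sub>M SR n) (\<lambda>\<omega>. (rowv 0 n \<omega>, rowv 1 n \<omega>)) =
      distr (BM ?\<mu>) (SR n) (rowv 0 n) \<Otimes>\<^sub>M distr (BM ?\<mu>) (SR n) (rowv 1 n)"
    using i2 by simp
  also have "distr (BM ?\<mu>) (SR n) (rowv 0 n) = PiM {..<n} (\<lambda>_. gauss_seq \<theta>1)"
    by (rule row_law[OF n]) (simp add: mu_def)
  also have "distr (BM ?\<mu>) (SR n) (rowv 1 n) = PiM {..<n} (\<lambda>_. gauss_seq \<theta>2)"
    by (rule row_law[OF n]) (simp add: mu_def)
  also have "distr (BM ?\<mu>) (SR m) (rowv 2 m) = PiM {..<m} (\<lambda>_. gauss_seq \<theta>)"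
    by (rule row_law[OF m]) (simp add: mu_def)
  finally show ?thesis unfolding lfht_law_def by simp
qed


definition LL :: "idx set \<Rightarrow> (idx \<Rightarrow> real) \<Rightarrow> (idx \<Rightarrow> real) \<Rightarrow> real" where
  "LL F \<mu> \<omega> = exp (\<Sum>k\<in>F. \<mu> k * \<omega> k - (\<mu> k)\<^sup>2 / 2)"

lemma LL_pos: "0 < LL F \<mu> \<omega>" by (simp add: LL_def)

lemma LL_meas_BM[measurable]: "LL F \<mu> \<in> borel_measurable (BM \<nu>)"
  unfolding LL_def by (simp add: measurable_cong_sets[OF sets_BM refl])

lemma LL_meas_PiM:
  assumes "F \<subseteq> G"
  shows "LL F \<mu> \<in> borel_measurable (PiM G (\<lambda>_. borel))"
proof -
  have c: "(\<lambda>\<omega>. \<mu> k * \<omega> k - (\<mu> k)\<^sup>2 / 2) \<in> borel_measurable (PiM G (\<lambda>_. borel))" if "k \<in> F" for k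
  proof -
    have "(\<lambda>\<omega>. \<omega> k) \<in> borel_measurable (PiM G (\<lambda>_. borel))"
      using that assms by (intro measurable_component_singleton) auto
    then show ?thesis by measurable
  qed
  have "(\<lambda>\<omega>. \<Sum>k\<in>F. \<mu> k * \<omega> k - (\<mu> k)\<^sup>2 / 2) \<in> borel_measurable (PiM G (\<lambda>_. borel))"
    by (rule borel_measurable_sum) (rule c)
  then show ?thesis unfolding LL_def by (rule measurable_compose) (rule borel_measurable_exp)
qed

lemma mgf_BM:
  assumes F: "finite F"
  shows "(\<integral>\<^sup>+\<omega>. ennreal (exp (\<Sum>k\<in>F. c k * \<omega> k)) \<partial>BM \<nu>) = ennreal (exp (\<Sum>k\<in>F. c k * \<nu> k + (c k)\<^sup>2 / 2))"
proof -
  have "(\<integral>\<^sup>+\<omega>. ennreal (exp (\<Sum>k\<in>F. c k * \<omega> k)) \<partial>BM \<nu>) = (\<integral>\<^sup>+\<omega>. ennreal (\<Prod>k\<in>F. exp (c k * \<omega> k)) \<partial>BM \<nu>)"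
    by (simp add: exp_sum F)
  also have "\<dots> = (\<Prod>k\<in>F. \<integral>\<^sup>+x. ennreal (exp (c k * x)) \<partial>NM (\<nu> k))"
    by (rule BM_prod_nn[OF F]) auto
  also have "\<dots> = (\<Prod>k\<in>F. ennreal (exp (c k * \<nu> k + (c k)\<^sup>2 / 2)))"
    by (simp add: mgf_NM)
  also have "\<dots> = ennreal (exp (\<Sum>k\<in>F. c k * \<nu> k + (c k)\<^sup>2 / 2))"
    by (simp add: prod_ennreal exp_sum F)
  finally show ?thesis .
qed

lemma LL_alt: "LL F \<mu> \<omega> = exp (- (\<Sum>k\<in>F. (\<mu> k)\<^sup>2 / 2)) * exp (\<Sum>k\<in>F. \<mu> k * \<omega> k)"
  unfolding LL_def by (simp add: sum_subtractf exp_add[symmetric])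

lemma nn_LL:
  assumes F: "finite F"
  shows "(\<integral>\<^sup>+\<omega>. ennreal (LL F \<mu> \<omega>) \<partial>BM (\<lambda>_. 0)) = 1"
proof -
  have "(\<integral>\<^sup>+\<omega>. ennreal (LL F \<mu> \<omega>) \<partial>BM (\<lambda>_. 0)) =
     (\<integral>\<^sup>+\<omega>. ennreal (exp (- (\<Sum>k\<in>F. (\<mu> k)\<^sup>2 / 2))) * ennreal (exp (\<Sum>k\<in>F. \<mu> k * \<omega> k)) \<partial>BM (\<lambda>_. 0))"
    by (simp add: LL_alt ennreal_mult')
  also have "\<dots> = ennreal (exp (- (\<Sum>k\<in>F. (\<mu> k)\<^sup>2 / 2))) * ennreal (exp (\<Sum>k\<in>F. \<mu> k * 0 + (\<mu> k)\<^sup>2 / 2))"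
    by (subst nn_integral_cmult) (auto simp: mgf_BM[OF F])
  also have "\<dots> = 1"
    by (simp add: ennreal_mult'[symmetric] exp_add[symmetric])
  finally show ?thesis .
qed

lemma integrable_LL:
  assumes F: "finite F"
  shows "integrable (BM (\<lambda>_. 0)) (LL F \<mu>)" and "integral\<^sup>L (BM (\<lambda>_. 0)) (LL F \<mu>) = 1"
proof -
  show "integrable (BM (\<lambda>_. 0)) (LL F \<mu>)"
  proof (rule integrableI_nonneg)
    show "AE x in BM (\<lambda>_. 0). 0 \<le> LL F \<mu> x" by (simp add: LL_pos less_imp_le)
  qed (auto simp: nn_LL[OF F])
  then show "integral\<^sup>L (BM (\<lambda>_. 0)) (LL F \<mu>) = 1"
  proof -
    have ae: "AE x in BM (\<lambda>_. 0). 0 \<le> LL F \<mu> x" by (simp add: LL_pos less_imp_le)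
    show ?thesis
      using nn_LL[OF F, of \<mu>] nn_integral_eq_integral[OF \<open>integrable _ _\<close> ae] by simp
  qed
qed

lemma density_BM:
  assumes F: "finite F" and supp: "\<And>k. k \<notin> F \<Longrightarrow> \<mu> k = 0"
  shows "BM \<mu> = density (BM (\<lambda>_. 0)) (\<lambda>\<omega>. ennreal (LL F \<mu> \<omega>))"
proof -
  let ?M = "\<lambda>k. NM (\<mu> k)"
  show ?thesis
  proof (rule measure_eqI_PiM_infinite[where I=UNIV and M="?M"])
    show "sets (BM \<mu>) = sets (PiM UNIV ?M)" by (simp add: BM_def)
    show "sets (density (BM (\<lambda>_. 0)) (\<lambda>\<omega>. ennreal (LL F \<mu> \<omega>))) = sets (PiM UNIV ?M)"
      by (simp add: BM_def cong: sets_PiM_cong)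
    show "finite_measure (BM \<mu>)"
      using prob_BM prob_space_def by blast
  next
    fix A J assume J: "finite J" and JU: "J \<subseteq> UNIV" and A: "\<And>i. i \<in> J \<Longrightarrow> A i \<in> sets (?M i)"
    have A': "\<And>i. i \<in> J \<Longrightarrow> A i \<in> sets borel" using A by simp
    have "emeasure (BM \<mu>) (prod_emb UNIV ?M J (Pi\<^sub>E J A)) = (\<Prod>i\<in>J. emeasure (?M i) (A i))"
      unfolding BM_def using J A by (intro emeasure_PiM_emb) (auto intro: prob_NM)
    also have "\<dots> = (\<Prod>k\<in>J \<union> F. \<integral>\<^sup>+x. ennreal ((if k \<in> J then indicator (A k) x else 1) * exp (\<mu> k * x - (\<mu> k)\<^sup>2 / 2)) \<partial>NM 0)"
    proof -
      have 1: "(\<integral>\<^sup>+x. ennreal ((if k \<in> J then indicator (A k) x else 1) * exp (\<mu> k * x - (\<mu> k)\<^sup>2 / 2)) \<partial>NM 0)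
            = (if k \<in> J then emeasure (?M k) (A k) else 1)" for k
      proof (cases "k \<in> J")
        case True then show ?thesis using emeasure_NM_shift[OF A'[OF True]] by simp
      next
        case False
        have "(\<integral>\<^sup>+x. ennreal (indicator UNIV x * exp (\<mu> k * x - (\<mu> k)\<^sup>2 / 2)) \<partial>NM 0) = emeasure (NM (\<mu> k)) UNIV"
          by (rule emeasure_NM_shift) simp
        also have "\<dots> = 1" using prob_space.emeasure_space_1[OF prob_NM, of "\<mu> k"] by simp
        finally show ?thesis using False by simp
      qed
      have "(\<Prod>k\<in>J \<union> F. \<integral>\<^sup>+x. ennreal ((if k \<in> J then indicator (A k) x else 1) * exp (\<mu> k * x - (\<mu> k)\<^sup>2 / 2)) \<partial>NM 0)
          = (\<Prod>k\<in>J \<union> F. (if k \<in> J then emeasure (?M k) (A k) else 1))"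
        by (simp add: 1)
      also have "\<dots> = (\<Prod>k\<in>J. emeasure (?M k) (A k))"
        using J F by (subst prod.If_cases) (auto simp: Int_absorb2)
      finally show ?thesis by simp
    qed
    also have "\<dots> = (\<integral>\<^sup>+\<omega>. ennreal (\<Prod>k\<in>J \<union> F. (if k \<in> J then indicator (A k) (\<omega> k) else 1) * exp (\<mu> k * \<omega> k - (\<mu> k)\<^sup>2 / 2)) \<partial>BM (\<lambda>_. 0))"
    proof (rule BM_prod_nn[symmetric])
      fix k
      show "(\<lambda>x. (if k \<in> J then indicator (A k) x else 1) * exp (\<mu> k * x - (\<mu> k)\<^sup>2 / 2)) \<in> borel_measurable borel"
      proof (cases "k \<in> J")
        case True
        note [measurable] = A'[OF True]
        show ?thesis using True by simp
      qed simp
    qed (use J F in auto)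
    also have "\<dots> = (\<integral>\<^sup>+\<omega>. ennreal (LL F \<mu> \<omega>) * indicator (prod_emb UNIV ?M J (Pi\<^sub>E J A)) \<omega> \<partial>BM (\<lambda>_. 0))"
    proof (intro nn_integral_cong)
      fix \<omega>
      have "(\<Prod>k\<in>J \<union> F. (if k \<in> J then indicator (A k) (\<omega> k) else 1) * exp (\<mu> k * \<omega> k - (\<mu> k)\<^sup>2 / 2))
          = (\<Prod>k\<in>J \<union> F. (if k \<in> J then indicator (A k) (\<omega> k) else 1)) * (\<Prod>k\<in>J \<union> F. exp (\<mu> k * \<omega> k - (\<mu> k)\<^sup>2 / 2))"
        by (rule prod.distrib)
      also have "(\<Prod>k\<in>J \<union> F. exp (\<mu> k * \<omega> k - (\<mu> k)\<^sup>2 / 2)) = LL F \<mu> \<omega>"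
      proof -
        have "(\<Prod>k\<in>J \<union> F. exp (\<mu> k * \<omega> k - (\<mu> k)\<^sup>2 / 2)) = (\<Prod>k\<in>F. exp (\<mu> k * \<omega> k - (\<mu> k)\<^sup>2 / 2))"
          using J F supp by (intro prod.mono_neutral_right) auto
        then show ?thesis unfolding LL_def by (simp add: exp_sum F)
      qed
      also have "(\<Prod>k\<in>J \<union> F. (if k \<in> J then indicator (A k) (\<omega> k) else 1)) = (\<Prod>k\<in>J. indicator (A k) (\<omega> k) :: real)"
        using J F by (subst prod.If_cases) (auto simp: Int_absorb2)
      also have "(\<Prod>k\<in>J. indicator (A k) (\<omega> k) :: real) = indicator (prod_emb UNIV ?M J (Pi\<^sub>E J A)) \<omega>"
        using J by (auto simp: prod_emb_def indicator_def space_PiM PiE_iff prod_zero_iff split: if_splits)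
      finally show "ennreal (\<Prod>k\<in>J \<union> F. (if k \<in> J then indicator (A k) (\<omega> k) else 1) * exp (\<mu> k * \<omega> k - (\<mu> k)\<^sup>2 / 2))
          = ennreal (LL F \<mu> \<omega>) * indicator (prod_emb UNIV ?M J (Pi\<^sub>E J A)) \<omega>"
        by (simp add: ennreal_mult' indicator_def mult.commute)
    qed
    also have "\<dots> = emeasure (density (BM (\<lambda>_. 0)) (\<lambda>\<omega>. ennreal (LL F \<mu> \<omega>))) (prod_emb UNIV ?M J (Pi\<^sub>E J A))"
    proof -
      have e: "prod_emb UNIV ?M J (Pi\<^sub>E J A) = prod_emb UNIV (\<lambda>_. NM 0) J (Pi\<^sub>E J A)"
        by (simp add: prod_emb_def)
      have "prod_emb UNIV ?M J (Pi\<^sub>E J A) \<in> sets (BM (\<lambda>_. 0))"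
        unfolding BM_def e using J A' by (intro sets_PiM_I) auto
      then show ?thesis by (simp add: emeasure_density)
    qed
    finally show "emeasure (BM \<mu>) (prod_emb UNIV ?M J (Pi\<^sub>E J A)) =
      emeasure (density (BM (\<lambda>_. 0)) (\<lambda>\<omega>. ennreal (LL F \<mu> \<omega>))) (prod_emb UNIV ?M J (Pi\<^sub>E J A))" .
  qed
qed


abbreviation B0 :: "(idx \<Rightarrow> real) measure" where "B0 \<equiv> BM (\<lambda>_. 0)"

definition FF :: "nat \<Rightarrow> nat \<Rightarrow> nat \<Rightarrow> idx set" where
  "FF n m T = {..<3} \<times> {..<max n m} \<times> {..<T}"

lemma finite_FF[simp]: "finite (FF n m T)"
  by (simp add: FF_def)

lemma mu_supp:
  assumes "\<And>t. T \<le> t \<Longrightarrow> \<theta>1 t = 0" "\<And>t. T \<le> t \<Longrightarrow> \<theta>2 t = 0" "\<And>t. T \<le> t \<Longrightarrow> \<theta> t = 0"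
  shows "k \<notin> FF n m T \<Longrightarrow> mu n m \<theta>1 \<theta>2 \<theta> k = 0"
  using assms by (cases k) (auto simp: FF_def mu_def not_less)

definition Sset :: "nat \<Rightarrow> nat \<Rightarrow> ((((nat \<Rightarrow> nat \<Rightarrow> real) \<times> (nat \<Rightarrow> nat \<Rightarrow> real)) \<times> (nat \<Rightarrow> nat \<Rightarrow> real)) \<Rightarrow> nat) \<Rightarrow> (idx \<Rightarrow> real) set" where
  "Sset n m \<psi> = {\<omega>. \<psi> (rs n m \<omega>) \<noteq> 0}"

lemma Sset_meas:
  assumes psi: "\<psi> \<in> lfht_space n m \<rightarrow>\<^sub>M count_space {0, 1}"
  shows "Sset n m \<psi> \<in> sets (BM \<nu>)"
proof -
  have "(\<lambda>\<omega>. \<psi> (rs n m \<omega>)) \<in> BM \<nu> \<rightarrow>\<^sub>M count_space {0, 1}"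
    using psi by measurable
  then have "(\<lambda>\<omega>. \<psi> (rs n m \<omega>)) -` {1} \<inter> space (BM \<nu>) \<in> sets (BM \<nu>)"
    by (rule measurable_sets) simp
  moreover have "(\<lambda>\<omega>. \<psi> (rs n m \<omega>)) -` {1} \<inter> space (BM \<nu>) = Sset n m \<psi>"
  proof -
    have "\<psi> (rs n m \<omega>) \<in> {0, 1}" for \<omega>
      using measurable_space[OF psi, of "rs n m \<omega>"] measurable_space[OF rs_meas[of n m \<nu>], of \<omega>] by auto
    then show ?thesis by (auto simp: Sset_def) (metis gr_implies_not0)
  qed
  ultimately show ?thesis by simp
qed

lemma psi_vals:
  assumes psi: "\<psi> \<in> lfht_space n m \<rightarrow>\<^sub>M count_space {0, 1}"
  shows "\<psi> (rs n m \<omega>) \<in> {0, 1}"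
  using measurable_space[OF psi, of "rs n m \<omega>"] measurable_space[OF rs_meas[of n m "\<lambda>_. 0"], of \<omega>] by auto

lemma integrable_LL_ind:
  "integrable B0 (\<lambda>\<omega>. LL (FF n m T) \<mu> \<omega> * indicator S \<omega>)" if "S \<in> sets B0"
proof (rule Bochner_Integration.integrable_bound[OF integrable_LL(1)[OF finite_FF, of n m T \<mu>]])
  show "(\<lambda>\<omega>. LL (FF n m T) \<mu> \<omega> * indicator S \<omega>) \<in> borel_measurable B0" using that by measurable
  show "AE x in B0. norm (LL (FF n m T) \<mu> x * indicator S x) \<le> norm (LL (FF n m T) \<mu> x)"
    by (auto simp: indicator_def LL_pos less_imp_le)
qed

lemma prob_eq:
  assumes n: "0 < n" and m: "0 < m" and psi: "\<psi> \<in> lfht_space n m \<rightarrow>\<^sub>M count_space {0, 1}"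
    and s1: "\<And>t. T \<le> t \<Longrightarrow> \<theta>1 t = 0" and s2: "\<And>t. T \<le> t \<Longrightarrow> \<theta>2 t = 0" and s3: "\<And>t. T \<le> t \<Longrightarrow> \<theta> t = 0"
  shows "measure (lfht_law n m \<theta>1 \<theta>2 \<theta>) {x \<in> space (lfht_law n m \<theta>1 \<theta>2 \<theta>). \<psi> x \<noteq> 0}
      = integral\<^sup>L B0 (\<lambda>\<omega>. LL (FF n m T) (mu n m \<theta>1 \<theta>2 \<theta>) \<omega> * indicator (Sset n m \<psi>) \<omega>)"
    and "measure (lfht_law n m \<theta>1 \<theta>2 \<theta>) {x \<in> space (lfht_law n m \<theta>1 \<theta>2 \<theta>). \<psi> x \<noteq> 1}
      = 1 - integral\<^sup>L B0 (\<lambda>\<omega>. LL (FF n m T) (mu n m \<theta>1 \<theta>2 \<theta>) \<omega> * indicator (Sset n m \<psi>) \<omega>)"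
proof -
  let ?\<mu> = "mu n m \<theta>1 \<theta>2 \<theta>"
  let ?L = "LL (FF n m T) ?\<mu>"
  interpret P: prob_space "BM ?\<mu>" by (rule prob_BM)
  have S: "Sset n m \<psi> \<in> sets (BM ?\<mu>)" by (rule Sset_meas[OF psi])
  have S0: "Sset n m \<psi> \<in> sets B0" by (rule Sset_meas[OF psi])
  have law: "lfht_law n m \<theta>1 \<theta>2 \<theta> = distr (BM ?\<mu>) (lfht_space n m) (rs n m)"
    by (rule reshape[OF n m])
  have sp: "space (lfht_law n m \<theta>1 \<theta>2 \<theta>) = space (lfht_space n m)"
    unfolding law by simp
  have A0: "{x \<in> space (lfht_space n m). \<psi> x \<noteq> 0} \<in> sets (lfht_space n m)"
    using psi by measurable
  have A1: "{x \<in> space (lfht_space n m). \<psi> x \<noteq> 1} \<in> sets (lfht_space n m)"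
    using psi by measurable
  have rsp: "rs n m \<omega> \<in> space (lfht_space n m)" for \<omega>
    using measurable_space[OF rs_meas[of n m ?\<mu>], of \<omega>] by simp
  have e0: "measure (lfht_law n m \<theta>1 \<theta>2 \<theta>) {x \<in> space (lfht_law n m \<theta>1 \<theta>2 \<theta>). \<psi> x \<noteq> 0} = measure (BM ?\<mu>) (Sset n m \<psi>)"
    unfolding sp unfolding law using A0 rsp by (subst measure_distr) (auto simp: Sset_def)
  have "measure (lfht_law n m \<theta>1 \<theta>2 \<theta>) {x \<in> space (lfht_law n m \<theta>1 \<theta>2 \<theta>). \<psi> x \<noteq> 1} = measure (BM ?\<mu>) (space (BM ?\<mu>) - Sset n m \<psi>)"
    unfolding sp unfolding law using A1 rsp psi_vals[OF psi]
    by (subst measure_distr) (auto simp: Sset_def intro!: arg_cong[where f="measure _"], metis gr_implies_not0)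
  also have "\<dots> = 1 - measure (BM ?\<mu>) (Sset n m \<psi>)"
    using P.prob_compl[OF S] by simp
  finally have e1: "measure (lfht_law n m \<theta>1 \<theta>2 \<theta>) {x \<in> space (lfht_law n m \<theta>1 \<theta>2 \<theta>). \<psi> x \<noteq> 1} = 1 - measure (BM ?\<mu>) (Sset n m \<psi>)" .
  have "measure (BM ?\<mu>) (Sset n m \<psi>) = enn2real (\<integral>\<^sup>+\<omega>. ennreal (?L \<omega>) * indicator (Sset n m \<psi>) \<omega> \<partial>B0)"
    unfolding measure_def using S0
    by (subst density_BM[of "FF n m T"]) (auto simp: emeasure_density mu_supp[OF s1 s2 s3])
  also have "\<dots> = integral\<^sup>L B0 (\<lambda>\<omega>. ?L \<omega> * indicator (Sset n m \<psi>) \<omega>)"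
  proof -
    have "(\<integral>\<^sup>+\<omega>. ennreal (?L \<omega>) * indicator (Sset n m \<psi>) \<omega> \<partial>B0) = (\<integral>\<^sup>+\<omega>. ennreal (?L \<omega> * indicator (Sset n m \<psi>) \<omega>) \<partial>B0)"
      by (intro nn_integral_cong) (auto simp: indicator_def)
    also have "\<dots> = ennreal (integral\<^sup>L B0 (\<lambda>\<omega>. ?L \<omega> * indicator (Sset n m \<psi>) \<omega>))"
      by (rule nn_integral_eq_integral[OF integrable_LL_ind[OF S0]]) (auto simp: indicator_def LL_pos less_imp_le)
    finally show ?thesis by (simp add: integral_nonneg_AE indicator_def LL_pos less_imp_le)
  qed
  finally have e2: "measure (BM ?\<mu>) (Sset n m \<psi>) = integral\<^sup>L B0 (\<lambda>\<omega>. ?L \<omega> * indicator (Sset n m \<psi>) \<omega>)" .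
  show "measure (lfht_law n m \<theta>1 \<theta>2 \<theta>) {x \<in> space (lfht_law n m \<theta>1 \<theta>2 \<theta>). \<psi> x \<noteq> 0}
      = integral\<^sup>L B0 (\<lambda>\<omega>. ?L \<omega> * indicator (Sset n m \<psi>) \<omega>)" using e0 e2 by simp
  show "measure (lfht_law n m \<theta>1 \<theta>2 \<theta>) {x \<in> space (lfht_law n m \<theta>1 \<theta>2 \<theta>). \<psi> x \<noteq> 1}
      = 1 - integral\<^sup>L B0 (\<lambda>\<omega>. ?L \<omega> * indicator (Sset n m \<psi>) \<omega>)" using e1 e2 by simp
qed


lemma tv_bound:
  fixes f g :: "'a \<Rightarrow> real"
  assumes f: "integrable M f" and g: "integrable M g" and eq: "integral\<^sup>L M f = integral\<^sup>L M g"
    and S: "S \<in> sets M"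
  shows "integral\<^sup>L M (\<lambda>x. g x * indicator S x) - integral\<^sup>L M (\<lambda>x. f x * indicator S x)
      \<le> integral\<^sup>L M (\<lambda>x. \<bar>f x - g x\<bar>) / 2"
proof -
  have iS: "integrable M (\<lambda>x. h x * indicator S x)" if "integrable M h" for h :: "'a \<Rightarrow> real"
    by (rule integrable_real_mult_indicator[OF S that])
  have "integral\<^sup>L M (\<lambda>x. g x * indicator S x) - integral\<^sup>L M (\<lambda>x. f x * indicator S x)
      = integral\<^sup>L M (\<lambda>x. (g x - f x) * indicator S x)"
    using iS[OF f] iS[OF g] by (simp add: left_diff_distrib Bochner_Integration.integral_diff)
  also have "\<dots> \<le> integral\<^sup>L M (\<lambda>x. ((g x - f x) + \<bar>f x - g x\<bar>) / 2)"
    using iS[OF f] iS[OF g] f g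
    by (intro integral_mono) (auto simp: indicator_def left_diff_distrib)
  also have "\<dots> = (integral\<^sup>L M g - integral\<^sup>L M f + integral\<^sup>L M (\<lambda>x. \<bar>f x - g x\<bar>)) / 2"
    using f g by simp
  also have "\<dots> = integral\<^sup>L M (\<lambda>x. \<bar>f x - g x\<bar>) / 2" using eq by simp
  finally show ?thesis .
qed

lemma CS_real:
  fixes u v :: "'a \<Rightarrow> real"
  assumes um[measurable]: "u \<in> borel_measurable M" and vm[measurable]: "v \<in> borel_measurable M"
    and u0: "\<And>x. 0 \<le> u x" and v0: "\<And>x. 0 \<le> v x"
    and iu: "integrable M (\<lambda>x. (u x)\<^sup>2)" and iv: "integrable M (\<lambda>x. (v x)\<^sup>2)"
  shows "integrable M (\<lambda>x. u x * v x)"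
    and "(integral\<^sup>L M (\<lambda>x. u x * v x))\<^sup>2 \<le> integral\<^sup>L M (\<lambda>x. (u x)\<^sup>2) * integral\<^sup>L M (\<lambda>x. (v x)\<^sup>2)"
proof -
  show iuv: "integrable M (\<lambda>x. u x * v x)"
  proof (rule Bochner_Integration.integrable_bound[of M "\<lambda>x. ((u x)\<^sup>2 + (v x)\<^sup>2) / 2"])
    show "integrable M (\<lambda>x. ((u x)\<^sup>2 + (v x)\<^sup>2) / 2)" using iu iv by simp
    show "(\<lambda>x. u x * v x) \<in> borel_measurable M" by measurable
    show "AE x in M. norm (u x * v x) \<le> norm (((u x)\<^sup>2 + (v x)\<^sup>2) / 2)"
    proof (intro AE_I2)
      fix x
      have "0 \<le> (u x - v x)\<^sup>2" by simp
      then show "norm (u x * v x) \<le> norm (((u x)\<^sup>2 + (v x)\<^sup>2) / 2)"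
        using u0[of x] v0[of x] by (simp add: power2_eq_square algebra_simps)
    qed
  qed
  have cs: "(\<integral>\<^sup>+x. ennreal (u x) * ennreal (v x) \<partial>M)\<^sup>2 \<le> (\<integral>\<^sup>+x. ennreal (u x) ^ 2 \<partial>M) * (\<integral>\<^sup>+x. ennreal (v x) ^ 2 \<partial>M)"
    by (rule Cauchy_Schwarz_nn_integral) auto
  have 1: "(\<integral>\<^sup>+x. ennreal (u x) * ennreal (v x) \<partial>M) = ennreal (integral\<^sup>L M (\<lambda>x. u x * v x))"
    using iuv u0 v0 by (subst nn_integral_eq_integral[symmetric]) (auto simp: ennreal_mult' intro!: nn_integral_cong mult_nonneg_nonneg)
  have 2: "(\<integral>\<^sup>+x. ennreal (u x) ^ 2 \<partial>M) = ennreal (integral\<^sup>L M (\<lambda>x. (u x)\<^sup>2))"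
    using iu u0 by (subst nn_integral_eq_integral[symmetric]) (auto simp: ennreal_power intro!: nn_integral_cong)
  have 3: "(\<integral>\<^sup>+x. ennreal (v x) ^ 2 \<partial>M) = ennreal (integral\<^sup>L M (\<lambda>x. (v x)\<^sup>2))"
    using iv v0 by (subst nn_integral_eq_integral[symmetric]) (auto simp: ennreal_power intro!: nn_integral_cong)
  have p1: "0 \<le> integral\<^sup>L M (\<lambda>x. u x * v x)" using u0 v0 by (intro integral_nonneg_AE) auto
  have p2: "0 \<le> integral\<^sup>L M (\<lambda>x. (u x)\<^sup>2)" by (intro integral_nonneg_AE) auto
  have p3: "0 \<le> integral\<^sup>L M (\<lambda>x. (v x)\<^sup>2)" by (intro integral_nonneg_AE) auto
  from cs show "(integral\<^sup>L M (\<lambda>x. u x * v x))\<^sup>2 \<le> integral\<^sup>L M (\<lambda>x. (u x)\<^sup>2) * integral\<^sup>L M (\<lambda>x. (v x)\<^sup>2)"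
    unfolding 1 2 3 using p1 p2 p3
    by (simp add: ennreal_power ennreal_mult'[symmetric] ennreal_le_iff mult_nonneg_nonneg)
qed

definition mix :: "idx set \<Rightarrow> 'v set \<Rightarrow> ('v \<Rightarrow> idx \<Rightarrow> real) \<Rightarrow> (idx \<Rightarrow> real) \<Rightarrow> real" where
  "mix F V h \<omega> = (\<Sum>v\<in>V. LL F (h v) \<omega>) / real (card V)"

lemma mix_meas[measurable]: "mix F V h \<in> borel_measurable (BM \<nu>)"
  unfolding mix_def by measurable

lemma mix_pos: "finite V \<Longrightarrow> V \<noteq> {} \<Longrightarrow> 0 < mix F V h \<omega>"
  unfolding mix_def by (intro divide_pos_pos sum_pos) (auto simp: LL_pos card_gt_0_iff)

lemma integrable_mix: "finite F \<Longrightarrow> integrable B0 (mix F V h)"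
  unfolding mix_def by (intro integrable_divide_zero Bochner_Integration.integrable_sum integrable_LL(1))

lemma integral_mix: "finite F \<Longrightarrow> finite V \<Longrightarrow> V \<noteq> {} \<Longrightarrow> integral\<^sup>L B0 (mix F V h) = 1"
  unfolding mix_def by (simp add: integrable_LL Bochner_Integration.integral_sum card_gt_0_iff)

lemma admissible_sum:
  assumes V: "finite V" "V \<noteq> {}" and S: "S \<in> sets B0" and F: "finite F"
    and le: "\<And>v. v \<in> V \<Longrightarrow> integral\<^sup>L B0 (\<lambda>\<omega>. LL F (h v) \<omega> * indicator S \<omega>) \<le> c"
  shows "integral\<^sup>L B0 (\<lambda>\<omega>. mix F V h \<omega> * indicator S \<omega>) \<le> c"
proof -
  have i: "integrable B0 (\<lambda>\<omega>. LL F (h v) \<omega> * indicator S \<omega>)" for v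
    using S F by (intro integrable_real_mult_indicator integrable_LL(1)) auto
  have "integral\<^sup>L B0 (\<lambda>\<omega>. mix F V h \<omega> * indicator S \<omega>) = (\<Sum>v\<in>V. integral\<^sup>L B0 (\<lambda>\<omega>. LL F (h v) \<omega> * indicator S \<omega>)) / card V"
  proof -
    have "(\<lambda>\<omega>. mix F V h \<omega> * indicator S \<omega>) = (\<lambda>\<omega>. (\<Sum>v\<in>V. LL F (h v) \<omega> * indicator S \<omega>) / card V)"
      by (auto simp: mix_def sum_distrib_right)
    then show ?thesis by (simp add: Bochner_Integration.integral_sum[OF i])
  qed
  also have "\<dots> \<le> (\<Sum>v\<in>V. c) / card V"
    using le by (intro divide_right_mono sum_mono) auto
  also have "\<dots> = c" using V by simp
  finally show ?thesis .
qed

lemma admissible_sum_ge: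
  assumes V: "finite V" "V \<noteq> {}" and S: "S \<in> sets B0" and F: "finite F"
    and le: "\<And>v. v \<in> V \<Longrightarrow> c \<le> integral\<^sup>L B0 (\<lambda>\<omega>. LL F (h v) \<omega> * indicator S \<omega>)"
  shows "c \<le> integral\<^sup>L B0 (\<lambda>\<omega>. mix F V h \<omega> * indicator S \<omega>)"
proof -
  have i: "integrable B0 (\<lambda>\<omega>. LL F (h v) \<omega> * indicator S \<omega>)" for v
    using S F by (intro integrable_real_mult_indicator integrable_LL(1)) auto
  have "c = (\<Sum>v\<in>V. c) / card V" using V by simp
  also have "\<dots> \<le> (\<Sum>v\<in>V. integral\<^sup>L B0 (\<lambda>\<omega>. LL F (h v) \<omega> * indicator S \<omega>)) / card V"
    using le by (intro divide_right_mono sum_mono) auto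
  also have "\<dots> = integral\<^sup>L B0 (\<lambda>\<omega>. mix F V h \<omega> * indicator S \<omega>)"
  proof -
    have "(\<lambda>\<omega>. mix F V h \<omega> * indicator S \<omega>) = (\<lambda>\<omega>. (\<Sum>v\<in>V. LL F (h v) \<omega> * indicator S \<omega>) / card V)"
      by (auto simp: mix_def sum_distrib_right)
    then show ?thesis by (simp add: Bochner_Integration.integral_sum[OF i])
  qed
  finally show ?thesis .
qed

definition adm :: "real \<Rightarrow> (nat \<Rightarrow> real) \<Rightarrow> real \<Rightarrow> nat \<Rightarrow> (nat \<Rightarrow> real) \<Rightarrow> (nat \<Rightarrow> real) \<Rightarrow> bool" where
  "adm p a \<epsilon> T \<theta>1 \<theta>2 \<longleftrightarrow> \<theta>1 \<in> Gamma_set p a \<and> \<theta>2 \<in> Gamma_set p a \<and> \<epsilon> \<le> l2_dist \<theta>1 \<theta>2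
     \<and> (\<forall>t\<ge>T. \<theta>1 t = 0 \<and> \<theta>2 t = 0)"

lemma bridge:
  assumes good: "good_lfht_test p a \<epsilon> m n \<psi>" and n: "0 < n" and m: "0 < m"
    and V0: "finite V0" "V0 \<noteq> {}" and V1: "finite V1" "V1 \<noteq> {}"
    and A: "\<And>v. v \<in> V0 \<Longrightarrow> adm p a \<epsilon> T (A1 v) (A2 v)"
    and B: "\<And>v. v \<in> V1 \<Longrightarrow> adm p a \<epsilon> T (B1 v) (B2 v)"
  shows "1 \<le> integral\<^sup>L B0 (\<lambda>\<omega>. \<bar>mix (FF n m T) V0 (\<lambda>v. mu n m (A1 v) (A2 v) (A1 v)) \<omega>
                                 - mix (FF n m T) V1 (\<lambda>v. mu n m (B1 v) (B2 v) (B2 v)) \<omega>\<bar>)"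
proof -
  let ?F = "FF n m T"
  let ?f = "mix ?F V0 (\<lambda>v. mu n m (A1 v) (A2 v) (A1 v))"
  let ?g = "mix ?F V1 (\<lambda>v. mu n m (B1 v) (B2 v) (B2 v))"
  have psi: "\<psi> \<in> lfht_space n m \<rightarrow>\<^sub>M count_space {0, 1}" using good by (simp add: good_lfht_test_def)
  have S: "Sset n m \<psi> \<in> sets B0" by (rule Sset_meas[OF psi])
  have f: "integral\<^sup>L B0 (\<lambda>\<omega>. ?f \<omega> * indicator (Sset n m \<psi>) \<omega>) \<le> 1/4"
  proof (rule admissible_sum[OF V0 S finite_FF])
    fix v assume v: "v \<in> V0"
    have ad: "adm p a \<epsilon> T (A1 v) (A2 v)" by (rule A[OF v])
    then have "measure (lfht_law n m (A1 v) (A2 v) (A1 v)) {x \<in> space (lfht_law n m (A1 v) (A2 v) (A1 v)). \<psi> x \<noteq> 0} \<le> 1/4"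
      using good by (auto simp: good_lfht_test_def adm_def)
    then show "integral\<^sup>L B0 (\<lambda>\<omega>. LL ?F (mu n m (A1 v) (A2 v) (A1 v)) \<omega> * indicator (Sset n m \<psi>) \<omega>) \<le> 1/4"
      using ad by (subst (asm) prob_eq(1)[OF n m psi, where T=T]) (auto simp: adm_def)
  qed
  have g: "3/4 \<le> integral\<^sup>L B0 (\<lambda>\<omega>. ?g \<omega> * indicator (Sset n m \<psi>) \<omega>)"
  proof (rule admissible_sum_ge[OF V1 S finite_FF])
    fix v assume v: "v \<in> V1"
    have ad: "adm p a \<epsilon> T (B1 v) (B2 v)" by (rule B[OF v])
    then have "measure (lfht_law n m (B1 v) (B2 v) (B2 v)) {x \<in> space (lfht_law n m (B1 v) (B2 v) (B2 v)). \<psi> x \<noteq> 1} \<le> 1/4"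
      using good by (auto simp: good_lfht_test_def adm_def)
    then show "3/4 \<le> integral\<^sup>L B0 (\<lambda>\<omega>. LL ?F (mu n m (B1 v) (B2 v) (B2 v)) \<omega> * indicator (Sset n m \<psi>) \<omega>)"
      using ad by (subst (asm) prob_eq(2)[OF n m psi, where T=T]) (auto simp: adm_def)
  qed
  have "integral\<^sup>L B0 (\<lambda>\<omega>. ?g \<omega> * indicator (Sset n m \<psi>) \<omega>) - integral\<^sup>L B0 (\<lambda>\<omega>. ?f \<omega> * indicator (Sset n m \<psi>) \<omega>)
      \<le> integral\<^sup>L B0 (\<lambda>\<omega>. \<bar>?f \<omega> - ?g \<omega>\<bar>) / 2"
    by (rule tv_bound[OF integrable_mix integrable_mix _ S])
       (simp_all add: integral_mix V0 V1)
  with f g show ?thesis by simp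
qed


lemma sqrt_exp: "sqrt (exp x) = exp (x / 2)"
proof (rule real_sqrt_unique)
  show "(exp (x / 2))\<^sup>2 = exp x" by (simp add: power2_eq_square exp_add[symmetric])
qed simp

lemma LL_mult: "LL F \<mu> \<omega> * LL F \<nu> \<omega> = exp (\<Sum>k\<in>F. \<mu> k * \<nu> k) * LL F (\<lambda>k. \<mu> k + \<nu> k) \<omega>"
proof -
  have p: "(\<mu> k * \<omega> k - (\<mu> k)\<^sup>2 / 2) + (\<nu> k * \<omega> k - (\<nu> k)\<^sup>2 / 2)
      = \<mu> k * \<nu> k + ((\<mu> k + \<nu> k) * \<omega> k - (\<mu> k + \<nu> k)\<^sup>2 / 2)" for k
    by (simp add: power2_eq_square field_simps)
  have "(\<Sum>k\<in>F. \<mu> k * \<omega> k - (\<mu> k)\<^sup>2 / 2) + (\<Sum>k\<in>F. \<nu> k * \<omega> k - (\<nu> k)\<^sup>2 / 2)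
      = (\<Sum>k\<in>F. \<mu> k * \<nu> k) + (\<Sum>k\<in>F. (\<mu> k + \<nu> k) * \<omega> k - (\<mu> k + \<nu> k)\<^sup>2 / 2)"
    by (simp only: sum.distrib[symmetric] p)
  then show ?thesis unfolding LL_def by (simp add: exp_add[symmetric])
qed

lemma LL_sqrt: "sqrt (LL F \<mu> \<omega> * LL F \<nu> \<omega>) = exp (- (\<Sum>k\<in>F. (\<mu> k - \<nu> k)\<^sup>2) / 8) * LL F (\<lambda>k. (\<mu> k + \<nu> k) / 2) \<omega>"
proof -
  have p: "((\<mu> k * \<omega> k - (\<mu> k)\<^sup>2 / 2) + (\<nu> k * \<omega> k - (\<nu> k)\<^sup>2 / 2)) / 2
      = - (\<mu> k - \<nu> k)\<^sup>2 / 8 + ((\<mu> k + \<nu> k) / 2 * \<omega> k - ((\<mu> k + \<nu> k) / 2)\<^sup>2 / 2)" for k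
    by (simp add: power2_eq_square field_simps)
  have "((\<Sum>k\<in>F. \<mu> k * \<omega> k - (\<mu> k)\<^sup>2 / 2) + (\<Sum>k\<in>F. \<nu> k * \<omega> k - (\<nu> k)\<^sup>2 / 2)) / 2
      = (\<Sum>k\<in>F. ((\<mu> k * \<omega> k - (\<mu> k)\<^sup>2 / 2) + (\<nu> k * \<omega> k - (\<nu> k)\<^sup>2 / 2)) / 2)"
    by (simp add: sum.distrib[symmetric] sum_divide_distrib[symmetric])
  also have "\<dots> = (\<Sum>k\<in>F. - (\<mu> k - \<nu> k)\<^sup>2 / 8) + (\<Sum>k\<in>F. (\<mu> k + \<nu> k) / 2 * \<omega> k - ((\<mu> k + \<nu> k) / 2)\<^sup>2 / 2)"
    by (simp only: p sum.distrib)
  also have "(\<Sum>k\<in>F. - (\<mu> k - \<nu> k)\<^sup>2 / 8) = - (\<Sum>k\<in>F. (\<mu> k - \<nu> k)\<^sup>2) / 8"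
    by (simp add: sum_divide_distrib sum_negf)
  finally have e: "((\<Sum>k\<in>F. \<mu> k * \<omega> k - (\<mu> k)\<^sup>2 / 2) + (\<Sum>k\<in>F. \<nu> k * \<omega> k - (\<nu> k)\<^sup>2 / 2)) / 2
      = - (\<Sum>k\<in>F. (\<mu> k - \<nu> k)\<^sup>2) / 8 + (\<Sum>k\<in>F. (\<mu> k + \<nu> k) / 2 * \<omega> k - ((\<mu> k + \<nu> k) / 2)\<^sup>2 / 2)" .
  have "sqrt (LL F \<mu> \<omega> * LL F \<nu> \<omega>) = exp (((\<Sum>k\<in>F. \<mu> k * \<omega> k - (\<mu> k)\<^sup>2 / 2) + (\<Sum>k\<in>F. \<nu> k * \<omega> k - (\<nu> k)\<^sup>2 / 2)) / 2)"
    unfolding LL_def exp_add[symmetric] by (rule sqrt_exp)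
  also have "\<dots> = exp (- (\<Sum>k\<in>F. (\<mu> k - \<nu> k)\<^sup>2) / 8) * LL F (\<lambda>k. (\<mu> k + \<nu> k) / 2) \<omega>"
    unfolding e LL_def by (rule exp_add)
  finally show ?thesis .
qed

lemma integrable_LL2: "finite F \<Longrightarrow> integrable B0 (\<lambda>\<omega>. LL F \<mu> \<omega> * LL F \<nu> \<omega>)"
  unfolding LL_mult by (intro integrable_mult_right integrable_LL(1))

lemma integral_LL2: "finite F \<Longrightarrow> integral\<^sup>L B0 (\<lambda>\<omega>. LL F \<mu> \<omega> * LL F \<nu> \<omega>) = exp (\<Sum>k\<in>F. \<mu> k * \<nu> k)"
  unfolding LL_mult by (simp add: integrable_LL)

lemma hellinger:
  assumes F: "finite F"
  shows "integral\<^sup>L B0 (\<lambda>\<omega>. \<bar>LL F \<mu> \<omega> - LL F \<nu> \<omega>\<bar>) \<le> 2 * sqrt (1 - (exp (- (\<Sum>k\<in>F. (\<mu> k - \<nu> k)\<^sup>2) / 8))\<^sup>2)"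
proof -
  let ?f = "LL F \<mu>" and ?g = "LL F \<nu>"
  define c where "c = exp (- (\<Sum>k\<in>F. (\<mu> k - \<nu> k)\<^sup>2) / 8)"
  let ?h = "\<lambda>\<omega>. sqrt (?f \<omega> * ?g \<omega>)"
  have h: "?h \<omega> = c * LL F (\<lambda>k. (\<mu> k + \<nu> k) / 2) \<omega>" for \<omega> unfolding c_def by (rule LL_sqrt)
  have ih: "integrable B0 ?h" unfolding h by (intro integrable_mult_right integrable_LL(1)[OF F])
  have Ih: "integral\<^sup>L B0 ?h = c" unfolding h by (simp add: integrable_LL[OF F])
  have f0: "0 \<le> ?f \<omega>" "0 \<le> ?g \<omega>" for \<omega> by (simp_all add: LL_pos less_imp_le)
  define u where "u \<omega> = \<bar>sqrt (?f \<omega>) - sqrt (?g \<omega>)\<bar>" for \<omega>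
  define v where "v \<omega> = sqrt (?f \<omega>) + sqrt (?g \<omega>)" for \<omega>
  have u2: "(u \<omega>)\<^sup>2 = ?f \<omega> + ?g \<omega> - 2 * ?h \<omega>" for \<omega>
    unfolding u_def using f0[of \<omega>] by (simp add: power2_eq_square algebra_simps real_sqrt_mult)
  have v2: "(v \<omega>)\<^sup>2 = ?f \<omega> + ?g \<omega> + 2 * ?h \<omega>" for \<omega>
    unfolding v_def using f0[of \<omega>] by (simp add: power2_eq_square algebra_simps real_sqrt_mult)
  have uv: "\<bar>?f \<omega> - ?g \<omega>\<bar> = u \<omega> * v \<omega>" for \<omega>
  proof -
    have "?f \<omega> - ?g \<omega> = (sqrt (?f \<omega>) - sqrt (?g \<omega>)) * (sqrt (?f \<omega>) + sqrt (?g \<omega>))"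
      using f0[of \<omega>] by (simp add: algebra_simps)
    then show ?thesis unfolding u_def v_def using f0[of \<omega>] by (simp add: abs_mult)
  qed
  have iu: "integrable B0 (\<lambda>\<omega>. (u \<omega>)\<^sup>2)" unfolding u2
    using ih integrable_LL(1)[OF F] by (intro Bochner_Integration.integrable_diff Bochner_Integration.integrable_add integrable_mult_right) auto
  have iv: "integrable B0 (\<lambda>\<omega>. (v \<omega>)\<^sup>2)" unfolding v2
    using ih integrable_LL(1)[OF F] by (intro Bochner_Integration.integrable_diff Bochner_Integration.integrable_add integrable_mult_right) auto
  have Iu: "integral\<^sup>L B0 (\<lambda>\<omega>. (u \<omega>)\<^sup>2) = 2 - 2 * c" unfolding u2
    using ih integrable_LL[OF F] Ih by (simp add: Bochner_Integration.integral_diff Bochner_Integration.integral_add)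
  have Iv: "integral\<^sup>L B0 (\<lambda>\<omega>. (v \<omega>)\<^sup>2) = 2 + 2 * c" unfolding v2
    using ih integrable_LL[OF F] Ih by (simp add: Bochner_Integration.integral_diff Bochner_Integration.integral_add)
  have um: "u \<in> borel_measurable B0" unfolding u_def by measurable
  have vm: "v \<in> borel_measurable B0" unfolding v_def by measurable
  have cs: "(integral\<^sup>L B0 (\<lambda>\<omega>. u \<omega> * v \<omega>))\<^sup>2 \<le> (2 - 2 * c) * (2 + 2 * c)"
  proof -
    have v0: "0 \<le> v \<omega>" for \<omega> unfolding v_def using f0[of \<omega>] by simp
    have u0: "0 \<le> u \<omega>" for \<omega> unfolding u_def by simp
    show ?thesis using CS_real(2)[OF um vm u0 v0 iu iv] unfolding Iu Iv .
  qed
  have "integral\<^sup>L B0 (\<lambda>\<omega>. \<bar>?f \<omega> - ?g \<omega>\<bar>) = integral\<^sup>L B0 (\<lambda>\<omega>. u \<omega> * v \<omega>)" by (simp add: uv)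
  also have "\<dots> \<le> sqrt ((2 - 2 * c) * (2 + 2 * c))"
    using cs by (simp add: real_le_rsqrt)
  also have "(2 - 2 * c) * (2 + 2 * c) = 4 * (1 - c\<^sup>2)" by (simp add: algebra_simps power2_eq_square)
  also have "sqrt (4 * (1 - c\<^sup>2)) = 2 * sqrt (1 - c\<^sup>2)" by (simp only: real_sqrt_mult, simp)
  finally show ?thesis unfolding c_def .
qed


lemma sum_if_lt: "n \<le> N \<Longrightarrow> (\<Sum>i<N. if i < n then x else 0) = real n * (x::real)"
proof -
  assume "n \<le> N"
  then have "{..<N} \<inter> {i. i < n} = {..<n}" by auto
  then show ?thesis by (simp add: sum.If_cases)
qed

lemma sum_FF: "(\<Sum>k\<in>FF n m T. h k) = (\<Sum>c<3. \<Sum>i<max n m. \<Sum>t<T. h (c, i, t))"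
  by (simp add: FF_def sum.cartesian_product)

lemma ip_mu: "(\<Sum>k\<in>FF n m T. mu n m a1 a2 a3 k * mu n m b1 b2 b3 k) =
   (\<Sum>t<T. real n * (a1 t * b1 t) + real n * (a2 t * b2 t) + real m * (a3 t * b3 t))"
proof -
  have c0: "(\<Sum>i<max n m. \<Sum>t<T. mu n m a1 a2 a3 (0, i, t) * mu n m b1 b2 b3 (0, i, t)) = (\<Sum>t<T. real n * (a1 t * b1 t))"
    by (subst sum.swap) (simp add: mu_def if_distrib[where f="\<lambda>x. x * _"] cong: if_cong, simp add: sum_if_lt)
  have c1: "(\<Sum>i<max n m. \<Sum>t<T. mu n m a1 a2 a3 (1, i, t) * mu n m b1 b2 b3 (1, i, t)) = (\<Sum>t<T. real n * (a2 t * b2 t))"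
    by (subst sum.swap) (simp add: mu_def if_distrib[where f="\<lambda>x. x * _"] cong: if_cong, simp add: sum_if_lt)
  have c2: "(\<Sum>i<max n m. \<Sum>t<T. mu n m a1 a2 a3 (2, i, t) * mu n m b1 b2 b3 (2, i, t)) = (\<Sum>t<T. real m * (a3 t * b3 t))"
    by (subst sum.swap) (simp add: mu_def if_distrib[where f="\<lambda>x. x * _"] cong: if_cong, simp add: sum_if_lt)
  have l3: "{..<3::nat} = {0, 1, 2}" by auto
  show ?thesis unfolding sum_FF l3
    by (simp add: c0 c1 c1[unfolded One_nat_def] c2 sum.distrib)
qed

lemma mu_diff: "mu n m a1 a2 a3 k - mu n m b1 b2 b3 k = mu n m (\<lambda>t. a1 t - b1 t) (\<lambda>t. a2 t - b2 t) (\<lambda>t. a3 t - b3 t) k"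
  by (cases k) (simp add: mu_def)

lemma norm_mu_diff: "(\<Sum>k\<in>FF n m T. (mu n m a1 a2 a3 k - mu n m b1 b2 b3 k)\<^sup>2) =
   (\<Sum>t<T. real n * (a1 t - b1 t)\<^sup>2 + real n * (a2 t - b2 t)\<^sup>2 + real m * (a3 t - b3 t)\<^sup>2)"
  unfolding mu_diff power2_eq_square ip_mu ..

lemma gamma_term_le1:
  assumes "\<theta> \<in> Gamma_set p a"
  shows "\<bar>\<theta> t\<bar> powr p / a t powr p \<le> 1"
proof -
  have sm: "summable (\<lambda>t. \<bar>\<theta> t\<bar> powr p / a t powr p)" and le: "(\<Sum>t. \<bar>\<theta> t\<bar> powr p / a t powr p) \<le> 1"
    using assms by (auto simp: Gamma_set_def)
  have "(\<Sum>t\<in>{t}. \<bar>\<theta> t\<bar> powr p / a t powr p) \<le> (\<Sum>t. \<bar>\<theta> t\<bar> powr p / a t powr p)"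
    by (rule sum_le_suminf[OF sm]) auto
  with le show ?thesis by simp
qed

lemma gamma_sq:
  assumes p: "1 \<le> p" "p \<le> 2" and dec: "decseq a" and apos: "\<forall>t. 0 < a t" and th: "\<theta> \<in> Gamma_set p a"
  shows "(\<theta> t)\<^sup>2 \<le> (a 0)\<^sup>2 * (\<bar>\<theta> t\<bar> powr p / a t powr p)"
proof -
  define x where "x = \<bar>\<theta> t\<bar> / a t"
  have at: "0 < a t" using apos by auto
  have x0: "0 \<le> x" unfolding x_def using at by simp
  have xp: "x powr p = \<bar>\<theta> t\<bar> powr p / a t powr p" unfolding x_def by (rule powr_divide)
  have x1: "x \<le> 1"
  proof (rule ccontr)
    assume "\<not> x \<le> 1"
    then have "1 < x" by simp
    then have "1 < x powr p" using p by (intro gr_one_powr) auto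
    with gamma_term_le1[OF th, of t] xp show False by simp
  qed
  have "x\<^sup>2 = x powr 2" using x0 by simp
  also have "\<dots> \<le> x powr p" using p x0 x1 by (intro powr_mono') auto
  finally have x2: "x\<^sup>2 \<le> x powr p" .
  have "(\<theta> t)\<^sup>2 = (a t)\<^sup>2 * x\<^sup>2" unfolding x_def using at by (simp add: power2_eq_square field_simps)
  also have "\<dots> \<le> (a t)\<^sup>2 * x powr p" using x2 by (intro mult_left_mono) auto
  also have "\<dots> \<le> (a 0)\<^sup>2 * x powr p"
    using dec at by (intro mult_right_mono power_mono) (auto simp: decseq_def)
  finally show ?thesis unfolding xp .
qed

lemma gamma_l2:
  assumes p: "1 \<le> p" "p \<le> 2" and dec: "decseq a" and apos: "\<forall>t. 0 < a t" and th: "\<theta> \<in> Gamma_set p a"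
  shows "summable (\<lambda>t. (\<theta> t)\<^sup>2)" and "(\<Sum>t. (\<theta> t)\<^sup>2) \<le> (a 0)\<^sup>2"
proof -
  have sm: "summable (\<lambda>t. \<bar>\<theta> t\<bar> powr p / a t powr p)" and le: "(\<Sum>t. \<bar>\<theta> t\<bar> powr p / a t powr p) \<le> 1"
    using th by (auto simp: Gamma_set_def)
  have sm2: "summable (\<lambda>t. (a 0)\<^sup>2 * (\<bar>\<theta> t\<bar> powr p / a t powr p))" by (rule summable_mult[OF sm])
  show s: "summable (\<lambda>t. (\<theta> t)\<^sup>2)"
    by (rule summable_comparison_test'[OF sm2]) (use gamma_sq[OF p dec apos th] in auto)
  have "(\<Sum>t. (\<theta> t)\<^sup>2) \<le> (\<Sum>t. (a 0)\<^sup>2 * (\<bar>\<theta> t\<bar> powr p / a t powr p))"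
    by (rule suminf_le[OF _ s sm2]) (rule gamma_sq[OF p dec apos th])
  also have "\<dots> = (a 0)\<^sup>2 * (\<Sum>t. \<bar>\<theta> t\<bar> powr p / a t powr p)" by (rule suminf_mult[OF sm])
  also have "\<dots> \<le> (a 0)\<^sup>2 * 1" using le by (intro mult_left_mono) auto
  finally show "(\<Sum>t. (\<theta> t)\<^sup>2) \<le> (a 0)\<^sup>2" by simp
qed

lemma dist_le:
  assumes p: "1 \<le> p" "p \<le> 2" and dec: "decseq a" and apos: "\<forall>t. 0 < a t"
    and t1: "\<theta>1 \<in> Gamma_set p a" and t2: "\<theta>2 \<in> Gamma_set p a"
  shows "l2_dist \<theta>1 \<theta>2 \<le> 2 * a 0"
proof -
  have s1: "summable (\<lambda>t. (\<theta>1 t)\<^sup>2)" and l1: "(\<Sum>t. (\<theta>1 t)\<^sup>2) \<le> (a 0)\<^sup>2"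
    using gamma_l2[OF p dec apos t1] by auto
  have s2: "summable (\<lambda>t. (\<theta>2 t)\<^sup>2)" and l2: "(\<Sum>t. (\<theta>2 t)\<^sup>2) \<le> (a 0)\<^sup>2"
    using gamma_l2[OF p dec apos t2] by auto
  have b: "(\<theta>1 t - \<theta>2 t)\<^sup>2 \<le> 2 * (\<theta>1 t)\<^sup>2 + 2 * (\<theta>2 t)\<^sup>2" for t
  proof -
    have "0 \<le> (\<theta>1 t + \<theta>2 t)\<^sup>2" by simp
    then show ?thesis by (simp add: power2_eq_square algebra_simps)
  qed
  have s3: "summable (\<lambda>t. 2 * (\<theta>1 t)\<^sup>2 + 2 * (\<theta>2 t)\<^sup>2)"
    using s1 s2 by (intro summable_add summable_mult)
  have s4: "summable (\<lambda>t. (\<theta>1 t - \<theta>2 t)\<^sup>2)"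
    by (rule summable_comparison_test'[OF s3]) (use b in auto)
  have "(\<Sum>t. (\<theta>1 t - \<theta>2 t)\<^sup>2) \<le> (\<Sum>t. 2 * (\<theta>1 t)\<^sup>2 + 2 * (\<theta>2 t)\<^sup>2)"
    by (rule suminf_le[OF b s4 s3])
  also have "\<dots> = 2 * (\<Sum>t. (\<theta>1 t)\<^sup>2) + 2 * (\<Sum>t. (\<theta>2 t)\<^sup>2)"
    using s1 s2 by (simp add: suminf_add[symmetric] suminf_mult summable_mult)
  also have "\<dots> \<le> (2 * a 0)\<^sup>2" using l1 l2 by (simp add: power2_eq_square)
  finally have "(\<Sum>t. (\<theta>1 t - \<theta>2 t)\<^sup>2) \<le> (2 * a 0)\<^sup>2" .
  then have "l2_dist \<theta>1 \<theta>2 \<le> sqrt ((2 * a 0)\<^sup>2)" unfolding l2_dist_def by (rule real_sqrt_le_mono)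
  also have "\<dots> = 2 * a 0" by (rule real_sqrt_unique) (use apos in \<open>auto simp: less_imp_le\<close>)
  finally show ?thesis .
qed

lemma gamma_finite:
  assumes z: "\<And>t. T \<le> t \<Longrightarrow> \<theta> t = 0" and le: "(\<Sum>t<T. \<bar>\<theta> t\<bar> powr p / a t powr p) \<le> 1"
  shows "\<theta> \<in> Gamma_set p a"
proof -
  have z': "\<And>t. t \<notin> {..<T} \<Longrightarrow> \<bar>\<theta> t\<bar> powr p / a t powr p = 0" using z by auto
  show ?thesis unfolding Gamma_set_def
    using summable_finite[of "{..<T}" "\<lambda>t. \<bar>\<theta> t\<bar> powr p / a t powr p", OF _ z']
      suminf_finite[of "{..<T}" "\<lambda>t. \<bar>\<theta> t\<bar> powr p / a t powr p", OF _ z'] le by auto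
qed

lemma l2_finite:
  assumes z: "\<And>t. T \<le> t \<Longrightarrow> x t = 0 \<and> y t = 0"
  shows "l2_dist x y = sqrt (\<Sum>t<T. (x t - y t)\<^sup>2)"
proof -
  have z': "\<And>t. t \<notin> {..<T} \<Longrightarrow> (x t - y t)\<^sup>2 = 0" using z by auto
  show ?thesis unfolding l2_dist_def using suminf_finite[of "{..<T}" "\<lambda>t. (x t - y t)\<^sup>2", OF _ z'] by simp
qed


lemma mix_single: "mix F {x} h = LL F (h x)"
  by (simp add: mix_def fun_eq_iff)

lemma simple_bound:
  assumes good: "good_lfht_test p a \<epsilon> m n \<psi>" and n: "0 < n" and m: "0 < m"
    and A: "adm p a \<epsilon> T A1 A2" and B: "adm p a \<epsilon> T B1 B2"
  shows "1 \<le> (\<Sum>t<T. real n * (A1 t - B1 t)\<^sup>2 + real n * (A2 t - B2 t)\<^sup>2 + real m * (A1 t - B2 t)\<^sup>2)"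
proof (rule ccontr)
  let ?D = "\<Sum>t<T. real n * (A1 t - B1 t)\<^sup>2 + real n * (A2 t - B2 t)\<^sup>2 + real m * (A1 t - B2 t)\<^sup>2"
  assume "\<not> 1 \<le> ?D"
  then have D1: "?D < 1" by simp
  have b: "1 \<le> integral\<^sup>L B0 (\<lambda>\<omega>. \<bar>mix (FF n m T) {()} (\<lambda>v. mu n m A1 A2 A1) \<omega>
                                 - mix (FF n m T) {()} (\<lambda>v. mu n m B1 B2 B2) \<omega>\<bar>)"
    by (rule bridge[OF good n m]) (use A B in auto)
  also have "\<dots> \<le> 2 * sqrt (1 - (exp (- (\<Sum>k\<in>FF n m T. (mu n m A1 A2 A1 k - mu n m B1 B2 B2 k)\<^sup>2) / 8))\<^sup>2)"
    unfolding mix_single by (rule hellinger) simp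
  also have "(\<Sum>k\<in>FF n m T. (mu n m A1 A2 A1 k - mu n m B1 B2 B2 k)\<^sup>2) = ?D"
    by (rule norm_mu_diff)
  also have "(exp (- ?D / 8))\<^sup>2 = exp (- ?D / 4)"
    by (simp add: power2_eq_square exp_add[symmetric])
  finally have c: "1 \<le> 2 * sqrt (1 - exp (- ?D / 4))" .
  have "3 / 4 \<le> exp (- 1 / 4 :: real)"
    using exp_ge_add_one_self[of "- 1 / 4 :: real"] by simp
  also have "exp (- 1 / 4 :: real) < exp (- ?D / 4)" using D1 by simp
  finally have "1 - exp (- ?D / 4) < 1 / 4" by simp
  then have "sqrt (1 - exp (- ?D / 4)) < sqrt (1 / 4)" by (rule real_sqrt_less_mono)
  also have "sqrt (1 / 4 :: real) = 1 / 2" by (rule real_sqrt_unique) (auto simp: power2_eq_square)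
  finally show False using c by simp
qed

lemma eps_le_a0:
  assumes p: "1 \<le> p" "p \<le> 2" and dec: "decseq a" and apos: "\<forall>t. 0 < a t"
    and ex: "\<exists>\<theta>1\<in>Gamma_set p a. \<exists>\<theta>2\<in>Gamma_set p a. l2_dist \<theta>1 \<theta>2 \<ge> \<epsilon>"
  shows "\<epsilon> \<le> 2 * a 0"
  using ex dist_le[OF p dec apos] by force

definition spike :: "real \<Rightarrow> nat \<Rightarrow> real" where
  "spike x t = (if t = 0 then x else 0)"

lemma spike_gamma:
  assumes p: "1 \<le> p" and apos: "\<forall>t. 0 < a t" and x: "\<bar>x\<bar> \<le> a 0"
  shows "spike x \<in> Gamma_set p a"
proof (rule gamma_finite[where T=1])
  show "\<And>t. 1 \<le> t \<Longrightarrow> spike x t = 0" by (simp add: spike_def)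
  have a0: "0 < a 0" using apos by simp
  have "\<bar>x\<bar> powr p \<le> a 0 powr p" using x p by (intro powr_mono2) auto
  moreover have "0 < a 0 powr p" using a0 by simp
  ultimately show "(\<Sum>t<1. \<bar>spike x t\<bar> powr p / a t powr p) \<le> 1"
    by (simp add: spike_def)
qed

lemma part1:
  assumes p: "1 \<le> p" "p \<le> 2" and dec: "decseq a" and apos: "\<forall>t. 0 < a t"
    and eps: "0 < \<epsilon>" and n: "0 < n" and m: "0 < m"
    and ex: "\<exists>\<theta>1\<in>Gamma_set p a. \<exists>\<theta>2\<in>Gamma_set p a. l2_dist \<theta>1 \<theta>2 \<ge> \<epsilon>"
    and good: "good_lfht_test p a \<epsilon> m n \<psi>"
  shows "1 \<le> real m * \<epsilon>\<^sup>2" and "1 \<le> 2 * (real n * \<epsilon>\<^sup>2)"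
proof -
  have e2: "\<epsilon> / 2 \<le> a 0" using eps_le_a0[OF p dec apos ex] by simp
  let ?u = "spike (- \<epsilon> / 2)" and ?w = "spike (\<epsilon> / 2)"
  have gu: "?u \<in> Gamma_set p a" by (rule spike_gamma[OF p(1) apos]) (use e2 eps in auto)
  have gw: "?w \<in> Gamma_set p a" by (rule spike_gamma[OF p(1) apos]) (use e2 eps in auto)
  have d: "l2_dist ?u ?w = \<epsilon>" "l2_dist ?w ?u = \<epsilon>"
    using eps by (subst l2_finite[where T=1], simp add: spike_def, simp add: spike_def)+
  have a1: "adm p a \<epsilon> 1 ?u ?w" using gu gw d by (simp add: adm_def spike_def)
  have a2: "adm p a \<epsilon> 1 ?w ?u" using gu gw d by (simp add: adm_def spike_def)
  show "1 \<le> real m * \<epsilon>\<^sup>2"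
    using simple_bound[OF good n m a1 a1] by (simp add: spike_def power2_eq_square algebra_simps)
  show "1 \<le> 2 * (real n * \<epsilon>\<^sup>2)"
    using simple_bound[OF good n m a1 a2] by (simp add: spike_def power2_eq_square algebra_simps)
qed


lemma sum_PiE_prod:
  fixes f :: "'i \<Rightarrow> 'a \<Rightarrow> real"
  assumes I: "finite I" and A: "\<And>i. i \<in> I \<Longrightarrow> finite (A i)"
  shows "(\<Sum>v\<in>PiE I A. \<Prod>i\<in>I. f i (v i)) = (\<Prod>i\<in>I. \<Sum>a\<in>A i. f i a)"
proof -
  have fin: "finite (PiE I A)" using I A by (simp add: finite_PiE)
  have "(\<Sum>v\<in>PiE I A. \<Prod>i\<in>I. f i (v i)) = infsum (\<lambda>v. \<Prod>i\<in>I. f i (v i)) (PiE I A)"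
    using fin by simp
  also have "\<dots> = (\<Prod>i\<in>I. infsum (f i) (A i))"
    by (rule infsum_prod_PiE[OF I]) (use A fin in auto)
  also have "\<dots> = (\<Prod>i\<in>I. \<Sum>a\<in>A i. f i a)"
    using A by (intro prod.cong) auto
  finally show ?thesis .
qed

lemma sum_shift_ivl:
  fixes c k :: nat and h :: "nat \<Rightarrow> 'a::comm_monoid_add"
  shows "sum h {c..<c + k} = (\<Sum>j<k. h (c + j))"
  by (induct k) (simp_all add: add.commute)

lemma sum_blocks:
  fixes s k :: nat and h :: "nat \<Rightarrow> 'a::comm_monoid_add"
  shows "(\<Sum>t<s * k. h t) = (\<Sum>b<s. \<Sum>j<k. h (b * k + j))"
proof -
  have "(\<Sum>t<s * k. h t) = (\<Sum>b<s. sum h {b * k ..< b * k + k})"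
    by (rule sum.nat_group[symmetric])
  also have "\<dots> = (\<Sum>b<s. \<Sum>j<k. h (b * k + j))"
    by (simp only: sum_shift_ivl)
  finally show ?thesis .
qed

definition CH :: "nat \<Rightarrow> (nat \<times> real) set" where
  "CH k = {..<k} \<times> {-1, 1}"

lemma finite_CH[simp]: "finite (CH k)" by (simp add: CH_def)
lemma card_CH: "card (CH k) = 2 * k" by (simp add: CH_def card_cartesian_product)

definition eb :: "nat \<Rightarrow> real \<Rightarrow> nat \<Rightarrow> nat \<times> real \<Rightarrow> nat \<Rightarrow> real" where
  "eb k \<rho> b a t = (if t = b * k + fst a then snd a * \<rho> else 0)"

definition eta :: "nat \<Rightarrow> real \<Rightarrow> nat \<Rightarrow> (nat \<Rightarrow> nat \<times> real) \<Rightarrow> nat \<Rightarrow> real" where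
  "eta k \<rho> s v t = (\<Sum>b<s. eb k \<rho> b (v b) t)"

definition CV :: "nat \<Rightarrow> nat \<Rightarrow> (nat \<Rightarrow> nat \<times> real) set" where
  "CV s k = PiE {..<s} (\<lambda>_. CH k)"

lemma finite_CV[simp]: "finite (CV s k)" by (simp add: CV_def finite_PiE)

lemma CV_ne: "0 < k \<Longrightarrow> CV s k \<noteq> {}"
  unfolding CV_def by (auto simp: PiE_eq_empty_iff CH_def)

lemma blk_eq: fixes j k b b' :: nat shows "j < k \<Longrightarrow> j' < k \<Longrightarrow> (b * k + j = b' * k + j') \<longleftrightarrow> (b = b' \<and> j = j')"
proof
  assume jk: "j < k" "j' < k" and e: "b * k + j = b' * k + j'"
  have "(b * k + j) div k = b" "(b' * k + j') div k = b'" using jk by auto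
  with e have "b = b'" by simp
  with e show "b = b' \<and> j = j'" by simp
qed simp

lemma CV_D:
  assumes "v \<in> CV s k" "b < s"
  shows "fst (v b) < k" "snd (v b) \<in> {-1, 1}"
proof -
  have "v b \<in> CH k" using assms by (auto simp: CV_def PiE_iff)
  then show "fst (v b) < k" "snd (v b) \<in> {-1, 1}" by (auto simp: CH_def mem_Times_iff)
qed

lemma eb_zero: "v \<in> CV s k \<Longrightarrow> b < s \<Longrightarrow> s * k \<le> t \<Longrightarrow> eb k \<rho> b (v b) t = 0"
proof -
  assume v: "v \<in> CV s k" and b: "b < s" and t: "s * k \<le> t"
  have "fst (v b) < k" using CV_D[OF v b] by simp
  moreover have "b * k + k \<le> s * k" using b by (metis Suc_leI add.commute mult_Suc mult_le_mono1)
  ultimately show ?thesis using t by (auto simp: eb_def)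
qed

lemma eta_zero: "v \<in> CV s k \<Longrightarrow> s * k \<le> t \<Longrightarrow> eta k \<rho> s v t = 0"
  unfolding eta_def using eb_zero by (auto intro!: sum.neutral)

lemma eta_at:
  assumes v: "v \<in> CV s k" and b: "b < s" and j: "j < k"
  shows "eta k \<rho> s v (b * k + j) = (if j = fst (v b) then snd (v b) * \<rho> else 0)"
proof -
  have vk: "\<And>b'. b' < s \<Longrightarrow> fst (v b') < k" using CV_D[OF v] by simp
  have "eta k \<rho> s v (b * k + j) = (\<Sum>b'<s. if b' = b then (if j = fst (v b) then snd (v b) * \<rho> else 0) else 0)"
    unfolding eta_def
  proof (intro sum.cong refl)
    fix b' assume b': "b' \<in> {..<s}"
    show "eb k \<rho> b' (v b') (b * k + j) = (if b' = b then (if j = fst (v b) then snd (v b) * \<rho> else 0) else 0)"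
      using blk_eq[OF j vk[of b'], of b b'] b' by (auto simp: eb_def)
  qed
  also have "\<dots> = (if j = fst (v b) then snd (v b) * \<rho> else 0)" using b by simp
  finally show ?thesis .
qed

lemma eta_ip:
  assumes v: "v \<in> CV s k" and w: "w \<in> CV s k"
  shows "(\<Sum>t<s * k. eta k \<rho> s v t * eta k \<rho> s w t) =
    (\<Sum>b<s. if fst (v b) = fst (w b) then snd (v b) * snd (w b) * \<rho>\<^sup>2 else 0)"
proof -
  have "(\<Sum>t<s * k. eta k \<rho> s v t * eta k \<rho> s w t) = (\<Sum>b<s. \<Sum>j<k. eta k \<rho> s v (b * k + j) * eta k \<rho> s w (b * k + j))"
    by (rule sum_blocks)
  also have "\<dots> = (\<Sum>b<s. \<Sum>j<k. if j = fst (v b) then (if fst (v b) = fst (w b) then snd (v b) * snd (w b) * \<rho>\<^sup>2 else 0) else 0)"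
    by (intro sum.cong refl) (auto simp: eta_at[OF v] eta_at[OF w] power2_eq_square)
  also have "\<dots> = (\<Sum>b<s. if fst (v b) = fst (w b) then snd (v b) * snd (w b) * \<rho>\<^sup>2 else 0)"
  proof (intro sum.cong refl)
    fix b assume b: "b \<in> {..<s}"
    have "fst (v b) < k" using CV_D[OF v] b by simp
    then show "(\<Sum>j<k. if j = fst (v b) then (if fst (v b) = fst (w b) then snd (v b) * snd (w b) * \<rho>\<^sup>2 else 0) else 0)
        = (if fst (v b) = fst (w b) then snd (v b) * snd (w b) * \<rho>\<^sup>2 else 0)"
      by (subst sum.delta) auto
  qed
  finally show ?thesis .
qed

lemma CV_sq: "v \<in> CV s k \<Longrightarrow> b < s \<Longrightarrow> snd (v b) * snd (v b) = 1"
  using CV_D(2)[of v s k b] by auto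

lemma CV_abs: "v \<in> CV s k \<Longrightarrow> b < s \<Longrightarrow> \<bar>snd (v b)\<bar> = 1"
  using CV_D(2)[of v s k b] by auto

lemma eta_norm:
  assumes v: "v \<in> CV s k"
  shows "(\<Sum>t<s * k. (eta k \<rho> s v t)\<^sup>2) = real s * \<rho>\<^sup>2"
proof -
  have "(\<Sum>t<s * k. (eta k \<rho> s v t)\<^sup>2) = (\<Sum>t<s * k. eta k \<rho> s v t * eta k \<rho> s v t)"
    by (simp add: power2_eq_square)
  also have "\<dots> = (\<Sum>b<s. snd (v b) * snd (v b) * \<rho>\<^sup>2)" by (simp add: eta_ip[OF v v])
  also have "\<dots> = (\<Sum>b<s. \<rho>\<^sup>2)"
    using CV_sq[OF v] by (intro sum.cong refl) auto
  finally show ?thesis by simp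
qed

lemma eta_powr:
  assumes v: "v \<in> CV s k" and p: "0 < p" and rho: "0 \<le> \<rho>"
    and dec: "decseq a" and apos: "\<forall>t. 0 < a t" and skd: "s * k \<le> d"
  shows "(\<Sum>t<s * k. \<bar>eta k \<rho> s v t\<bar> powr p / a t powr p) \<le> real s * \<rho> powr p / a (d - 1) powr p"
proof -
  have "(\<Sum>t<s * k. \<bar>eta k \<rho> s v t\<bar> powr p / a t powr p) =
      (\<Sum>b<s. \<Sum>j<k. \<bar>eta k \<rho> s v (b * k + j)\<bar> powr p / a (b * k + j) powr p)"
    by (rule sum_blocks)
  also have "\<dots> = (\<Sum>b<s. \<rho> powr p / a (b * k + fst (v b)) powr p)"
  proof (intro sum.cong refl)
    fix b assume b: "b \<in> {..<s}"
    have vb: "fst (v b) < k" "snd (v b) \<in> {-1, 1}" using CV_D[OF v] b by auto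
    have "(\<Sum>j<k. \<bar>eta k \<rho> s v (b * k + j)\<bar> powr p / a (b * k + j) powr p)
       = (\<Sum>j<k. if j = fst (v b) then \<rho> powr p / a (b * k + fst (v b)) powr p else 0)"
    proof (intro sum.cong refl)
      fix j assume j: "j \<in> {..<k}"
      have b': "b < s" using b by simp
      show "\<bar>eta k \<rho> s v (b * k + j)\<bar> powr p / a (b * k + j) powr p
          = (if j = fst (v b) then \<rho> powr p / a (b * k + fst (v b)) powr p else 0)"
        using eta_at[OF v b', of j] j CV_abs[OF v b'] rho by (simp add: abs_mult)
    qed
    also have "\<dots> = \<rho> powr p / a (b * k + fst (v b)) powr p" using vb by (subst sum.delta) auto
    finally show "(\<Sum>j<k. \<bar>eta k \<rho> s v (b * k + j)\<bar> powr p / a (b * k + j) powr p) = \<rho> powr p / a (b * k + fst (v b)) powr p" .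
  qed
  also have "\<dots> \<le> (\<Sum>b<s. \<rho> powr p / a (d - 1) powr p)"
  proof (intro sum_mono)
    fix b assume b: "b \<in> {..<s}"
    have vb: "fst (v b) < k" using CV_D[OF v] b by auto
    have "b * k + k \<le> s * k" using b by (metis Suc_leI lessThan_iff add.commute mult_Suc mult_le_mono1)
    then have le: "b * k + fst (v b) \<le> d - 1" using vb skd by linarith
    have "a (d - 1) \<le> a (b * k + fst (v b))" using dec le by (simp add: decseq_def)
    then have "a (d - 1) powr p \<le> a (b * k + fst (v b)) powr p"
      using apos p by (intro powr_mono2) (auto simp: less_imp_le)
    moreover have "0 < a (d - 1) powr p" using apos[rule_format, of "d - 1"] by simp
    ultimately show "\<rho> powr p / a (b * k + fst (v b)) powr p \<le> \<rho> powr p / a (d - 1) powr p"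
      by (intro divide_left_mono) (auto intro!: mult_pos_pos)
  qed
  also have "\<dots> = real s * \<rho> powr p / a (d - 1) powr p" by simp
  finally show ?thesis .
qed


lemma gamma_budget:
  fixes p \<epsilon> nn s A \<rho> :: real
  assumes p: "1 \<le> p" "p \<le> 2" and eps: "0 < \<epsilon>" and nn: "0 < nn" and s: "0 < s" "s \<le> 4 * nn * \<epsilon>\<^sup>2"
    and A0: "0 < A" and A: "192 * \<epsilon>\<^sup>2 \<le> A powr p * nn powr ((p - 2) / 2)"
    and rho: "0 \<le> \<rho>" "\<rho>\<^sup>2 \<le> \<epsilon>\<^sup>2 / s"
  shows "s * \<rho> powr p \<le> A powr p"
proof -
  define e where "e = (2 - p) / 2"
  have e0: "0 \<le> e" and e1: "e \<le> 1" using p by (auto simp: e_def)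
  have rs: "\<rho> \<le> \<epsilon> / sqrt s"
  proof -
    have "\<rho> = sqrt (\<rho>\<^sup>2)" using rho by simp
    also have "\<dots> \<le> sqrt (\<epsilon>\<^sup>2 / s)" using rho by (intro real_sqrt_le_mono) auto
    also have "\<dots> = \<epsilon> / sqrt s" using eps by (simp add: real_sqrt_divide)
    finally show ?thesis .
  qed
  have "\<rho> powr p \<le> (\<epsilon> / sqrt s) powr p" using rs rho p by (intro powr_mono2) auto
  also have "\<dots> = \<epsilon> powr p / s powr (p / 2)"
  proof -
    have "sqrt s powr p = s powr (p / 2)" using s by (simp add: powr_half_sqrt[symmetric] powr_powr)
    then show ?thesis by (simp add: powr_divide)
  qed
  finally have r1: "\<rho> powr p \<le> \<epsilon> powr p / s powr (p / 2)" .
  have "s * \<rho> powr p \<le> s * (\<epsilon> powr p / s powr (p / 2))" using r1 s by (intro mult_left_mono) auto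
  also have "\<dots> = s powr e * \<epsilon> powr p"
  proof -
    have "s = s powr 1" using s by simp
    then have "s / s powr (p / 2) = s powr (1 - p / 2)" using s by (metis powr_diff)
    then have q: "s / s powr (p / 2) = s powr e" unfolding e_def by (simp add: field_simps)
    show ?thesis using q by (metis times_divide_eq_left times_divide_eq_right mult.commute)
  qed
  also have "\<dots> \<le> (4 * nn * \<epsilon>\<^sup>2) powr e * \<epsilon> powr p"
    using s e0 by (intro mult_right_mono powr_mono2) auto
  also have "(4 * nn * \<epsilon>\<^sup>2) powr e = 4 powr e * nn powr e * \<epsilon> powr (2 * e)"
    using nn eps by (simp add: powr_mult powr_powr[symmetric] powr_numeral[symmetric] del: powr_numeral)
  also have "4 powr e * nn powr e * \<epsilon> powr (2 * e) * \<epsilon> powr p = 4 powr e * nn powr e * \<epsilon>\<^sup>2"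
  proof -
    have ex: "2 * e + p = 2" unfolding e_def by (simp add: field_simps)
    have "\<epsilon> powr (2 * e) * \<epsilon> powr p = \<epsilon> powr 2" using eps by (simp only: powr_add[symmetric] ex)
    then show ?thesis using eps by simp
  qed
  also have "\<dots> \<le> 4 * nn powr e * \<epsilon>\<^sup>2"
  proof -
    have "4 powr e \<le> 4 powr 1" using e1 by (intro powr_mono) auto
    then show ?thesis using nn by (intro mult_right_mono) auto
  qed
  also have "\<dots> \<le> 192 * \<epsilon>\<^sup>2 * nn powr e" using nn by simp
  also have "\<dots> \<le> A powr p * nn powr ((p - 2) / 2) * nn powr e"
    using A nn by (intro mult_right_mono) auto
  also have "\<dots> = A powr p"
  proof -
    have "nn powr ((p - 2) / 2) * nn powr e = nn powr 0" unfolding e_def using nn by (simp add: powr_add[symmetric] field_simps)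
    then show ?thesis using nn by (simp add: mult.assoc)
  qed
  finally show ?thesis .
qed

lemma d_l_prop:
  assumes p: "1 \<le> p" and apos: "\<forall>t. 0 < a t" and lim: "a \<longlonglongrightarrow> 0" and eps: "0 < \<epsilon>" and n: "0 < n"
    and d: "1 \<le> d_l p a n \<epsilon>"
  shows "192 * \<epsilon>\<^sup>2 \<le> a (d_l p a n \<epsilon> - 1) powr p * real n powr ((p - 2) / 2)"
proof -
  define D where "D = {d::nat. 1 \<le> d \<and> a (d - 1) powr p * real n powr ((p - 2) / 2) \<ge> 192 * \<epsilon>\<^sup>2}"
  have dl: "d_l p a n \<epsilon> = (if D = {} then 0 else Max D)" unfolding d_l_def D_def Let_def by simp
  have c: "0 < real n powr ((p - 2) / 2)" using n by simp
  have "((\<lambda>t. a t powr p) \<longlongrightarrow> 0) sequentially"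
  proof (rule tendsto_zero_powrI[OF lim tendsto_const])
    show "eventually (\<lambda>t. 0 \<le> a t) sequentially" using apos by (auto intro!: always_eventually less_imp_le)
  qed (use p in auto)
  then have "((\<lambda>t. a t powr p * real n powr ((p - 2) / 2)) \<longlongrightarrow> 0 * real n powr ((p - 2) / 2)) sequentially"
    by (intro tendsto_mult tendsto_const)
  then have "eventually (\<lambda>t. a t powr p * real n powr ((p - 2) / 2) < 192 * \<epsilon>\<^sup>2) sequentially"
    using eps by (intro order_tendstoD(2)) auto
  then obtain N where N: "\<And>t. N \<le> t \<Longrightarrow> a t powr p * real n powr ((p - 2) / 2) < 192 * \<epsilon>\<^sup>2"
    by (auto simp: eventually_sequentially)
  have "D \<subseteq> {..N}"
  proof
    fix x assume "x \<in> D"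
    then have "\<not> N \<le> x - 1" using N[of "x - 1"] by (auto simp: D_def)
    then show "x \<in> {..N}" by auto
  qed
  then have fin: "finite D" by (rule finite_subset) simp
  have ne: "D \<noteq> {}" using d dl by (auto split: if_splits)
  have "Max D \<in> D" by (rule Max_in[OF fin ne])
  then have "192 * \<epsilon>\<^sup>2 \<le> a (Max D - 1) powr p * real n powr ((p - 2) / 2)"
    unfolding D_def by blast
  moreover have "d_l p a n \<epsilon> = Max D" using dl ne by simp
  ultimately show ?thesis by simp
qed


lemma mix_mult: "mix F V h \<omega> * mix F W h' \<omega> =
   (\<Sum>v\<in>V. \<Sum>w\<in>W. LL F (h v) \<omega> * LL F (h' w) \<omega>) / (real (card V) * real (card W))"
  unfolding mix_def by (simp add: sum_product)

lemma int_mix2: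
  assumes F: "finite F"
  shows "integrable B0 (\<lambda>\<omega>. mix F V h \<omega> * mix F W h' \<omega>)"
    and "integral\<^sup>L B0 (\<lambda>\<omega>. mix F V h \<omega> * mix F W h' \<omega>) =
      (\<Sum>v\<in>V. \<Sum>w\<in>W. exp (\<Sum>k\<in>F. h v k * h' w k)) / (real (card V) * real (card W))"
proof -
  have i: "integrable B0 (\<lambda>\<omega>. LL F (h v) \<omega> * LL F (h' w) \<omega>)" for v w by (rule integrable_LL2[OF F])
  show "integrable B0 (\<lambda>\<omega>. mix F V h \<omega> * mix F W h' \<omega>)"
    unfolding mix_mult using i by (intro integrable_divide_zero Bochner_Integration.integrable_sum) auto
  show "integral\<^sup>L B0 (\<lambda>\<omega>. mix F V h \<omega> * mix F W h' \<omega>) =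
      (\<Sum>v\<in>V. \<Sum>w\<in>W. exp (\<Sum>k\<in>F. h v k * h' w k)) / (real (card V) * real (card W))"
    unfolding mix_mult using i
    by (simp add: Bochner_Integration.integral_sum Bochner_Integration.integrable_sum integral_LL2[OF F])
qed

lemma integral_one_B0: "integral\<^sup>L B0 (\<lambda>_. 1::real) = 1"
proof -
  interpret P: prob_space B0 by (rule prob_BM)
  show ?thesis using P.prob_space by simp
qed

lemma integrable_one_B0: "integrable B0 (\<lambda>_. 1::real)"
proof -
  interpret P: prob_space B0 by (rule prob_BM)
  show ?thesis by (rule P.integrable_const)
qed

lemma l1_l2:
  fixes f g :: "(idx \<Rightarrow> real) \<Rightarrow> real"
  assumes fm[measurable]: "f \<in> borel_measurable B0" and gm[measurable]: "g \<in> borel_measurable B0"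
    and i: "integrable B0 (\<lambda>\<omega>. (f \<omega> - g \<omega>)\<^sup>2)"
  shows "integral\<^sup>L B0 (\<lambda>\<omega>. \<bar>f \<omega> - g \<omega>\<bar>) \<le> sqrt (integral\<^sup>L B0 (\<lambda>\<omega>. (f \<omega> - g \<omega>)\<^sup>2))"
proof -
  have cs: "(integral\<^sup>L B0 (\<lambda>\<omega>. \<bar>f \<omega> - g \<omega>\<bar> * 1))\<^sup>2 \<le> integral\<^sup>L B0 (\<lambda>\<omega>. (\<bar>f \<omega> - g \<omega>\<bar>)\<^sup>2) * integral\<^sup>L B0 (\<lambda>\<omega>. 1\<^sup>2)"
    by (rule CS_real(2)) (use i integrable_one_B0 in auto)
  then have "(integral\<^sup>L B0 (\<lambda>\<omega>. \<bar>f \<omega> - g \<omega>\<bar>))\<^sup>2 \<le> integral\<^sup>L B0 (\<lambda>\<omega>. (f \<omega> - g \<omega>)\<^sup>2)"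
    using integral_one_B0 by simp
  then show ?thesis by (simp add: real_le_rsqrt)
qed

lemma l1_chi:
  fixes f g :: "(idx \<Rightarrow> real) \<Rightarrow> real"
  assumes fm[measurable]: "f \<in> borel_measurable B0" and gm[measurable]: "g \<in> borel_measurable B0"
    and gpos: "\<And>\<omega>. 0 < g \<omega>" and ig: "integrable B0 g" and Ig: "integral\<^sup>L B0 g = 1"
    and i: "integrable B0 (\<lambda>\<omega>. (f \<omega> - g \<omega>)\<^sup>2 / g \<omega>)"
  shows "integral\<^sup>L B0 (\<lambda>\<omega>. \<bar>f \<omega> - g \<omega>\<bar>) \<le> sqrt (integral\<^sup>L B0 (\<lambda>\<omega>. (f \<omega> - g \<omega>)\<^sup>2 / g \<omega>))"
proof -
  define u where "u \<omega> = \<bar>f \<omega> - g \<omega>\<bar> / sqrt (g \<omega>)" for \<omega>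
  define v where "v \<omega> = sqrt (g \<omega>)" for \<omega>
  have uv: "\<bar>f \<omega> - g \<omega>\<bar> = u \<omega> * v \<omega>" for \<omega> using gpos[of \<omega>] by (simp add: u_def v_def)
  have u2: "(u \<omega>)\<^sup>2 = (f \<omega> - g \<omega>)\<^sup>2 / g \<omega>" for \<omega> using gpos[of \<omega>]
    by (simp add: u_def power_divide)
  have v2: "(v \<omega>)\<^sup>2 = g \<omega>" for \<omega> using gpos[of \<omega>] by (simp add: v_def less_imp_le)
  have um: "u \<in> borel_measurable B0" unfolding u_def by measurable
  have vm: "v \<in> borel_measurable B0" unfolding v_def by measurable
  have cs: "(integral\<^sup>L B0 (\<lambda>\<omega>. u \<omega> * v \<omega>))\<^sup>2 \<le> integral\<^sup>L B0 (\<lambda>\<omega>. (u \<omega>)\<^sup>2) * integral\<^sup>L B0 (\<lambda>\<omega>. (v \<omega>)\<^sup>2)"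
  proof (rule CS_real(2)[OF um vm])
    show "integrable B0 (\<lambda>\<omega>. (u \<omega>)\<^sup>2)" unfolding u2 by (rule i)
    show "integrable B0 (\<lambda>\<omega>. (v \<omega>)\<^sup>2)" unfolding v2 by (rule ig)
  qed (use gpos in \<open>auto simp: u_def v_def less_imp_le\<close>)
  then have "(integral\<^sup>L B0 (\<lambda>\<omega>. \<bar>f \<omega> - g \<omega>\<bar>))\<^sup>2 \<le> integral\<^sup>L B0 (\<lambda>\<omega>. (f \<omega> - g \<omega>)\<^sup>2 / g \<omega>)"
    unfolding u2 v2 Ig uv[symmetric] by simp
  then show ?thesis by (simp add: real_le_rsqrt)
qed

lemma exp_le_inv: fixes x :: real shows "0 \<le> x \<Longrightarrow> x < 1 \<Longrightarrow> exp x \<le> 1 / (1 - x)"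
proof -
  assume x: "0 \<le> x" "x < 1"
  have "1 - x \<le> exp (- x)" using exp_ge_add_one_self[of "- x"] by simp
  then have "(1 - x) * exp x \<le> exp (- x) * exp x" by (intro mult_right_mono) auto
  then have "(1 - x) * exp x \<le> 1" by (simp add: exp_minus)
  then show ?thesis using x by (simp add: field_simps)
qed

lemma pow_le_exp: "0 \<le> u \<Longrightarrow> (1 + u) ^ s \<le> exp (real s * u)"
proof -
  assume u: "0 \<le> u"
  have "(1 + u) ^ s \<le> (exp u) ^ s" using u by (intro power_mono) (auto simp: exp_ge_add_one_self add.commute)
  also have "\<dots> = exp (real s * u)" by (simp add: exp_of_nat_mult)
  finally show ?thesis .
qed

lemma coshb:
  fixes z :: real
  assumes z: "0 \<le> z" "z \<le> 1 / 2"
  shows "exp z + exp (- z) - 2 \<le> 7 / 6 * z\<^sup>2"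
proof -
  obtain t where t: "\<bar>t\<bar> \<le> \<bar>z\<bar>" and et: "exp z = (\<Sum>m<3. z ^ m / fact m) + exp t / fact 3 * z ^ 3"
    using Maclaurin_exp_le[of z 3] by blast
  obtain t' where et': "exp (- z) = (\<Sum>m<3. (- z) ^ m / fact m) + exp t' / fact 3 * (- z) ^ 3"
    using Maclaurin_exp_le[of "- z" 3] by blast
  have s3: "(\<Sum>m<3. x ^ m / fact m) = 1 + x + x\<^sup>2 / 2" for x :: real
    by (simp add: numeral_3_eq_3 power2_eq_square)
  have "exp t \<le> exp (1 / 2 :: real)" using t z by simp
  also have "\<dots> \<le> 1 / (1 - 1 / 2)" by (rule exp_le_inv) auto
  finally have et2: "exp t \<le> 2" by simp
  have z3: "z ^ 3 \<le> z\<^sup>2 / 2"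
  proof -
    have "z ^ 3 = z\<^sup>2 * z" by (simp add: power2_eq_square power3_eq_cube)
    also have "\<dots> \<le> z\<^sup>2 * (1 / 2)" using z by (intro mult_left_mono) auto
    finally show ?thesis by simp
  qed
  have "exp t * z ^ 3 \<le> 2 * z ^ 3" by (rule mult_right_mono[OF et2]) (use z in simp)
  then have "exp z \<le> 1 + z + z\<^sup>2 / 2 + 2 / 6 * z ^ 3"
    unfolding et s3 by (simp add: fact_numeral)
  moreover have "exp (- z) \<le> 1 - z + z\<^sup>2 / 2"
  proof -
    have "0 \<le> exp t' / fact 3 * z ^ 3" using z by simp
    then show ?thesis unfolding et' s3 by (simp add: power3_eq_cube)
  qed
  ultimately have "exp z + exp (- z) - 2 \<le> z\<^sup>2 + z ^ 3 / 3" by simp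
  also have "\<dots> \<le> 7 / 6 * z\<^sup>2" using z3 by simp
  finally show ?thesis .
qed


definition dl :: "real \<Rightarrow> nat \<times> real \<Rightarrow> nat \<times> real \<Rightarrow> real" where
  "dl \<rho> a a' = (if fst a = fst a' then snd a * snd a' * \<rho>\<^sup>2 else 0)"

lemma eta_ip_dl: "v \<in> CV s k \<Longrightarrow> w \<in> CV s k \<Longrightarrow>
   (\<Sum>t<s * k. eta k \<rho> s v t * eta k \<rho> s w t) = (\<Sum>b<s. dl \<rho> (v b) (w b))"
  unfolding dl_def by (rule eta_ip)

lemma block_Q:
  "(\<Sum>v\<in>CV s k. \<Sum>w\<in>CV s k. exp (c * (\<Sum>b<s. dl \<rho> (v b) (w b)))) =
     (\<Sum>a\<in>CH k. \<Sum>a'\<in>CH k. exp (c * dl \<rho> a a')) ^ s"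
proof -
  have "(\<Sum>v\<in>CV s k. \<Sum>w\<in>CV s k. exp (c * (\<Sum>b<s. dl \<rho> (v b) (w b)))) =
      (\<Sum>v\<in>CV s k. \<Sum>w\<in>CV s k. \<Prod>b<s. exp (c * dl \<rho> (v b) (w b)))"
    by (simp add: sum_distrib_left exp_sum)
  also have "\<dots> = (\<Sum>v\<in>CV s k. \<Prod>b<s. \<Sum>a'\<in>CH k. exp (c * dl \<rho> (v b) a'))"
    unfolding CV_def by (intro sum.cong refl sum_PiE_prod) auto
  also have "\<dots> = (\<Prod>b<s. \<Sum>a\<in>CH k. \<Sum>a'\<in>CH k. exp (c * dl \<rho> a a'))"
    unfolding CV_def by (rule sum_PiE_prod[where f="\<lambda>b a. \<Sum>a'\<in>CH k. exp (c * dl \<rho> a a')"]) auto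
  also have "\<dots> = (\<Sum>a\<in>CH k. \<Sum>a'\<in>CH k. exp (c * dl \<rho> a a')) ^ s" by simp
  finally show ?thesis .
qed

lemma sum_delta_const: "j < k \<Longrightarrow> (\<Sum>j'<k. if j = j' then X else Y) = X + (real k - 1) * (Y::real)"
proof -
  assume j: "j < k"
  have "(\<Sum>j'<k. if j = j' then X else Y) = (\<Sum>j'<k. Y + (if j = j' then X - Y else 0))"
    by (intro sum.cong refl) auto
  also have "\<dots> = real k * Y + (X - Y)" using j by (simp add: sum.distrib)
  finally show ?thesis by (simp add: algebra_simps)
qed

lemma sum_times: "(\<Sum>x\<in>A \<times> B. h x) = (\<Sum>a\<in>A. \<Sum>b\<in>B. h (a, b))"
  by (simp add: sum.cartesian_product)

lemma block_S:
  "(\<Sum>a\<in>CH k. \<Sum>a'\<in>CH k. exp (c * dl \<rho> a a')) =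
     real k * (4 * real k - 4 + 2 * exp (c * \<rho>\<^sup>2) + 2 * exp (- (c * \<rho>\<^sup>2)))"
proof -
  have pm: "{-1, 1::real} = insert (-1) {1}" by simp
  have inner: "(\<Sum>a'\<in>CH k. exp (c * dl \<rho> (j, \<sigma>) a')) =
      (exp (- (c * \<sigma> * \<rho>\<^sup>2)) + exp (c * \<sigma> * \<rho>\<^sup>2)) + (real k - 1) * 2"
    if j: "j < k" for j \<sigma>
  proof -
    have "(\<Sum>a'\<in>CH k. exp (c * dl \<rho> (j, \<sigma>) a')) =
        (\<Sum>j'<k. \<Sum>\<sigma>'\<in>{-1, 1}. exp (c * dl \<rho> (j, \<sigma>) (j', \<sigma>')))"
      unfolding CH_def by (rule sum_times)
    also have "\<dots> = (\<Sum>j'<k. if j = j' then exp (- (c * \<sigma> * \<rho>\<^sup>2)) + exp (c * \<sigma> * \<rho>\<^sup>2) else 2)"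
      by (intro sum.cong refl) (auto simp: dl_def mult.assoc)
    also have "\<dots> = (exp (- (c * \<sigma> * \<rho>\<^sup>2)) + exp (c * \<sigma> * \<rho>\<^sup>2)) + (real k - 1) * 2"
      using j by (rule sum_delta_const)
    finally show ?thesis .
  qed
  have "(\<Sum>a\<in>CH k. \<Sum>a'\<in>CH k. exp (c * dl \<rho> a a')) =
      (\<Sum>j<k. \<Sum>\<sigma>\<in>{-1, 1}. \<Sum>a'\<in>CH k. exp (c * dl \<rho> (j, \<sigma>) a'))"
    unfolding CH_def[of k] by (rule sum_times)
  also have "\<dots> = (\<Sum>j<k. 4 * real k - 4 + 2 * exp (c * \<rho>\<^sup>2) + 2 * exp (- (c * \<rho>\<^sup>2)))"
    by (intro sum.cong refl) (simp add: inner algebra_simps)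
  also have "\<dots> = real k * (4 * real k - 4 + 2 * exp (c * \<rho>\<^sup>2) + 2 * exp (- (c * \<rho>\<^sup>2)))" by simp
  finally show ?thesis .
qed


lemma zero_gamma: "(\<lambda>_. 0) \<in> Gamma_set p a"
  by (rule gamma_finite[where T=0]) auto

lemma eta_gamma:
  assumes p: "1 \<le> p" "p \<le> 2" and dec: "decseq a" and apos: "\<forall>t. 0 < a t" and eps: "0 < \<epsilon>" and n: "0 < n"
    and v: "v \<in> CV s k" and spos: "0 < s" and skd: "s * k \<le> d" and s4: "real s \<le> 4 * real n * \<epsilon>\<^sup>2"
    and A: "192 * \<epsilon>\<^sup>2 \<le> a (d - 1) powr p * real n powr ((p - 2) / 2)"
    and rho: "0 \<le> \<rho>" "\<rho>\<^sup>2 \<le> \<epsilon>\<^sup>2 / real s"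
  shows "eta k \<rho> s v \<in> Gamma_set p a"
proof (rule gamma_finite[where T="s * k"])
  show "\<And>t. s * k \<le> t \<Longrightarrow> eta k \<rho> s v t = 0" using eta_zero[OF v] by auto
  have a0: "0 < a (d - 1)" using apos by auto
  have "(\<Sum>t<s * k. \<bar>eta k \<rho> s v t\<bar> powr p / a t powr p) \<le> real s * \<rho> powr p / a (d - 1) powr p"
    by (rule eta_powr[OF v _ rho(1) dec apos skd]) (use p in auto)
  also have "\<dots> \<le> 1"
  proof -
    have "real s * \<rho> powr p \<le> a (d - 1) powr p"
      by (rule gamma_budget[OF p eps _ _ s4 a0 A rho]) (use n spos in auto)
    then show ?thesis using a0 by simp
  qed
  finally show "(\<Sum>t<s * k. \<bar>eta k \<rho> s v t\<bar> powr p / a t powr p) \<le> 1" .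
qed

lemma eta_dist:
  assumes v: "v \<in> CV s k" and rho: "0 \<le> \<rho>"
  shows "l2_dist (\<lambda>_. 0) (eta k \<rho> s v) = sqrt (real s) * \<rho>" "l2_dist (eta k \<rho> s v) (\<lambda>_. 0) = sqrt (real s) * \<rho>"
proof -
  have z: "\<And>t. s * k \<le> t \<Longrightarrow> (0::real) = 0 \<and> eta k \<rho> s v t = 0" "\<And>t. s * k \<le> t \<Longrightarrow> eta k \<rho> s v t = 0 \<and> (0::real) = 0"
    using eta_zero[OF v] by auto
  show "l2_dist (\<lambda>_. 0) (eta k \<rho> s v) = sqrt (real s) * \<rho>"
    using l2_finite[of "s * k" "\<lambda>_. 0" "eta k \<rho> s v", OF z(1)] eta_norm[OF v] rho by (simp add: real_sqrt_mult)
  show "l2_dist (eta k \<rho> s v) (\<lambda>_. 0) = sqrt (real s) * \<rho>"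
    using l2_finite[of "s * k" "eta k \<rho> s v" "\<lambda>_. 0", OF z(2)] eta_norm[OF v] rho by (simp add: real_sqrt_mult)
qed

lemma ip_0e0:
  assumes v: "v \<in> CV s k" and w: "w \<in> CV s k"
  shows "(\<Sum>i\<in>FF n m (s * k). mu n m (\<lambda>_. 0) (eta k \<rho> s v) (\<lambda>_. 0) i * mu n m (\<lambda>_. 0) (eta k \<rho> s w) (\<lambda>_. 0) i)
     = real n * (\<Sum>b<s. dl \<rho> (v b) (w b))"
  unfolding ip_mu by (simp add: sum_distrib_left[symmetric] eta_ip_dl[OF v w])

lemma ip_e00:
  assumes v: "v \<in> CV s k" and w: "w \<in> CV s k"
  shows "(\<Sum>i\<in>FF n m (s * k). mu n m (eta k \<rho> s v) (\<lambda>_. 0) (\<lambda>_. 0) i * mu n m (eta k \<rho> s w) (\<lambda>_. 0) (\<lambda>_. 0) i)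
     = real n * (\<Sum>b<s. dl \<rho> (v b) (w b))"
  unfolding ip_mu by (simp add: sum_distrib_left[symmetric] eta_ip_dl[OF v w])

lemma ip_mixed:
  "(\<Sum>i\<in>FF n m (s * k). mu n m (\<lambda>_. 0) (eta k \<rho> s v) (\<lambda>_. 0) i * mu n m (eta k \<rho> s w) (\<lambda>_. 0) (\<lambda>_. 0) i) = 0"
  unfolding ip_mu by simp

lemma pow_aux: "(S::real) ^ s / ((c::real) ^ s * c ^ s) = (S / c ^ 2) ^ s"
  by (simp add: power_divide power_mult_distrib[symmetric] power2_eq_square)

lemma card_CV: "card (CV s k) = (2 * k) ^ s"
  unfolding CV_def by (simp add: card_PiE card_CH)

lemma part2_core:
  assumes good: "good_lfht_test p a \<epsilon> m n \<psi>" and n: "0 < n" and m: "0 < m"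
    and k: "0 < k" and s: "0 < s"
    and adm0: "\<And>v. v \<in> CV s k \<Longrightarrow> adm p a \<epsilon> (s * k) (\<lambda>_. 0) (eta k \<rho> s v)"
    and adm1: "\<And>v. v \<in> CV s k \<Longrightarrow> adm p a \<epsilon> (s * k) (eta k \<rho> s v) (\<lambda>_. 0)"
    and z0: "0 \<le> real n * \<rho>\<^sup>2" and z1: "real n * \<rho>\<^sup>2 \<le> 1 / 2"
    and small: "real s * (real n * \<rho>\<^sup>2)\<^sup>2 / real k < 1 / 2"
  shows False
proof -
  define F where "F = FF n m (s * k)"
  define V where "V = CV s k"
  define z where "z = real n * \<rho>\<^sup>2"
  define f where "f = mix F V (\<lambda>v. mu n m (\<lambda>_. 0) (eta k \<rho> s v) (\<lambda>_. 0))"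
  define g where "g = mix F V (\<lambda>v. mu n m (eta k \<rho> s v) (\<lambda>_. 0) (\<lambda>_. 0))"
  have V: "finite V" "V \<noteq> {}" using CV_ne[OF k] by (auto simp: V_def)
  have b: "1 \<le> integral\<^sup>L B0 (\<lambda>\<omega>. \<bar>f \<omega> - g \<omega>\<bar>)"
    unfolding f_def g_def F_def V_def
    by (rule bridge[OF good n m]) (use adm0 adm1 CV_ne[OF k] in auto)
  have Fin: "finite F" by (simp add: F_def)
  have sq: "(f \<omega> - g \<omega>)\<^sup>2 = f \<omega> * f \<omega> - 2 * (f \<omega> * g \<omega>) + g \<omega> * g \<omega>" for \<omega>
    by (simp add: power2_eq_square algebra_simps)
  have iff: "integrable B0 (\<lambda>\<omega>. f \<omega> * f \<omega>)" and ifg: "integrable B0 (\<lambda>\<omega>. f \<omega> * g \<omega>)"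
    and igg: "integrable B0 (\<lambda>\<omega>. g \<omega> * g \<omega>)"
    unfolding f_def g_def by (rule int_mix2(1)[OF Fin])+
  have isq: "integrable B0 (\<lambda>\<omega>. (f \<omega> - g \<omega>)\<^sup>2)"
    unfolding sq using iff ifg igg by auto
  define R where "R = (\<Sum>a\<in>CH k. \<Sum>a'\<in>CH k. exp (real n * dl \<rho> a a')) / (2 * real k) ^ 2"
  have cV: "real (card V) = (2 * real k) ^ s" by (simp add: V_def card_CV)

  have Iff: "integral\<^sup>L B0 (\<lambda>\<omega>. f \<omega> * f \<omega>) = R ^ s"
  proof -
    have "integral\<^sup>L B0 (\<lambda>\<omega>. f \<omega> * f \<omega>) = (\<Sum>v\<in>V. \<Sum>w\<in>V. exp (real n * (\<Sum>b<s. dl \<rho> (v b) (w b)))) / (real (card V) * real (card V))"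
      unfolding f_def int_mix2(2)[OF Fin] unfolding F_def
      by (intro arg_cong2[where f="(/)"] sum.cong refl) (simp_all add: ip_0e0 V_def)
    also have "\<dots> = R ^ s" unfolding V_def block_Q R_def cV[unfolded V_def]
      by (rule pow_aux)
    finally show ?thesis .
  qed
  have Igg: "integral\<^sup>L B0 (\<lambda>\<omega>. g \<omega> * g \<omega>) = R ^ s"
  proof -
    have "integral\<^sup>L B0 (\<lambda>\<omega>. g \<omega> * g \<omega>) = (\<Sum>v\<in>V. \<Sum>w\<in>V. exp (real n * (\<Sum>b<s. dl \<rho> (v b) (w b)))) / (real (card V) * real (card V))"
      unfolding g_def int_mix2(2)[OF Fin] unfolding F_def
      by (intro arg_cong2[where f="(/)"] sum.cong refl) (simp_all add: ip_e00 V_def)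
    also have "\<dots> = R ^ s" unfolding V_def block_Q R_def cV[unfolded V_def]
      by (rule pow_aux)
    finally show ?thesis .
  qed
  have Ifg: "integral\<^sup>L B0 (\<lambda>\<omega>. f \<omega> * g \<omega>) = 1"
    unfolding f_def g_def int_mix2(2)[OF Fin] unfolding F_def ip_mixed using V by simp
  have Isq: "integral\<^sup>L B0 (\<lambda>\<omega>. (f \<omega> - g \<omega>)\<^sup>2) = 2 * R ^ s - 2"
    unfolding sq using iff ifg igg Iff Igg Ifg by simp
  have Rf: "R = 1 + (exp z + exp (- z) - 2) / (2 * real k)"
    unfolding R_def block_S z_def using k by (simp add: field_simps power2_eq_square)
  have R0: "0 \<le> (exp z + exp (- z) - 2) / (2 * real k)"
  proof -
    have "2 \<le> exp z + exp (- z)"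
      using exp_ge_add_one_self[of z] exp_ge_add_one_self[of "- z"] by linarith
    then show ?thesis using k by simp
  qed
  have "R ^ s \<le> exp (real s * ((exp z + exp (- z) - 2) / (2 * real k)))"
    unfolding Rf by (rule pow_le_exp[OF R0])
  also have "\<dots> \<le> exp (real s * ((7 / 6 * z\<^sup>2) / (2 * real k)))"
  proof -
    have cz: "exp z + exp (- z) - 2 \<le> 7 / 6 * z\<^sup>2" using coshb[of z] z0 z1 by (simp add: z_def)
    have "real s * ((exp z + exp (- z) - 2) / (2 * real k)) \<le> real s * ((7 / 6 * z\<^sup>2) / (2 * real k))"
      using k by (intro mult_left_mono divide_right_mono cz) auto
    then show ?thesis by simp
  qed
  also have "\<dots> \<le> exp (7 / 24)"
  proof -
    have "real s * ((7 / 6 * z\<^sup>2) / (2 * real k)) = 7 / 12 * (real s * z\<^sup>2 / real k)" by simp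
    also have "\<dots> \<le> 7 / 12 * (1 / 2)" using small unfolding z_def by simp
    finally show ?thesis by simp
  qed
  also have "\<dots> \<le> 1 / (1 - 7 / 24)" by (rule exp_le_inv) auto
  finally have Rs: "R ^ s \<le> 24 / 17" by simp
  have "integral\<^sup>L B0 (\<lambda>\<omega>. \<bar>f \<omega> - g \<omega>\<bar>) \<le> sqrt (integral\<^sup>L B0 (\<lambda>\<omega>. (f \<omega> - g \<omega>)\<^sup>2))"
    by (rule l1_l2[OF _ _ isq]) (simp_all add: f_def g_def)
  also have "\<dots> < 1" unfolding Isq using Rs by simp
  finally show False using b by simp
qed

lemma part2:
  assumes p: "1 \<le> p" "p \<le> 2" and dec: "decseq a" and apos: "\<forall>t. 0 < a t" and lim: "a \<longlonglongrightarrow> 0"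
    and eps: "0 < \<epsilon>" and n: "0 < n" and m: "0 < m"
    and ex: "\<exists>\<theta>1\<in>Gamma_set p a. \<exists>\<theta>2\<in>Gamma_set p a. l2_dist \<theta>1 \<theta>2 \<ge> \<epsilon>"
    and good: "good_lfht_test p a \<epsilon> m n \<psi>"
    and d1: "1 \<le> d_l p a n \<epsilon>"
  shows "sqrt (real (d_l p a n \<epsilon>)) \<le> 2 * (real n * \<epsilon>\<^sup>2)"
proof (rule ccontr)
  define d where "d = d_l p a n \<epsilon>"
  define x where "x = real n * \<epsilon>\<^sup>2"
  assume "\<not> sqrt (real (d_l p a n \<epsilon>)) \<le> 2 * (real n * \<epsilon>\<^sup>2)"
  then have viol: "2 * x < sqrt (real d)" by (simp add: d_def x_def)
  have hx: "1 \<le> 2 * x" using part1(2)[OF p dec apos eps n m ex good] by (simp add: x_def)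
  have dpos: "1 \<le> d" using d1 by (simp add: d_def)
  have A: "192 * \<epsilon>\<^sup>2 \<le> a (d - 1) powr p * real n powr ((p - 2) / 2)"
    unfolding d_def by (rule d_l_prop[OF p(1) apos lim eps n d1])
  have viol2: "4 * x\<^sup>2 < real d"
  proof -
    have "(2 * x)\<^sup>2 < (sqrt (real d))\<^sup>2" using viol hx by (intro power_strict_mono) auto
    then show ?thesis by (simp add: power2_eq_square)
  qed
  have sqd: "sqrt (real d) \<le> real d"
  proof -
    have "1 \<le> sqrt (real d)" using dpos by simp
    then have "sqrt (real d) * 1 \<le> sqrt (real d) * sqrt (real d)" by (intro mult_left_mono) auto
    then show ?thesis by simp
  qed
  define s where "s = nat \<lceil>2 * x\<rceil>"
  have c0: "0 \<le> \<lceil>2 * x\<rceil>" using hx by simp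
  have rs: "real s = of_int \<lceil>2 * x\<rceil>" unfolding s_def using c0 by simp
  have s_ge: "2 * x \<le> real s" unfolding rs by (rule le_of_int_ceiling)
  have s_le: "real s \<le> 2 * x + 1" unfolding rs by (rule of_int_ceiling_le_add_one)
  have spos: "0 < s" using s_ge hx by simp
  have s4: "real s \<le> 4 * real n * \<epsilon>\<^sup>2" using s_le hx by (simp add: x_def)
  have sd: "s \<le> d"
  proof -
    have h2: "2 * x \<le> real d" using viol sqd by linarith
    then have "\<lceil>2 * x\<rceil> \<le> int d" by (simp add: ceiling_le_iff)
    then show ?thesis unfolding s_def using h2 by simp
  qed
  define k where "k = d div s"
  have kpos: "0 < k" unfolding k_def using sd spos by (simp add: div_greater_zero_iff)
  have dsk: "d = s * k + d mod s" unfolding k_def by simp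
  have skd: "s * k \<le> d" using dsk by linarith
  have d2: "real d \<le> 2 * real s * real k"
  proof -
    have "d mod s < s" using spos by simp
    moreover have "s \<le> s * k" using kpos by simp
    ultimately have "d \<le> 2 * s * k" using dsk by linarith
    then show ?thesis by (metis of_nat_le_iff of_nat_mult of_nat_numeral)
  qed
  define \<rho> where "\<rho> = \<epsilon> / sqrt (real s)"
  have rho0: "0 \<le> \<rho>" using eps by (simp add: \<rho>_def)
  have rho2: "\<rho>\<^sup>2 = \<epsilon>\<^sup>2 / real s" using spos by (simp add: \<rho>_def power_divide)
  have dist: "sqrt (real s) * \<rho> = \<epsilon>" using spos by (simp add: \<rho>_def)
  have adm0: "adm p a \<epsilon> (s * k) (\<lambda>_. 0) (eta k \<rho> s v)" if v: "v \<in> CV s k" for v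
    unfolding adm_def
    using zero_gamma eta_gamma[OF p dec apos eps n v spos skd s4 A rho0] rho2 eta_dist[OF v rho0] dist eta_zero[OF v]
    by auto
  have adm1: "adm p a \<epsilon> (s * k) (eta k \<rho> s v) (\<lambda>_. 0)" if v: "v \<in> CV s k" for v
    unfolding adm_def
    using zero_gamma eta_gamma[OF p dec apos eps n v spos skd s4 A rho0] rho2 eta_dist[OF v rho0] dist eta_zero[OF v]
    by auto
  have z: "real n * \<rho>\<^sup>2 = x / real s" unfolding rho2 x_def by simp
  have z0: "0 \<le> real n * \<rho>\<^sup>2" by simp
  have z1: "real n * \<rho>\<^sup>2 \<le> 1 / 2" unfolding z using s_ge hx spos by (simp add: field_simps)
  have small: "real s * (real n * \<rho>\<^sup>2)\<^sup>2 / real k < 1 / 2"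
  proof -
    have "real s * (real n * \<rho>\<^sup>2)\<^sup>2 / real k = x\<^sup>2 / (real s * real k)"
      unfolding z using spos kpos by (simp add: power2_eq_square field_simps)
    also have "\<dots> < 1 / 2"
    proof -
      have "2 * x\<^sup>2 < real s * real k" using viol2 d2 by simp
      then show ?thesis using spos kpos by (simp add: field_simps)
    qed
    finally show ?thesis .
  qed
  show False by (rule part2_core[OF good n m kpos spos adm0 adm1 z0 z1 small])
qed


definition Gb :: "nat \<Rightarrow> nat \<Rightarrow> idx set" where
  "Gb k b = {x. snd (snd x) div k = b}"

definition mub :: "nat \<Rightarrow> nat \<Rightarrow> nat \<Rightarrow> real \<Rightarrow> real \<Rightarrow> nat \<Rightarrow> nat \<times> real \<Rightarrow> idx \<Rightarrow> real" where
  "mub n m k \<rho> \<alpha> b a = mu n m (eb k \<rho> b a) (\<lambda>t. - eb k \<rho> b a t) (\<lambda>t. \<alpha> * eb k \<rho> b a t)"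

definition muv :: "nat \<Rightarrow> nat \<Rightarrow> nat \<Rightarrow> real \<Rightarrow> nat \<Rightarrow> real \<Rightarrow> (nat \<Rightarrow> nat \<times> real) \<Rightarrow> idx \<Rightarrow> real" where
  "muv n m k \<rho> s \<alpha> v = mu n m (eta k \<rho> s v) (\<lambda>t. - eta k \<rho> s v t) (\<lambda>t. \<alpha> * eta k \<rho> s v t)"

lemma eb_block: "a \<in> CH k \<Longrightarrow> eb k \<rho> b a t \<noteq> 0 \<Longrightarrow> t div k = b"
  by (auto simp: eb_def CH_def split: if_splits)

lemma mub_supp:
  assumes a: "a \<in> CH k" and x: "x \<notin> Gb k b"
  shows "mub n m k \<rho> \<alpha> b a x = 0"
proof -
  obtain c i t where xe: "x = (c, i, t)" by (cases x) auto
  have "t div k \<noteq> b" using x xe by (simp add: Gb_def)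
  then have "eb k \<rho> b a t = 0" using eb_block[OF a, of \<rho> b t] by blast
  then show ?thesis unfolding xe by (simp add: mub_def mu_def)
qed

lemma eta_in_block:
  assumes v: "v \<in> CV s k" and b: "b < s" and t: "t div k = b"
  shows "eta k \<rho> s v t = eb k \<rho> b (v b) t"
proof -
  have vb: "\<And>b'. b' < s \<Longrightarrow> v b' \<in> CH k" using v by (auto simp: CV_def PiE_iff)
  have "eta k \<rho> s v t = (\<Sum>b'<s. if b' = b then eb k \<rho> b (v b) t else 0)"
    unfolding eta_def
  proof (intro sum.cong refl)
    fix b' assume b': "b' \<in> {..<s}"
    have vb': "v b' \<in> CH k" using vb b' by simp
    show "eb k \<rho> b' (v b') t = (if b' = b then eb k \<rho> b (v b) t else 0)"
    proof (cases "b' = b")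
      case False
      have "eb k \<rho> b' (v b') t = 0"
      proof (rule ccontr)
        assume ne: "eb k \<rho> b' (v b') t \<noteq> 0"
        have "t div k = b'" by (rule eb_block[OF vb' ne])
        with t False show False by simp
      qed
      with False show ?thesis by simp
    qed simp
  qed
  also have "\<dots> = eb k \<rho> b (v b) t" using b by simp
  finally show ?thesis .
qed

lemma eta_out:
  assumes v: "v \<in> CV s k" and t: "s \<le> t div k"
  shows "eta k \<rho> s v t = 0"
proof -
  have vb: "\<And>b'. b' < s \<Longrightarrow> v b' \<in> CH k" using v by (auto simp: CV_def PiE_iff)
  show ?thesis unfolding eta_def
  proof (intro sum.neutral ballI)
    fix b' assume b': "b' \<in> {..<s}"
    show "eb k \<rho> b' (v b') t = 0"
    proof (rule ccontr)
      assume ne: "eb k \<rho> b' (v b') t \<noteq> 0"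
      have vb': "v b' \<in> CH k" using vb b' by simp
      have "t div k = b'" by (rule eb_block[OF vb' ne])
      with t b' show False by simp
    qed
  qed
qed

lemma muv_block:
  assumes v: "v \<in> CV s k" and b: "b < s" and x: "x \<in> Gb k b"
  shows "muv n m k \<rho> s \<alpha> v x = mub n m k \<rho> \<alpha> b (v b) x"
  using eta_in_block[OF v b] x by (cases x) (simp add: muv_def mub_def mu_def Gb_def)

lemma LL_restrict_set:
  assumes sub: "F' \<subseteq> F" and fin: "finite F" and z: "\<And>x. x \<in> F - F' \<Longrightarrow> \<mu> x = 0"
  shows "LL F \<mu> \<omega> = LL F' \<mu> \<omega>"
  unfolding LL_def using sub fin z by (intro arg_cong[where f=exp] sum.mono_neutral_right) auto

lemma LL_factor:
  assumes v: "v \<in> CV s k" and k: "0 < k"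
  shows "LL (FF n m (s * k)) (muv n m k \<rho> s \<alpha> v) \<omega> =
     (\<Prod>b<s. LL (FF n m (s * k) \<inter> Gb k b) (mub n m k \<rho> \<alpha> b (v b)) \<omega>)"
proof -
  let ?F = "FF n m (s * k)"
  let ?h = "\<lambda>x. muv n m k \<rho> s \<alpha> v x * \<omega> x - (muv n m k \<rho> s \<alpha> v x)\<^sup>2 / 2"
  have cover: "?F = (\<Union>b<s. ?F \<inter> Gb k b)"
  proof
    show "?F \<subseteq> (\<Union>b<s. ?F \<inter> Gb k b)"
    proof
      fix x assume x: "x \<in> ?F"
      then have "snd (snd x) < s * k" by (auto simp: FF_def)
      then have "snd (snd x) div k < s" using k by (simp add: div_less_iff_less_mult)
      then show "x \<in> (\<Union>b<s. ?F \<inter> Gb k b)" using x by (auto simp: Gb_def)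
    qed
  qed auto
  have disj: "\<forall>b\<in>{..<s}. \<forall>b'\<in>{..<s}. b \<noteq> b' \<longrightarrow> (?F \<inter> Gb k b) \<inter> (?F \<inter> Gb k b') = {}"
    by (auto simp: Gb_def)
  have "(\<Sum>x\<in>?F. ?h x) = (\<Sum>b<s. \<Sum>x\<in>?F \<inter> Gb k b. ?h x)"
    by (subst cover, rule sum.UNION_disjoint) (use disj in auto)
  also have "\<dots> = (\<Sum>b<s. \<Sum>x\<in>?F \<inter> Gb k b. mub n m k \<rho> \<alpha> b (v b) x * \<omega> x - (mub n m k \<rho> \<alpha> b (v b) x)\<^sup>2 / 2)"
    by (intro sum.cong refl) (auto simp: muv_block[OF v])
  finally show ?thesis unfolding LL_def by (simp add: exp_sum)
qed


definition FB :: "nat \<Rightarrow> nat \<Rightarrow> nat \<Rightarrow> nat \<Rightarrow> nat \<Rightarrow> idx set" where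
  "FB n m s k b = FF n m (s * k) \<inter> Gb k b"

lemma finite_FB[simp]: "finite (FB n m s k b)" by (simp add: FB_def)

definition lb :: "nat \<Rightarrow> nat \<Rightarrow> nat \<Rightarrow> nat \<Rightarrow> real \<Rightarrow> real \<Rightarrow> nat \<Rightarrow> nat \<times> real \<Rightarrow> (idx \<Rightarrow> real) \<Rightarrow> real" where
  "lb n m s k \<rho> \<alpha> b a = LL (FB n m s k b) (mub n m k \<rho> \<alpha> b a)"

definition blk :: "nat \<Rightarrow> nat \<Rightarrow> nat \<Rightarrow> nat \<Rightarrow> real \<Rightarrow> real \<Rightarrow> nat \<Rightarrow> (idx \<Rightarrow> real) \<Rightarrow> real" where
  "blk n m s k \<rho> \<alpha> b \<omega> = (\<Sum>a\<in>CH k. lb n m s k \<rho> \<alpha> b a \<omega>) / (2 * real k)"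

lemma mix_factor:
  assumes k: "0 < k"
  shows "mix (FF n m (s * k)) (CV s k) (muv n m k \<rho> s \<alpha>) \<omega> = (\<Prod>b<s. blk n m s k \<rho> \<alpha> b \<omega>)"
proof -
  have "mix (FF n m (s * k)) (CV s k) (muv n m k \<rho> s \<alpha>) \<omega>
      = (\<Sum>v\<in>CV s k. \<Prod>b<s. lb n m s k \<rho> \<alpha> b (v b) \<omega>) / real (card (CV s k))"
    unfolding mix_def lb_def FB_def
    by (intro arg_cong2[where f="(/)"] sum.cong refl) (simp add: LL_factor[OF _ k])
  also have "\<dots> = (\<Prod>b<s. \<Sum>a\<in>CH k. lb n m s k \<rho> \<alpha> b a \<omega>) / (2 * real k) ^ s"
    unfolding CV_def card_CV[unfolded CV_def]
    by (subst sum_PiE_prod) auto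
  also have "\<dots> = (\<Prod>b<s. blk n m s k \<rho> \<alpha> b \<omega>)"
    unfolding blk_def by (simp add: prod_dividef)
  finally show ?thesis .
qed

lemma eb_ip:
  assumes b: "b < s" and a: "a \<in> CH k" and a': "a' \<in> CH k"
  shows "(\<Sum>t<s * k. eb k \<rho> b a t * eb k \<rho> b a' t) = dl \<rho> a a'"
proof -
  have ja: "fst a < k" using a by (auto simp: CH_def)
  have lt: "b * k + fst a < s * k"
  proof -
    have "b * k + k \<le> s * k" using b by (metis Suc_leI add.commute mult_Suc mult_le_mono1)
    then show ?thesis using ja by linarith
  qed
  have "(\<Sum>t<s * k. eb k \<rho> b a t * eb k \<rho> b a' t) =
      (\<Sum>t<s * k. if t = b * k + fst a then dl \<rho> a a' else 0)"
  proof (intro sum.cong refl)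
    fix t
    show "eb k \<rho> b a t * eb k \<rho> b a' t = (if t = b * k + fst a then dl \<rho> a a' else 0)"
      by (simp add: eb_def dl_def power2_eq_square)
  qed
  also have "\<dots> = dl \<rho> a a'" using lt by simp
  finally show ?thesis .
qed

lemma blk_ip:
  assumes b: "b < s" and a: "a \<in> CH k" and a': "a' \<in> CH k"
  shows "(\<Sum>x\<in>FB n m s k b. mub n m k \<rho> \<alpha> b a x * mub n m k \<rho> \<beta> b a' x) =
     (2 * real n + real m * \<alpha> * \<beta>) * dl \<rho> a a'"
proof -
  have "(\<Sum>x\<in>FB n m s k b. mub n m k \<rho> \<alpha> b a x * mub n m k \<rho> \<beta> b a' x) =
      (\<Sum>x\<in>FF n m (s * k). mub n m k \<rho> \<alpha> b a x * mub n m k \<rho> \<beta> b a' x)"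
    unfolding FB_def using mub_supp[OF a] by (intro sum.mono_neutral_left) auto
  also have "\<dots> = (\<Sum>t<s * k. (2 * real n + real m * \<alpha> * \<beta>) * (eb k \<rho> b a t * eb k \<rho> b a' t))"
    unfolding mub_def ip_mu by (intro sum.cong refl) (simp add: algebra_simps)
  also have "\<dots> = (2 * real n + real m * \<alpha> * \<beta>) * dl \<rho> a a'"
    by (simp add: sum_distrib_left[symmetric] eb_ip[OF b a a'])
  finally show ?thesis .
qed

lemma integral_blk:
  assumes k: "0 < k"
  shows "integrable B0 (blk n m s k \<rho> \<alpha> b)" "integral\<^sup>L B0 (blk n m s k \<rho> \<alpha> b) = 1"
proof -
  show "integrable B0 (blk n m s k \<rho> \<alpha> b)"
    unfolding blk_def lb_def by (intro integrable_divide_zero Bochner_Integration.integrable_sum integrable_LL(1)) simp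
  have "integral\<^sup>L B0 (blk n m s k \<rho> \<alpha> b) = (\<Sum>a\<in>CH k. integral\<^sup>L B0 (lb n m s k \<rho> \<alpha> b a)) / (2 * real k)"
    unfolding blk_def lb_def
    by (simp add: Bochner_Integration.integral_sum integrable_LL(1))
  also have "\<dots> = 1" using k by (simp add: lb_def integrable_LL(2) card_CH)
  finally show "integral\<^sup>L B0 (blk n m s k \<rho> \<alpha> b) = 1" .
qed

lemma lb_ip_int:
  assumes b: "b < s" and a: "a \<in> CH k" and a': "a' \<in> CH k"
  shows "integrable B0 (\<lambda>\<omega>. lb n m s k \<rho> \<alpha> b a \<omega> * lb n m s k \<rho> \<beta> b a' \<omega>)"
    "integral\<^sup>L B0 (\<lambda>\<omega>. lb n m s k \<rho> \<alpha> b a \<omega> * lb n m s k \<rho> \<beta> b a' \<omega>) =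
       exp ((2 * real n + real m * \<alpha> * \<beta>) * dl \<rho> a a')"
  unfolding lb_def by (rule integrable_LL2, simp) (simp add: integral_LL2 blk_ip[OF b a a'])

lemma exp_prod_identity:
  fixes X Y :: real
  shows "exp (X + Y) + exp (- (X + Y)) - exp (X - Y) - exp (- (X - Y)) = (exp X - exp (- X)) * (exp Y - exp (- Y))"
  by (simp add: exp_add exp_diff exp_minus field_simps)

lemma blk_diff_sq:
  assumes k: "0 < k" and b: "b < s"
  shows "integrable B0 (\<lambda>\<omega>. (blk n m s k \<rho> 1 b \<omega> - blk n m s k \<rho> (-1) b \<omega>)\<^sup>2)"
    "integral\<^sup>L B0 (\<lambda>\<omega>. (blk n m s k \<rho> 1 b \<omega> - blk n m s k \<rho> (-1) b \<omega>)\<^sup>2) =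
      (exp (2 * real n * \<rho>\<^sup>2) - exp (- (2 * real n * \<rho>\<^sup>2))) * (exp (real m * \<rho>\<^sup>2) - exp (- (real m * \<rho>\<^sup>2))) / real k"
proof -
  let ?l = "lb n m s k \<rho>"
  define P where "P \<omega> = (\<Sum>a\<in>CH k. \<Sum>a'\<in>CH k.
      ?l 1 b a \<omega> * ?l 1 b a' \<omega> - ?l 1 b a \<omega> * ?l (-1) b a' \<omega> - ?l (-1) b a \<omega> * ?l 1 b a' \<omega> + ?l (-1) b a \<omega> * ?l (-1) b a' \<omega>)" for \<omega>
  have eq: "(blk n m s k \<rho> 1 b \<omega> - blk n m s k \<rho> (-1) b \<omega>)\<^sup>2 = P \<omega> / (2 * real k)\<^sup>2" for \<omega>
  proof -
    have "blk n m s k \<rho> 1 b \<omega> - blk n m s k \<rho> (-1) b \<omega> = (\<Sum>a\<in>CH k. ?l 1 b a \<omega> - ?l (-1) b a \<omega>) / (2 * real k)"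
      unfolding blk_def by (simp add: sum_subtractf diff_divide_distrib)
    moreover have "(\<Sum>a\<in>CH k. ?l 1 b a \<omega> - ?l (-1) b a \<omega>)\<^sup>2 = P \<omega>"
      unfolding P_def power2_eq_square sum_product by (intro sum.cong refl) (simp add: algebra_simps)
    ultimately show ?thesis by (simp add: power_divide)
  qed
  have CHb: "\<And>a. a \<in> CH k \<Longrightarrow> a \<in> CH k" by simp
  have iP: "integrable B0 P"
    unfolding P_def using lb_ip_int(1)[OF b]
    by (intro Bochner_Integration.integrable_sum Bochner_Integration.integrable_add Bochner_Integration.integrable_diff) auto
  show "integrable B0 (\<lambda>\<omega>. (blk n m s k \<rho> 1 b \<omega> - blk n m s k \<rho> (-1) b \<omega>)\<^sup>2)"
    unfolding eq using iP by simp
  define E where "E c = (\<Sum>a\<in>CH k. \<Sum>a'\<in>CH k. exp (c * dl \<rho> a a'))" for c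
  have IP: "integral\<^sup>L B0 P = 2 * E (2 * real n + real m) - 2 * E (2 * real n - real m)"
  proof -
    have "integral\<^sup>L B0 P = (\<Sum>a\<in>CH k. \<Sum>a'\<in>CH k.
        exp ((2 * real n + real m) * dl \<rho> a a') - exp ((2 * real n - real m) * dl \<rho> a a')
        - exp ((2 * real n - real m) * dl \<rho> a a') + exp ((2 * real n + real m) * dl \<rho> a a'))"
      unfolding P_def using lb_ip_int[OF b]
      by (simp add: Bochner_Integration.integral_sum Bochner_Integration.integrable_sum
          Bochner_Integration.integral_add Bochner_Integration.integral_diff)
    also have "\<dots> = 2 * E (2 * real n + real m) - 2 * E (2 * real n - real m)"
      unfolding E_def by (simp add: sum.distrib sum_subtractf sum_distrib_left algebra_simps)
    finally show ?thesis .
  qed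
  have E: "E c = real k * (4 * real k - 4 + 2 * exp (c * \<rho>\<^sup>2) + 2 * exp (- (c * \<rho>\<^sup>2)))" for c
    unfolding E_def by (rule block_S)
  have "integral\<^sup>L B0 (\<lambda>\<omega>. (blk n m s k \<rho> 1 b \<omega> - blk n m s k \<rho> (-1) b \<omega>)\<^sup>2) = integral\<^sup>L B0 P / (2 * real k)\<^sup>2"
    unfolding eq by simp
  also have "\<dots> = 4 * real k * (exp (2 * real n * \<rho>\<^sup>2 + real m * \<rho>\<^sup>2) + exp (- (2 * real n * \<rho>\<^sup>2 + real m * \<rho>\<^sup>2))
        - exp (2 * real n * \<rho>\<^sup>2 - real m * \<rho>\<^sup>2) - exp (- (2 * real n * \<rho>\<^sup>2 - real m * \<rho>\<^sup>2))) / (2 * real k)\<^sup>2"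
    unfolding IP E by (simp add: algebra_simps)
  also have "\<dots> = (exp (2 * real n * \<rho>\<^sup>2) - exp (- (2 * real n * \<rho>\<^sup>2))) * (exp (real m * \<rho>\<^sup>2) - exp (- (real m * \<rho>\<^sup>2))) / real k"
    unfolding exp_prod_identity using k by (simp add: power2_eq_square field_simps)
  finally show "integral\<^sup>L B0 (\<lambda>\<omega>. (blk n m s k \<rho> 1 b \<omega> - blk n m s k \<rho> (-1) b \<omega>)\<^sup>2) =
      (exp (2 * real n * \<rho>\<^sup>2) - exp (- (2 * real n * \<rho>\<^sup>2))) * (exp (real m * \<rho>\<^sup>2) - exp (- (real m * \<rho>\<^sup>2))) / real k" .
qed

lemma mub_neg: "mub n m k \<rho> \<alpha> b (j, -1) x = - mub n m k \<rho> \<alpha> b (j, 1) x"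
  by (cases x) (simp add: mub_def mu_def eb_def)

lemma amgm: "0 \<le> u \<Longrightarrow> 0 \<le> w \<Longrightarrow> 2 * sqrt (u * w) \<le> u + (w::real)"
proof -
  assume u: "0 \<le> u" and w: "0 \<le> w"
  have "0 \<le> (sqrt u - sqrt w)\<^sup>2" by simp
  then show ?thesis using u w by (simp add: power2_eq_square algebra_simps real_sqrt_mult)
qed

lemma blk_lower:
  assumes k: "0 < k" and b: "b < s"
  shows "exp (- ((2 * real n + real m) * \<rho>\<^sup>2) / 2) \<le> blk n m s k \<rho> (-1) b \<omega>"
proof -
  let ?l = "\<lambda>a. lb n m s k \<rho> (-1) b a \<omega>"
  define c where "c = exp (- ((2 * real n + real m) * \<rho>\<^sup>2) / 2)"
  have pair: "2 * c \<le> ?l (j, -1) + ?l (j, 1)" if j: "j < k" for j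
  proof -
    have a1: "(j, 1) \<in> CH k" and a2: "(j, -1) \<in> CH k" using j by (auto simp: CH_def)
    have "?l (j, 1) * ?l (j, -1) = exp (\<Sum>x\<in>FB n m s k b. mub n m k \<rho> (-1) b (j, 1) x * mub n m k \<rho> (-1) b (j, -1) x)
        * LL (FB n m s k b) (\<lambda>x. mub n m k \<rho> (-1) b (j, 1) x + mub n m k \<rho> (-1) b (j, -1) x) \<omega>"
      unfolding lb_def by (rule LL_mult)
    also have "(\<lambda>x. mub n m k \<rho> (-1) b (j, 1) x + mub n m k \<rho> (-1) b (j, -1) x) = (\<lambda>x. 0)"
      by (simp add: mub_neg)
    also have "LL (FB n m s k b) (\<lambda>x. 0) \<omega> = 1" by (simp add: LL_def)
    also have "(\<Sum>x\<in>FB n m s k b. mub n m k \<rho> (-1) b (j, 1) x * mub n m k \<rho> (-1) b (j, -1) x)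
        = - ((2 * real n + real m) * \<rho>\<^sup>2)"
      unfolding blk_ip[OF b a1 a2] by (simp add: dl_def)
    finally have pr: "?l (j, 1) * ?l (j, -1) = exp (- ((2 * real n + real m) * \<rho>\<^sup>2))" by simp
    have "2 * c = 2 * sqrt (?l (j, -1) * ?l (j, 1))"
      unfolding c_def using pr by (simp add: mult.commute sqrt_exp)
    also have "\<dots> \<le> ?l (j, -1) + ?l (j, 1)"
      by (rule amgm) (simp_all add: lb_def LL_pos less_imp_le)
    finally show ?thesis .
  qed
  have "(\<Sum>a\<in>CH k. ?l a) = (\<Sum>j<k. \<Sum>\<sigma>\<in>{-1, 1}. ?l (j, \<sigma>))"
    unfolding CH_def by (rule sum_times)
  also have "\<dots> = (\<Sum>j<k. ?l (j, -1) + ?l (j, 1))" by simp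
  also have "\<dots> \<ge> (\<Sum>j<k. 2 * c)" by (intro sum_mono pair) simp
  finally have "2 * real k * c \<le> (\<Sum>a\<in>CH k. ?l a)" by simp
  then show ?thesis unfolding blk_def c_def using k by (simp add: field_simps)
qed

lemma LL_restrict_arg: "F \<subseteq> G \<Longrightarrow> LL F \<mu> (restrict \<omega> G) = LL F \<mu> \<omega>"
  unfolding LL_def by (intro arg_cong[where f=exp] sum.cong refl) auto

lemma FB_sub: "FB n m s k b \<subseteq> Gb k b" by (simp add: FB_def)

lemma blk_restrict: "blk n m s k \<rho> \<alpha> b (restrict \<omega> (Gb k b)) = blk n m s k \<rho> \<alpha> b \<omega>"
  unfolding blk_def lb_def by (simp add: LL_restrict_arg[OF FB_sub])

lemma blk_meas: "blk n m s k \<rho> \<alpha> b \<in> borel_measurable (PiM (Gb k b) (\<lambda>_. borel))"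
proof -
  have "lb n m s k \<rho> \<alpha> b a \<in> borel_measurable (PiM (Gb k b) (\<lambda>_. borel))" for a
    unfolding lb_def by (rule LL_meas_PiM[OF FB_sub])
  then show ?thesis unfolding blk_def by (intro borel_measurable_divide borel_measurable_sum) auto
qed

lemma blk_meas_B[measurable]: "blk n m s k \<rho> \<alpha> b \<in> borel_measurable (BM \<nu>)"
  unfolding blk_def lb_def by measurable

lemma indep_blocks:
  assumes k: "0 < k"
    and rm: "\<And>b. b < s \<Longrightarrow> r b \<in> borel_measurable (PiM (Gb k b) (\<lambda>_. borel))"
    and rr: "\<And>b \<omega>. b < s \<Longrightarrow> r b (restrict \<omega> (Gb k b)) = r b \<omega>"
    and nn: "\<And>b \<omega>. 0 \<le> r b \<omega>"
  shows "(\<integral>\<^sup>+\<omega>. ennreal (\<Prod>b<s. r b \<omega>) \<partial>B0) = (\<Prod>b<s. \<integral>\<^sup>+\<omega>. ennreal (r b \<omega>) \<partial>B0)"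
proof -
  interpret P: prob_space B0 by (rule prob_BM)
  have disj: "disjoint_family_on (Gb k) {..<s}"
    by (auto simp: disjoint_family_on_def Gb_def)
  have i0: "P.indep_vars (\<lambda>b. PiM (Gb k b) (\<lambda>i. NM ((\<lambda>_. 0) i))) (\<lambda>b \<omega>. restrict (\<lambda>i. \<omega> i) (Gb k b)) {..<s}"
    by (rule P.indep_vars_restrict[OF BM_indep _ disj]) auto
  have Y: "(\<lambda>y. ennreal (r b y)) \<in> PiM (Gb k b) (\<lambda>i. NM ((\<lambda>_. 0) i)) \<rightarrow>\<^sub>M borel" if b: "b \<in> {..<s}" for b
  proof -
    have "r b \<in> borel_measurable (PiM (Gb k b) (\<lambda>i. NM ((\<lambda>_. 0) i)))"
      using rm[of b] b by (simp add: measurable_cong_sets[OF sets_PiM_cong[OF refl sets_NM] refl])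
    then show ?thesis by measurable
  qed
  have i1: "P.indep_vars (\<lambda>_. borel) (\<lambda>b \<omega>. ennreal (r b (restrict (\<lambda>i. \<omega> i) (Gb k b)))) {..<s}"
    by (rule P.indep_vars_compose2[OF i0 Y])
  have i2: "P.indep_vars (\<lambda>_. borel) (\<lambda>b \<omega>. ennreal (r b \<omega>)) {..<s}"
    using i1 by (subst (asm) P.indep_vars_cong[OF refl _ refl, where Y="\<lambda>b \<omega>. ennreal (r b \<omega>)"])
      (auto simp: rr fun_eq_iff)
  have "(\<integral>\<^sup>+\<omega>. ennreal (\<Prod>b<s. r b \<omega>) \<partial>B0) = (\<integral>\<^sup>+\<omega>. (\<Prod>b<s. ennreal (r b \<omega>)) \<partial>B0)"
    by (simp add: prod_ennreal nn)
  also have "\<dots> = (\<Prod>b<s. \<integral>\<^sup>+\<omega>. ennreal (r b \<omega>) \<partial>B0)"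
    by (rule P.indep_vars_nn_integral[OF _ i2]) auto
  finally show ?thesis .
qed


lemma sinh_bound: "0 \<le> u \<Longrightarrow> exp u - exp (- u) \<le> 2 * u * exp (u::real)"
proof -
  assume u: "0 \<le> u"
  have e1: "1 - u \<le> exp (- u)" using exp_ge_add_one_self[of "- u"] by simp
  have "(1 - u) * exp u \<le> exp (- u) * exp u" using e1 by (intro mult_right_mono) auto
  then have e2: "exp u - u * exp u \<le> 1" by (simp add: exp_minus algebra_simps)
  have e3: "1 \<le> exp u" using u by simp
  have "exp u - exp (- u) \<le> exp u - (1 - u)" using e1 by simp
  also have "\<dots> \<le> u * exp u + u" using e2 by simp
  also have "\<dots> \<le> u * exp u + u * exp u" using u e3 by (simp add: mult_left_mono[of 1 "exp u" u, simplified])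
  finally show ?thesis by simp
qed

lemma exp_half_le2: "exp (1 / 2 :: real) \<le> 2"
  using exp_le_inv[of "1 / 2"] by simp

lemma exp_3half: "exp (3 / 2 :: real) \<le> 8"
proof -
  have "exp (3 / 2 :: real) = exp (1 / 2) ^ 3" by (simp add: exp_of_nat_mult[symmetric])
  also have "\<dots> \<le> 2 ^ 3" using exp_half_le2 by (intro power_mono) auto
  finally show ?thesis by simp
qed

lemma block_r:
  assumes k: "0 < k" and b: "b < s"
    and X: "0 \<le> 2 * real n * \<rho>\<^sup>2" and Y: "0 \<le> real m * \<rho>\<^sup>2"
  defines "r \<equiv> \<lambda>\<omega>. (blk n m s k \<rho> 1 b \<omega>)\<^sup>2 / blk n m s k \<rho> (-1) b \<omega>"
  shows "integrable B0 r"
    and "integral\<^sup>L B0 r \<le> 1 + exp ((2 * real n * \<rho>\<^sup>2 + real m * \<rho>\<^sup>2) / 2) *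
        ((exp (2 * real n * \<rho>\<^sup>2) - exp (- (2 * real n * \<rho>\<^sup>2))) * (exp (real m * \<rho>\<^sup>2) - exp (- (real m * \<rho>\<^sup>2))) / real k)"
proof -
  let ?f = "blk n m s k \<rho> 1 b" and ?g = "blk n m s k \<rho> (-1) b"
  define C where "C = exp ((2 * real n * \<rho>\<^sup>2 + real m * \<rho>\<^sup>2) / 2)"
  have low: "exp (- ((2 * real n + real m) * \<rho>\<^sup>2) / 2) \<le> ?g \<omega>" for \<omega> by (rule blk_lower[OF k b])
  have gpos: "0 < ?g \<omega>" for \<omega> using low[of \<omega>] by (rule less_le_trans[rotated]) simp
  have invg: "1 / ?g \<omega> \<le> C" for \<omega>
  proof -
    have "1 / ?g \<omega> \<le> 1 / exp (- ((2 * real n + real m) * \<rho>\<^sup>2) / 2)"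
      using low[of \<omega>] gpos[of \<omega>] by (intro divide_left_mono) (auto intro!: mult_pos_pos)
    also have "\<dots> = C"
    proof -
      have e: "- ((2 * real n + real m) * \<rho>\<^sup>2) / 2 = - ((2 * real n * \<rho>\<^sup>2 + real m * \<rho>\<^sup>2) / 2)"
        by (simp add: algebra_simps)
      show ?thesis unfolding C_def e exp_minus by (metis inverse_eq_divide inverse_inverse_eq)
    qed
    finally show ?thesis .
  qed
  have decomp: "r \<omega> = ?g \<omega> + 2 * (?f \<omega> - ?g \<omega>) + (?f \<omega> - ?g \<omega>)\<^sup>2 / ?g \<omega>" for \<omega>
    unfolding r_def using gpos[of \<omega>] by (simp add: field_simps power2_eq_square)
  have iD: "integrable B0 (\<lambda>\<omega>. (?f \<omega> - ?g \<omega>)\<^sup>2)" by (rule blk_diff_sq(1)[OF k b])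
  have bnd: "(?f \<omega> - ?g \<omega>)\<^sup>2 / ?g \<omega> \<le> C * (?f \<omega> - ?g \<omega>)\<^sup>2" for \<omega>
  proof -
    have "(?f \<omega> - ?g \<omega>)\<^sup>2 / ?g \<omega> = (?f \<omega> - ?g \<omega>)\<^sup>2 * (1 / ?g \<omega>)" by simp
    also have "\<dots> \<le> (?f \<omega> - ?g \<omega>)\<^sup>2 * C" using invg[of \<omega>] by (intro mult_left_mono) auto
    finally show ?thesis by (simp add: mult.commute)
  qed
  have iQ: "integrable B0 (\<lambda>\<omega>. (?f \<omega> - ?g \<omega>)\<^sup>2 / ?g \<omega>)"
  proof (rule Bochner_Integration.integrable_bound[of B0 "\<lambda>\<omega>. C * (?f \<omega> - ?g \<omega>)\<^sup>2"])
    show "integrable B0 (\<lambda>\<omega>. C * (?f \<omega> - ?g \<omega>)\<^sup>2)" using iD by simp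
    show "(\<lambda>\<omega>. (?f \<omega> - ?g \<omega>)\<^sup>2 / ?g \<omega>) \<in> borel_measurable B0" by measurable
    show "AE \<omega> in B0. norm ((?f \<omega> - ?g \<omega>)\<^sup>2 / ?g \<omega>) \<le> norm (C * (?f \<omega> - ?g \<omega>)\<^sup>2)"
    proof (intro AE_I2)
      fix \<omega>
      have "0 \<le> (?f \<omega> - ?g \<omega>)\<^sup>2 / ?g \<omega>" using gpos[of \<omega>] by simp
      moreover have "0 \<le> C" by (simp add: C_def)
      ultimately show "norm ((?f \<omega> - ?g \<omega>)\<^sup>2 / ?g \<omega>) \<le> norm (C * (?f \<omega> - ?g \<omega>)\<^sup>2)"
        using bnd[of \<omega>] by simp
    qed
  qed
  have ig: "integrable B0 ?g" and Ig: "integral\<^sup>L B0 ?g = 1" using integral_blk[OF k] by auto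
  have iff: "integrable B0 ?f" and If: "integral\<^sup>L B0 ?f = 1" using integral_blk[OF k] by auto
  have rr: "r = (\<lambda>\<omega>. ?g \<omega> + 2 * (?f \<omega> - ?g \<omega>) + (?f \<omega> - ?g \<omega>)\<^sup>2 / ?g \<omega>)"
    using decomp by (simp add: fun_eq_iff)
  show ir: "integrable B0 r" unfolding rr using ig iff iQ by auto
  have "integral\<^sup>L B0 r = 1 + integral\<^sup>L B0 (\<lambda>\<omega>. (?f \<omega> - ?g \<omega>)\<^sup>2 / ?g \<omega>)"
    unfolding rr using ig iff iQ Ig If
    by (simp add: Bochner_Integration.integral_add Bochner_Integration.integral_diff)
  also have "\<dots> \<le> 1 + integral\<^sup>L B0 (\<lambda>\<omega>. C * (?f \<omega> - ?g \<omega>)\<^sup>2)"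
  proof -
    have "integral\<^sup>L B0 (\<lambda>\<omega>. (?f \<omega> - ?g \<omega>)\<^sup>2 / ?g \<omega>) \<le> integral\<^sup>L B0 (\<lambda>\<omega>. C * (?f \<omega> - ?g \<omega>)\<^sup>2)"
      by (rule Bochner_Integration.integral_mono[OF iQ]) (use iD bnd in auto)
    then show ?thesis by simp
  qed
  also have "\<dots> = 1 + C * integral\<^sup>L B0 (\<lambda>\<omega>. (?f \<omega> - ?g \<omega>)\<^sup>2)" by simp
  also have "integral\<^sup>L B0 (\<lambda>\<omega>. (?f \<omega> - ?g \<omega>)\<^sup>2) =
      (exp (2 * real n * \<rho>\<^sup>2) - exp (- (2 * real n * \<rho>\<^sup>2))) * (exp (real m * \<rho>\<^sup>2) - exp (- (real m * \<rho>\<^sup>2))) / real k"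
    by (rule blk_diff_sq(2)[OF k b])
  finally show "integral\<^sup>L B0 r \<le> 1 + exp ((2 * real n * \<rho>\<^sup>2 + real m * \<rho>\<^sup>2) / 2) *
        ((exp (2 * real n * \<rho>\<^sup>2) - exp (- (2 * real n * \<rho>\<^sup>2))) * (exp (real m * \<rho>\<^sup>2) - exp (- (real m * \<rho>\<^sup>2))) / real k)"
    unfolding C_def .
qed


lemma cB_bound:
  fixes X Y :: real
  assumes X: "0 \<le> X" "X \<le> 1 / 2" and Y: "0 \<le> Y" "Y \<le> 1 / 2"
  shows "exp ((X + Y) / 2) * ((exp X - exp (- X)) * (exp Y - exp (- Y))) \<le> 32 * X * Y"
proof -
  have sx: "exp X - exp (- X) \<le> 2 * X * exp X" by (rule sinh_bound[OF X(1)])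
  have sy: "exp Y - exp (- Y) \<le> 2 * Y * exp Y" by (rule sinh_bound[OF Y(1)])
  have px: "0 \<le> exp X - exp (- X)" using X by simp
  have py: "0 \<le> exp Y - exp (- Y)" using Y by simp
  have "(exp X - exp (- X)) * (exp Y - exp (- Y)) \<le> (2 * X * exp X) * (2 * Y * exp Y)"
    using sx sy px py X Y by (intro mult_mono) auto
  then have "exp ((X + Y) / 2) * ((exp X - exp (- X)) * (exp Y - exp (- Y))) \<le> exp ((X + Y) / 2) * ((2 * X * exp X) * (2 * Y * exp Y))"
    by (intro mult_left_mono) auto
  also have "\<dots> = 4 * X * Y * exp (3 / 2 * (X + Y))"
    by (simp add: exp_add[symmetric] algebra_simps)
  also have "\<dots> \<le> 4 * X * Y * exp (3 / 2)"
    using X Y by (intro mult_left_mono) auto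
  also have "\<dots> \<le> 4 * X * Y * 8"
    using X Y exp_3half by (intro mult_left_mono) auto
  finally show ?thesis by simp
qed

lemma prod_sq_div: "(\<Prod>b<s. x b)\<^sup>2 / (\<Prod>b<s. y b) = (\<Prod>b<s. (x b)\<^sup>2 / (y b :: real))"
  by (simp add: prod_dividef prod_power_distrib)

lemma part3_core:
  assumes good: "good_lfht_test p a \<epsilon> m n \<psi>" and n: "0 < n" and m: "0 < m"
    and k: "0 < k" and s: "0 < s"
    and adm: "\<And>v. v \<in> CV s k \<Longrightarrow> adm p a \<epsilon> (s * k) (eta k \<rho> s v) (\<lambda>t. - eta k \<rho> s v t)"
    and X1: "2 * real n * \<rho>\<^sup>2 \<le> 1 / 2" and Y1: "real m * \<rho>\<^sup>2 \<le> 1 / 2"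
    and small: "real s * (2 * real n * \<rho>\<^sup>2) * (real m * \<rho>\<^sup>2) / real k \<le> 1 / 384"
  shows False
proof -
  define F where "F = FF n m (s * k)"
  define V where "V = CV s k"
  define X where "X = 2 * real n * \<rho>\<^sup>2"
  define Y where "Y = real m * \<rho>\<^sup>2"
  have X0: "0 \<le> X" and Y0: "0 \<le> Y" by (simp_all add: X_def Y_def)
  have V: "finite V" "V \<noteq> {}" using CV_ne[OF k] by (auto simp: V_def)
  define f where "f = mix F V (muv n m k \<rho> s 1)"
  define g where "g = mix F V (muv n m k \<rho> s (-1))"
  have e1: "(\<lambda>v. mu n m (eta k \<rho> s v) (\<lambda>t. - eta k \<rho> s v t) (eta k \<rho> s v)) = muv n m k \<rho> s 1"
    by (simp add: muv_def fun_eq_iff)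
  have e2: "(\<lambda>v. mu n m (eta k \<rho> s v) (\<lambda>t. - eta k \<rho> s v t) (\<lambda>t. - eta k \<rho> s v t)) = muv n m k \<rho> s (-1)"
    by (simp add: muv_def fun_eq_iff)
  have b: "1 \<le> integral\<^sup>L B0 (\<lambda>\<omega>. \<bar>f \<omega> - g \<omega>\<bar>)"
  proof -
    have "1 \<le> integral\<^sup>L B0 (\<lambda>\<omega>. \<bar>mix (FF n m (s * k)) (CV s k) (\<lambda>v. mu n m (eta k \<rho> s v) (\<lambda>t. - eta k \<rho> s v t) (eta k \<rho> s v)) \<omega>
          - mix (FF n m (s * k)) (CV s k) (\<lambda>v. mu n m (eta k \<rho> s v) (\<lambda>t. - eta k \<rho> s v t) (\<lambda>t. - eta k \<rho> s v t)) \<omega>\<bar>)"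
      by (rule bridge[OF good n m]) (use adm CV_ne[OF k] in auto)
    then show ?thesis unfolding e1 e2 f_def g_def F_def V_def .
  qed
  have fp: "f \<omega> = (\<Prod>b<s. blk n m s k \<rho> 1 b \<omega>)" for \<omega>
    unfolding f_def F_def V_def by (rule mix_factor[OF k])
  have gp: "g \<omega> = (\<Prod>b<s. blk n m s k \<rho> (-1) b \<omega>)" for \<omega>
    unfolding g_def F_def V_def by (rule mix_factor[OF k])
  have gpos: "0 < g \<omega>" for \<omega> unfolding g_def by (rule mix_pos[OF V])
  have ig: "integrable B0 g" unfolding g_def F_def by (rule integrable_mix) simp
  have Ig: "integral\<^sup>L B0 g = 1" unfolding g_def F_def by (rule integral_mix) (use V in auto)
  have iff: "integrable B0 f" unfolding f_def F_def by (rule integrable_mix) simp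
  have If: "integral\<^sup>L B0 f = 1" unfolding f_def F_def by (rule integral_mix) (use V in auto)
  define r where "r b \<omega> = (blk n m s k \<rho> 1 b \<omega>)\<^sup>2 / blk n m s k \<rho> (-1) b \<omega>" for b \<omega>
  have blkpos: "0 < blk n m s k \<rho> (-1) b \<omega>" if "b < s" for b \<omega>
    using blk_lower[OF k that, of n m \<rho> \<omega>] by (rule less_le_trans[rotated]) simp
  have r0: "0 \<le> r b \<omega>" if "b < s" for b \<omega> unfolding r_def by (intro divide_nonneg_pos zero_le_power2 blkpos[OF that])
  have fg: "(f \<omega>)\<^sup>2 / g \<omega> = (\<Prod>b<s. r b \<omega>)" for \<omega>
    unfolding fp gp r_def by (rule prod_sq_div)
  define c where "c = 32 * X * Y / real k"
  have rb: "integral\<^sup>L B0 (r b) \<le> 1 + c" and irb: "integrable B0 (r b)" if b: "b < s" for b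
  proof -
    show "integrable B0 (r b)" unfolding r_def[abs_def] by (rule block_r(1)[OF k b]) simp_all
    have "integral\<^sup>L B0 (r b) \<le> 1 + exp ((X + Y) / 2) * ((exp X - exp (- X)) * (exp Y - exp (- Y)) / real k)"
      unfolding r_def[abs_def] X_def Y_def by (rule block_r(2)[OF k b]) simp_all
    also have "\<dots> = 1 + exp ((X + Y) / 2) * ((exp X - exp (- X)) * (exp Y - exp (- Y))) / real k" by simp
    also have "\<dots> \<le> 1 + 32 * X * Y / real k"
      using cB_bound[OF X0 _ Y0] X1 Y1 k by (simp add: X_def Y_def divide_right_mono)
    finally show "integral\<^sup>L B0 (r b) \<le> 1 + c" unfolding c_def .
  qed
  have rm: "r b \<in> borel_measurable (PiM (Gb k b) (\<lambda>_. borel))" for b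
    unfolding r_def[abs_def] using blk_meas[of n m s k \<rho> 1 b] blk_meas[of n m s k \<rho> "-1" b] by measurable
  have rr: "r b (restrict \<omega> (Gb k b)) = r b \<omega>" for b \<omega> unfolding r_def by (simp add: blk_restrict)
  have nnf: "(\<integral>\<^sup>+\<omega>. ennreal ((f \<omega>)\<^sup>2 / g \<omega>) \<partial>B0) = (\<Prod>b<s. \<integral>\<^sup>+\<omega>. ennreal (r b \<omega>) \<partial>B0)"
  proof -
    have "(\<integral>\<^sup>+\<omega>. ennreal ((f \<omega>)\<^sup>2 / g \<omega>) \<partial>B0) = (\<integral>\<^sup>+\<omega>. ennreal (\<Prod>b<s. max 0 (r b \<omega>)) \<partial>B0)"
    proof (intro nn_integral_cong)
      fix \<omega>
      have "(\<Prod>b<s. max 0 (r b \<omega>)) = (\<Prod>b<s. r b \<omega>)"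
        by (rule prod.cong) (auto simp: r0 max_def)
      then show "ennreal ((f \<omega>)\<^sup>2 / g \<omega>) = ennreal (\<Prod>b<s. max 0 (r b \<omega>))" by (simp add: fg)
    qed
    also have "\<dots> = (\<Prod>b<s. \<integral>\<^sup>+\<omega>. ennreal (max 0 (r b \<omega>)) \<partial>B0)"
      by (rule indep_blocks[OF k]) (use rm rr in \<open>auto\<close>)
    also have "\<dots> = (\<Prod>b<s. \<integral>\<^sup>+\<omega>. ennreal (r b \<omega>) \<partial>B0)"
      by (intro prod.cong refl nn_integral_cong) (simp add: r0 max_def)
    finally show ?thesis .
  qed
  have eqb: "(\<integral>\<^sup>+\<omega>. ennreal (r b \<omega>) \<partial>B0) = ennreal (integral\<^sup>L B0 (r b))" if b: "b < s" for b
    using irb[OF b] r0[OF b] by (intro nn_integral_eq_integral) auto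
  have Ir0: "0 \<le> integral\<^sup>L B0 (r b)" if b: "b < s" for b
    using r0[OF b] by (intro integral_nonneg_AE) auto
  have "(\<Prod>b<s. \<integral>\<^sup>+\<omega>. ennreal (r b \<omega>) \<partial>B0) = (\<Prod>b<s. ennreal (integral\<^sup>L B0 (r b)))"
    by (rule prod.cong) (auto simp: eqb)
  also have "\<dots> = ennreal (\<Prod>b<s. integral\<^sup>L B0 (r b))"
    by (rule prod_ennreal) (auto simp: Ir0)
  also have "\<dots> \<le> ennreal (\<Prod>b<s. 1 + c)"
    by (intro ennreal_leI prod_mono) (auto simp: Ir0 rb)
  also have "\<dots> = ennreal ((1 + c) ^ s)" by simp
  finally have nn_le: "(\<integral>\<^sup>+\<omega>. ennreal ((f \<omega>)\<^sup>2 / g \<omega>) \<partial>B0) \<le> ennreal ((1 + c) ^ s)" using nnf by simp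
  have fgm: "(\<lambda>\<omega>. (f \<omega>)\<^sup>2 / g \<omega>) \<in> borel_measurable B0" unfolding f_def g_def by measurable
  have fg0: "0 \<le> (f \<omega>)\<^sup>2 / g \<omega>" for \<omega> using gpos[of \<omega>] by simp
  have ifg: "integrable B0 (\<lambda>\<omega>. (f \<omega>)\<^sup>2 / g \<omega>)"
    using nn_le by (intro integrableI_nonneg fgm) (auto simp: fg0 top_unique intro: le_less_trans)
  have Ifg: "integral\<^sup>L B0 (\<lambda>\<omega>. (f \<omega>)\<^sup>2 / g \<omega>) \<le> (1 + c) ^ s"
  proof -
    have "ennreal (integral\<^sup>L B0 (\<lambda>\<omega>. (f \<omega>)\<^sup>2 / g \<omega>)) = (\<integral>\<^sup>+\<omega>. ennreal ((f \<omega>)\<^sup>2 / g \<omega>) \<partial>B0)"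
      using ifg fg0 by (intro nn_integral_eq_integral[symmetric]) auto
    then show ?thesis using nn_le by (simp add: ennreal_le_iff[symmetric] c_def X_def Y_def)
  qed
  have cs: "real s * c \<le> 1 / 12"
  proof -
    have "real s * c = 32 * (real s * X * Y / real k)" by (simp add: c_def)
    also have "\<dots> \<le> 32 * (1 / 384)" using small by (simp add: X_def Y_def)
    finally show ?thesis by simp
  qed
  have c0: "0 \<le> c" using X0 Y0 by (simp add: c_def)
  have "(1 + c) ^ s \<le> exp (real s * c)" by (rule pow_le_exp[OF c0])
  also have "\<dots> \<le> exp (1 / 12)" using cs by simp
  also have "\<dots> \<le> 1 / (1 - 1 / 12)" by (rule exp_le_inv) auto
  finally have pw: "(1 + c) ^ s \<le> 12 / 11" by simp
  have sq: "(f \<omega> - g \<omega>)\<^sup>2 / g \<omega> = (f \<omega>)\<^sup>2 / g \<omega> - 2 * f \<omega> + g \<omega>" for \<omega>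
    using gpos[of \<omega>] by (simp add: field_simps power2_eq_square)
  have isq: "integrable B0 (\<lambda>\<omega>. (f \<omega> - g \<omega>)\<^sup>2 / g \<omega>)" unfolding sq using ifg iff ig by auto
  have Isq: "integral\<^sup>L B0 (\<lambda>\<omega>. (f \<omega> - g \<omega>)\<^sup>2 / g \<omega>) \<le> 1 / 11"
  proof -
    have "integral\<^sup>L B0 (\<lambda>\<omega>. (f \<omega> - g \<omega>)\<^sup>2 / g \<omega>) = integral\<^sup>L B0 (\<lambda>\<omega>. (f \<omega>)\<^sup>2 / g \<omega>) - 2 + 1"
      unfolding sq using ifg iff ig If Ig
      by (simp add: Bochner_Integration.integral_add Bochner_Integration.integral_diff)
    then show ?thesis using Ifg pw by simp
  qed
  have "integral\<^sup>L B0 (\<lambda>\<omega>. \<bar>f \<omega> - g \<omega>\<bar>) \<le> sqrt (integral\<^sup>L B0 (\<lambda>\<omega>. (f \<omega> - g \<omega>)\<^sup>2 / g \<omega>))"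
    by (rule l1_chi[OF _ _ gpos ig Ig isq]) (simp_all add: f_def g_def)
  also have "\<dots> \<le> sqrt (1 / 11)" using Isq by simp
  also have "\<dots> < 1" by simp
  finally show False using b by simp
qed


lemma gamma_neg: "\<theta> \<in> Gamma_set p a \<Longrightarrow> (\<lambda>t. - \<theta> t) \<in> Gamma_set p a"
  by (simp add: Gamma_set_def)

lemma eta_dist2:
  assumes v: "v \<in> CV s k" and rho: "0 \<le> \<rho>"
  shows "l2_dist (eta k \<rho> s v) (\<lambda>t. - eta k \<rho> s v t) = 2 * sqrt (real s) * \<rho>"
proof -
  have z: "\<And>t. s * k \<le> t \<Longrightarrow> eta k \<rho> s v t = 0 \<and> - eta k \<rho> s v t = 0"
    using eta_zero[OF v] by auto
  have "l2_dist (eta k \<rho> s v) (\<lambda>t. - eta k \<rho> s v t) = sqrt (\<Sum>t<s * k. (eta k \<rho> s v t - - eta k \<rho> s v t)\<^sup>2)"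
    by (rule l2_finite[OF z])
  also have "(\<Sum>t<s * k. (eta k \<rho> s v t - - eta k \<rho> s v t)\<^sup>2) = 4 * (\<Sum>t<s * k. (eta k \<rho> s v t)\<^sup>2)"
    by (simp add: sum_distrib_left power2_eq_square algebra_simps)
  also have "\<dots> = 4 * (real s * \<rho>\<^sup>2)" by (simp add: eta_norm[OF v])
  also have "sqrt (4 * (real s * \<rho>\<^sup>2)) = 2 * sqrt (real s) * \<rho>"
    using rho by (simp add: real_sqrt_mult)
  finally show ?thesis .
qed

lemma part3:
  assumes p: "1 \<le> p" "p \<le> 2" and dec: "decseq a" and apos: "\<forall>t. 0 < a t" and lim: "a \<longlonglongrightarrow> 0"
    and eps: "0 < \<epsilon>" and n: "0 < n" and m: "0 < m"
    and ex: "\<exists>\<theta>1\<in>Gamma_set p a. \<exists>\<theta>2\<in>Gamma_set p a. l2_dist \<theta>1 \<theta>2 \<ge> \<epsilon>"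
    and good: "good_lfht_test p a \<epsilon> m n \<psi>"
    and d1: "1 \<le> d_l p a n \<epsilon>"
  shows "real (d_l p a n \<epsilon>) \<le> 96 * (real m * \<epsilon>\<^sup>2) * (real n * \<epsilon>\<^sup>2)"
proof (rule ccontr)
  define d where "d = d_l p a n \<epsilon>"
  define x where "x = real n * \<epsilon>\<^sup>2"
  define y where "y = real m * \<epsilon>\<^sup>2"
  assume "\<not> real (d_l p a n \<epsilon>) \<le> 96 * (real m * \<epsilon>\<^sup>2) * (real n * \<epsilon>\<^sup>2)"
  then have viol: "96 * y * x < real d" by (simp add: d_def x_def y_def)
  have hy: "1 \<le> y" using part1(1)[OF p dec apos eps n m ex good] by (simp add: y_def)
  have p2: "sqrt (real d) \<le> 2 * x" using part2[OF p dec apos lim eps n m ex good d1] by (simp add: d_def x_def)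
  have dpos: "1 \<le> d" using d1 by (simp add: d_def)
  have A: "192 * \<epsilon>\<^sup>2 \<le> a (d - 1) powr p * real n powr ((p - 2) / 2)"
    unfolding d_def by (rule d_l_prop[OF p(1) apos lim eps n d1])
  have hx: "1 / 2 \<le> x"
  proof -
    have "1 \<le> real d" using dpos by simp
    then have "sqrt 1 \<le> sqrt (real d)" by (rule real_sqrt_le_mono)
    then show ?thesis using p2 by (simp only: real_sqrt_one)
  qed
  have d4: "real d \<le> 4 * x\<^sup>2"
  proof -
    have "(sqrt (real d))\<^sup>2 \<le> (2 * x)\<^sup>2" using p2 by (intro power_mono) auto
    then show ?thesis by (simp add: power2_eq_square)
  qed
  have yx: "24 * y < x"
  proof -
    have "x * (96 * y) < x * (4 * x)" using viol d4 by (simp add: power2_eq_square algebra_simps)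
    then have "96 * y < 4 * x" using hx by (simp add: mult_less_cancel_left_pos)
    then show ?thesis by simp
  qed
  have xd: "x \<le> real d"
  proof -
    have v2: "96 * (x * y) < real d" using viol by (simp add: algebra_simps)
    have "x * 1 \<le> x * y" using hy hx by (intro mult_left_mono) auto
    moreover have "0 \<le> x * y" using hx hy by simp
    ultimately show ?thesis using v2 by linarith
  qed
  define s where "s = nat \<lceil>x\<rceil>"
  have c0: "0 \<le> \<lceil>x\<rceil>" using hx by simp
  have rs: "real s = of_int \<lceil>x\<rceil>" unfolding s_def using c0 by simp
  have s_ge: "x \<le> real s" unfolding rs by (rule le_of_int_ceiling)
  have s_le: "real s \<le> x + 1" unfolding rs by (rule of_int_ceiling_le_add_one)
  have spos: "0 < s" using s_ge hx by simp
  have s4: "real s \<le> 4 * real n * \<epsilon>\<^sup>2" using s_le hx by (simp add: x_def)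
  have sd: "s \<le> d"
  proof -
    have "\<lceil>x\<rceil> \<le> int d" using xd by (simp add: ceiling_le_iff)
    then show ?thesis unfolding s_def using xd by simp
  qed
  define k where "k = d div s"
  have kpos: "0 < k" unfolding k_def using sd spos by (simp add: div_greater_zero_iff)
  have dsk: "d = s * k + d mod s" unfolding k_def by simp
  have skd: "s * k \<le> d" using dsk by linarith
  have d2: "real d \<le> 2 * real s * real k"
  proof -
    have "d mod s < s" using spos by simp
    moreover have "s \<le> s * k" using kpos by simp
    ultimately have "d \<le> 2 * s * k" using dsk by linarith
    then show ?thesis by (metis of_nat_le_iff of_nat_mult of_nat_numeral)
  qed
  define \<rho> where "\<rho> = \<epsilon> / (2 * sqrt (real s))"
  have rho0: "0 \<le> \<rho>" using eps by (simp add: \<rho>_def)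
  have rho2: "\<rho>\<^sup>2 = \<epsilon>\<^sup>2 / (4 * real s)" using spos by (simp add: \<rho>_def power_divide power_mult_distrib)
  have rho2': "\<rho>\<^sup>2 \<le> \<epsilon>\<^sup>2 / real s" unfolding rho2 using spos by (simp add: divide_left_mono)
  have dist: "2 * sqrt (real s) * \<rho> = \<epsilon>" using spos by (simp add: \<rho>_def)
  have adm: "adm p a \<epsilon> (s * k) (eta k \<rho> s v) (\<lambda>t. - eta k \<rho> s v t)" if v: "v \<in> CV s k" for v
  proof -
    have g: "eta k \<rho> s v \<in> Gamma_set p a"
      by (rule eta_gamma[OF p dec apos eps n v spos skd s4 A rho0 rho2'])
    show ?thesis unfolding adm_def
      using g gamma_neg[OF g] eta_dist2[OF v rho0] dist eta_zero[OF v] by auto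
  qed
  have X1: "2 * real n * \<rho>\<^sup>2 \<le> 1 / 2"
  proof -
    have "2 * real n * \<rho>\<^sup>2 = x / (2 * real s)" unfolding rho2 x_def by (simp add: field_simps)
    also have "\<dots> \<le> 1 / 2" using s_ge spos hx by (simp add: field_simps)
    finally show ?thesis .
  qed
  have Y1: "real m * \<rho>\<^sup>2 \<le> 1 / 2"
  proof -
    have "real m * \<rho>\<^sup>2 = y / (4 * real s)" unfolding rho2 y_def by (simp add: field_simps)
    also have "\<dots> \<le> 1 / 2" using s_ge spos hx yx by (simp add: field_simps)
    finally show ?thesis .
  qed
  have small: "real s * (2 * real n * \<rho>\<^sup>2) * (real m * \<rho>\<^sup>2) / real k \<le> 1 / 384"
  proof -
    have "real s * (2 * real n * \<rho>\<^sup>2) * (real m * \<rho>\<^sup>2) / real k = x * y / (8 * real s * real k)"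
      unfolding rho2 x_def y_def using spos kpos by (simp add: field_simps power2_eq_square)
    also have "\<dots> \<le> 1 / 384"
    proof -
      have v2: "96 * (x * y) < real d" using viol by (simp add: algebra_simps)
      have "384 * (x * y) \<le> 8 * real s * real k" using v2 d2 by linarith
      then show ?thesis using spos kpos by (simp add: field_simps)
    qed
    finally show ?thesis .
  qed
  show False by (rule part3_core[OF good n m kpos spos adm X1 Y1 small])
qed

theorem mainTheorem11:
  fixes p \<epsilon> :: real and a :: "nat \<Rightarrow> real" and m n :: nat
    and \<psi> :: "(((nat \<Rightarrow> nat \<Rightarrow> real) \<times> (nat \<Rightarrow> nat \<Rightarrow> real)) \<times> (nat \<Rightarrow> nat \<Rightarrow> real)) \<Rightarrow> nat"
  assumes "1 \<le> p" and "p \<le> 2"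
    and "decseq a" and "\<forall>t. 0 < a t" and "a \<longlonglongrightarrow> 0"
    and "0 < \<epsilon>" and "0 < n" and "0 < m"
    and "\<exists>\<theta>1\<in>Gamma_set p a. \<exists>\<theta>2\<in>Gamma_set p a. l2_dist \<theta>1 \<theta>2 \<ge> \<epsilon>"
    and "good_lfht_test p a \<epsilon> m n \<psi>"
  shows "real m \<ge> 1 / \<epsilon>\<^sup>2
    \<and> real n \<ge> sqrt (real (d_l p a n \<epsilon>)) / (2 * \<epsilon>\<^sup>2)
    \<and> real m * real n \<ge> real (d_l p a n \<epsilon>) / (96 * \<epsilon> ^ 4)"
proof -
  note h = assms
  have e2: "0 < \<epsilon>\<^sup>2" using h(6) by simp
  have c1: "1 / \<epsilon>\<^sup>2 \<le> real m"
    using part1(1)[OF h(1,2,3,4,6,7,8,9,10)] e2 by (simp add: field_simps)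
  have c2: "sqrt (real (d_l p a n \<epsilon>)) / (2 * \<epsilon>\<^sup>2) \<le> real n"
  proof (cases "1 \<le> d_l p a n \<epsilon>")
    case True
    then show ?thesis using part2[OF h(1,2,3,4,5,6,7,8,9,10) True] e2 by (simp add: field_simps)
  next
    case False
    then have "d_l p a n \<epsilon> = 0" by simp
    then show ?thesis by simp
  qed
  have c3: "real (d_l p a n \<epsilon>) / (96 * \<epsilon> ^ 4) \<le> real m * real n"
  proof (cases "1 \<le> d_l p a n \<epsilon>")
    case True
    have "real (d_l p a n \<epsilon>) \<le> 96 * (real m * \<epsilon>\<^sup>2) * (real n * \<epsilon>\<^sup>2)"
      by (rule part3[OF h(1,2,3,4,5,6,7,8,9,10) True])
    also have "\<dots> = (real m * real n) * (96 * \<epsilon> ^ 4)" by (simp add: power2_eq_square power4_eq_xxxx)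
    finally show ?thesis using e2 by (simp add: field_simps)
  next
    case False
    then have "d_l p a n \<epsilon> = 0" by simp
    then show ?thesis by simp
  qed
  show ?thesis using c1 c2 c3 by simp
qed


end
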